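(* For every integer $k$ (with the polynomial extension described in the context), the following identities of formal power series in $x,y$ hold: $$C^\bullet_k=C^\bullet_{k-1}\,e^{C^\bullet_{k-1}+C^\times_{k-1}},\qquad C^\times_k=e^{C^\bullet_{k-1}}\big(e^{C^\times_{k-1}}-1\big),$$ $$C_k=\exp\big(C^\bullet_k+C^\times_k\big)-1,\qquad C^\ell_{k-1}=C^\bullet_k+C^\times_k.$$
   Context: Let $V_1,V_2$ be disjoint finite sets, $V=V_1\sqcup V_2$. A semi-pointed partition of $(V_1,V_2)$ is a set partition of $V$ into nonempty blocks in which each block $B$ is either unpointed or pointed at one chosen element of $B\cap V_1$, subject to: a block contained in $V_1$ must be pointed, and a block contained in $V_2$ must be unpointed. $\Pi(V_1,V_2)$ is the set of semi-pointed partitions, ordered by: $P\le Q$ iff every block $b$ of $P$ is a union $q_1\cup\dots\cup q_r$ of blocks of $Q$, and if $b$ is pointed at $e$ then some $q_i$ is pointed at $e$, while if $b$ is unpointed then some $q_i$ is unpointed. Its greatest element $\hat1$ is the partition into singletons. Its minimal elements are $m_v$, $v\in V_1$ (the block $V$ pointed at $v$), and, if $V_2\neq\emptyset$, $m_\times$ (the unpointed block $V$). For $k\ge1$ and $|V_1|=p$, $|V_2|=q$: - $c_k(p,q)$ is the number of $k$-multichains $a_1\le\dots\le a_k$ in $\Pi(V_1,V_2)$, for $(p,q)\neq(0,0)$; - $c^\bullet_k(p,q)$ is the number of those with $a_1=m_v$ for some $v$; - $c^\times_k(p,q)$ is the number of those with $a_1=m_\times$; - $c^\ell_k(p,q)$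 is $\sum_m$ (number of $k$-multichains in $[m,\hat1]$), the sum over all minimal $m$. For fixed $(p,q)$ each of these is a polynomial function of $k\ge1$, and it is extended to all integers $k$ by that polynomial. Define $C_k(x,y)=\sum_{(p,q)\neq(0,0)}c_k(p,q)\frac{x^py^q}{p!q!}$, and similarly $C^\bullet_k$, $C^\times_k$, $C^\ell_k$ from $c^\bullet_k$, $c^\times_k$, $c^\ell_k$. *)

theory Defs
  imports "HOL-Computational_Algebra.Polynomial"
begin

text \<open>A semi-pointed partition is represented as a set of pairs (B, w) where B is a
block and o is None (unpointed) or Some e (pointed at e).\<close>

type_synonym 'a sppart = "('a set \<times> 'a option) set"

definition semi_pointed :: "'a set \<Rightarrow> 'a set \<Rightarrow> 'a sppart \<Rightarrow> bool" where
  "semi_pointed V1 V2 P \<longleftrightarrow>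
     (\<forall>(B, w) \<in> P. B \<noteq> {}
        \<and> (\<forall>e. w = Some e \<longrightarrow> e \<in> B \<inter> V1)
        \<and> (B \<subseteq> V1 \<longrightarrow> w \<noteq> None)
        \<and> (B \<subseteq> V2 \<longrightarrow> w = None))
   \<and> (\<forall>(B, w) \<in> P. \<forall>(B', w') \<in> P. B = B' \<longrightarrow> w = w')
   \<and> (\<forall>(B, w) \<in> P. \<forall>(B', w') \<in> P. B \<noteq> B' \<longrightarrow> B \<inter> B' = {})
   \<and> \<Union>(fst ` P) = V1 \<union> V2"

definition SPi :: "'a set \<Rightarrow> 'a set \<Rightarrow> 'a sppart set" where
  "SPi V1 V2 = {P. semi_pointed V1 V2 P}"

definition sp_le :: "'a sppart \<Rightarrow> 'a sppart \<Rightarrow> bool" where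
  "sp_le P Q \<longleftrightarrow>
     (\<forall>(b, w) \<in> P. \<exists>S \<subseteq> Q. b = \<Union>(fst ` S) \<and>
        (case w of Some e \<Rightarrow> (\<exists>q. (q, Some e) \<in> S) | None \<Rightarrow> (\<exists>q. (q, None) \<in> S)))"

definition sp_top :: "'a set \<Rightarrow> 'a set \<Rightarrow> 'a sppart" where
  "sp_top V1 V2 = (\<lambda>v. ({v}, if v \<in> V1 then Some v else None)) ` (V1 \<union> V2)"

definition m_pt :: "'a set \<Rightarrow> 'a set \<Rightarrow> 'a \<Rightarrow> 'a sppart" where
  "m_pt V1 V2 v = {(V1 \<union> V2, Some v)}"

definition m_cross :: "'a set \<Rightarrow> 'a set \<Rightarrow> 'a sppart" where
  "m_cross V1 V2 = {(V1 \<union> V2, None)}"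

definition sp_minimals :: "'a set \<Rightarrow> 'a set \<Rightarrow> 'a sppart set" where
  "sp_minimals V1 V2 = m_pt V1 V2 ` V1 \<union> (if V2 \<noteq> {} then {m_cross V1 V2} else {})"

definition multichains_in :: "'a sppart set \<Rightarrow> nat \<Rightarrow> 'a sppart list set" where
  "multichains_in S k = {as. length as = k \<and> set as \<subseteq> S \<and>
      (\<forall>i. Suc i < k \<longrightarrow> sp_le (as ! i) (as ! Suc i))}"

definition V1c :: "nat \<Rightarrow> nat set" where "V1c p = {..<p}"
definition V2c :: "nat \<Rightarrow> nat \<Rightarrow> nat set" where "V2c p q = {p..<p+q}"

definition cnt :: "nat \<Rightarrow> nat \<Rightarrow> nat \<Rightarrow> nat" where
  "cnt p q k = card (multichains_in (SPi (V1c p) (V2c p q)) k)"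

definition cnt_bullet :: "nat \<Rightarrow> nat \<Rightarrow> nat \<Rightarrow> nat" where
  "cnt_bullet p q k = card {as \<in> multichains_in (SPi (V1c p) (V2c p q)) k.
      \<exists>v \<in> V1c p. hd as = m_pt (V1c p) (V2c p q) v}"

definition cnt_cross :: "nat \<Rightarrow> nat \<Rightarrow> nat \<Rightarrow> nat" where
  "cnt_cross p q k = card {as \<in> multichains_in (SPi (V1c p) (V2c p q)) k.
      hd as = m_cross (V1c p) (V2c p q)}"

definition sp_interval :: "'a set \<Rightarrow> 'a set \<Rightarrow> 'a sppart \<Rightarrow> 'a sppart \<Rightarrow> 'a sppart set" where
  "sp_interval V1 V2 a b = {x \<in> SPi V1 V2. sp_le a x \<and> sp_le x b}"

definition cnt_ell :: "nat \<Rightarrow> nat \<Rightarrow> nat \<Rightarrow> nat" where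
  "cnt_ell p q k = (\<Sum>m \<in> sp_minimals (V1c p) (V2c p q).
      card (multichains_in (sp_interval (V1c p) (V2c p q) m (sp_top (V1c p) (V2c p q))) k))"

text \<open>Polynomial extension: the value at an integer k of the (unique) polynomial
that agrees with f on all k \<ge> 1.\<close>

definition poly_ext :: "(nat \<Rightarrow> nat) \<Rightarrow> int \<Rightarrow> rat" where
  "poly_ext f k = (THE v. \<exists>P :: rat poly.
      (\<forall>n \<ge> 1. poly P (of_nat n) = of_nat (f n)) \<and> v = poly P (of_int k))"

type_synonym bser = "nat \<Rightarrow> nat \<Rightarrow> rat"  \<comment> \<open>F p q = coefficient of x^p y^q\<close>

definition badd :: "bser \<Rightarrow> bser \<Rightarrow> bser" where
  "badd F G = (\<lambda>p q. F p q + G p q)"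

definition bsub :: "bser \<Rightarrow> bser \<Rightarrow> bser" where
  "bsub F G = (\<lambda>p q. F p q - G p q)"

definition bone :: bser where
  "bone = (\<lambda>p q. if p = 0 \<and> q = 0 then 1 else 0)"

definition bmul :: "bser \<Rightarrow> bser \<Rightarrow> bser" where
  "bmul F G = (\<lambda>p q. \<Sum>i\<le>p. \<Sum>j\<le>q. F i j * G (p - i) (q - j))"

fun bpow :: "bser \<Rightarrow> nat \<Rightarrow> bser" where
  "bpow F 0 = bone"
| "bpow F (Suc n) = bmul F (bpow F n)"

text \<open>exp(F) = sum_n F^n / n!, for F with zero constant term (then only n \<le> p+q
contribute to the coefficient of x^p y^q).\<close>

definition bexp :: "bser \<Rightarrow> bser" where
  "bexp F = (\<lambda>p q. \<Sum>n\<le>p+q. bpow F n p q / fact n)"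

definition egf :: "(nat \<Rightarrow> nat \<Rightarrow> rat) \<Rightarrow> bser" where
  "egf a = (\<lambda>p q. if p = 0 \<and> q = 0 then 0 else a p q / (fact p * fact q))"

definition Cser :: "int \<Rightarrow> bser" where
  "Cser k = egf (\<lambda>p q. poly_ext (\<lambda>n. cnt p q n) k)"

definition Cbullet :: "int \<Rightarrow> bser" where
  "Cbullet k = egf (\<lambda>p q. poly_ext (\<lambda>n. cnt_bullet p q n) k)"

definition Ccross :: "int \<Rightarrow> bser" where
  "Ccross k = egf (\<lambda>p q. poly_ext (\<lambda>n. cnt_cross p q n) k)"

definition Cell :: "int \<Rightarrow> bser" where
  "Cell k = egf (\<lambda>p q. poly_ext (\<lambda>n. cnt_ell p q n) k)"

end

theory Submission
  imports Defs "HOL-Library.FuncSet" "HOL-Computational_Algebra.Formal_Power_Series"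
begin


lemma SPi_iff: "P \<in> SPi V1 V2 \<longleftrightarrow> semi_pointed V1 V2 P"
  by (simp add: SPi_def)

lemma sp_unf: "semi_pointed V1 V2 P \<longleftrightarrow>
   (\<forall>B w. (B,w) \<in> P \<longrightarrow> B \<noteq> {} \<and> (\<forall>e. w = Some e \<longrightarrow> e \<in> B \<inter> V1) \<and> (B \<subseteq> V1 \<longrightarrow> w \<noteq> None) \<and> (B \<subseteq> V2 \<longrightarrow> w = None))
 \<and> (\<forall>B w B' w'. (B,w) \<in> P \<longrightarrow> (B',w') \<in> P \<longrightarrow> B = B' \<longrightarrow> w = w')
 \<and> (\<forall>B w B' w'. (B,w) \<in> P \<longrightarrow> (B',w') \<in> P \<longrightarrow> B \<noteq> B' \<longrightarrow> B \<inter> B' = {})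
 \<and> \<Union>(fst ` P) = V1 \<union> V2"
  unfolding semi_pointed_def Ball_def split_paired_All by simp

lemma spDisj: 
  assumes "semi_pointed V1 V2 P" "(B,w) \<in> P" "(B',w') \<in> P" "B \<noteq> B'"
  shows "B \<inter> B' = {}"
  using sp_unf[THEN iffD1, THEN conjunct2, THEN conjunct2, THEN conjunct1, OF assms(1), rule_format, OF assms(2,3,4)] .

lemma spFun: 
  assumes "semi_pointed V1 V2 P" "(B,w) \<in> P" "(B,w') \<in> P"
  shows "w = w'"
  using sp_unf[THEN iffD1, THEN conjunct2, THEN conjunct1, OF assms(1), rule_format, OF assms(2,3) refl] .

lemma spCov: "semi_pointed V1 V2 P \<Longrightarrow> \<Union>(fst ` P) = V1 \<union> V2"
  by (rule sp_unf[THEN iffD1, THEN conjunct2, THEN conjunct2, THEN conjunct2])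

lemma spBlk:
  assumes "semi_pointed V1 V2 P" "(B,w) \<in> P"
  shows "B \<noteq> {} \<and> (\<forall>e. w = Some e \<longrightarrow> e \<in> B \<inter> V1) \<and> (B \<subseteq> V1 \<longrightarrow> w \<noteq> None) \<and> (B \<subseteq> V2 \<longrightarrow> w = None)"
  using sp_unf[THEN iffD1, THEN conjunct1, OF assms(1), rule_format, OF assms(2)] .

lemma spD:
  assumes "semi_pointed V1 V2 P" "(B,w) \<in> P"
  shows "B \<noteq> {}" and "B \<subseteq> V1 \<union> V2" and "w = Some e \<Longrightarrow> e \<in> B \<and> e \<in> V1"
    and "B \<subseteq> V1 \<Longrightarrow> w \<noteq> None" and "B \<subseteq> V2 \<Longrightarrow> w = None"
proof -
  note b = spBlk[OF assms]
  show "B \<noteq> {}" using b by simp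
  have "B \<in> fst ` P" using assms(2) by (metis fst_conv image_eqI)
  then show "B \<subseteq> V1 \<union> V2" using spCov[OF assms(1)] by (metis Union_upper)
  show "w = Some e \<Longrightarrow> e \<in> B \<and> e \<in> V1" using b by simp
  show "B \<subseteq> V1 \<Longrightarrow> w \<noteq> None" using b by simp
  show "B \<subseteq> V2 \<Longrightarrow> w = None" using b by simp
qed

lemma spU:
  assumes "semi_pointed V1 V2 P" "(B,w) \<in> P" "(B',w') \<in> P" "x \<in> B" "x \<in> B'"
  shows "B = B' \<and> w = w'"
proof -
  have "B = B'"
  proof (rule ccontr)
    assume "B \<noteq> B'"
    then have "B \<inter> B' = {}" using spDisj[OF assms(1-3)] by simp
    then show False using assms(4,5) by blast
  qed
  then show ?thesis using spFun[OF assms(1) assms(2)] assms(3) by simp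
qed

lemma spC:
  assumes "semi_pointed V1 V2 P" "x \<in> V1 \<union> V2"
  shows "\<exists>B w. (B,w) \<in> P \<and> x \<in> B"
proof -
  have "\<Union>(fst ` P) = V1 \<union> V2" using spCov[OF assms(1)] .
  then obtain y where "y \<in> P" "x \<in> fst y" using assms(2) by (metis UnionE imageE)
  then show ?thesis by (metis prod.collapse)
qed

lemma spI:
  assumes "\<And>B w. (B,w) \<in> P \<Longrightarrow> B \<noteq> {}"
    and "\<And>B e. (B,Some e) \<in> P \<Longrightarrow> e \<in> B \<and> e \<in> V1"
    and "\<And>B w. (B,w) \<in> P \<Longrightarrow> B \<subseteq> V1 \<Longrightarrow> w \<noteq> None"
    and "\<And>B w. (B,w) \<in> P \<Longrightarrow> B \<subseteq> V2 \<Longrightarrow> w = None"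
    and "\<And>B w B' w' x. (B,w) \<in> P \<Longrightarrow> (B',w') \<in> P \<Longrightarrow> x \<in> B \<Longrightarrow> x \<in> B' \<Longrightarrow> B = B' \<and> w = w'"
    and "\<Union>(fst ` P) = V1 \<union> V2"
  shows "semi_pointed V1 V2 P"
  unfolding sp_unf
proof (intro conjI allI impI)
  fix B w assume h: "(B,w) \<in> P"
  show "B \<noteq> {}" using assms(1)[OF h] .
  show "B \<subseteq> V1 \<Longrightarrow> w \<noteq> None" using assms(3)[OF h] .
  show "B \<subseteq> V2 \<Longrightarrow> w = None" using assms(4)[OF h] .
  fix e assume "w = Some e" then show "e \<in> B \<inter> V1" using assms(2) h by blast
next
  fix B w B' w' assume h: "(B,w) \<in> P" "(B',w') \<in> P" "B = B'"
  obtain x where "x \<in> B" using assms(1)[OF h(1)] by blast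
  then show "w = w'" using assms(5)[OF h(1,2)] h(3) by blast
next
  fix B w B' w' assume h: "(B,w) \<in> P" "(B',w') \<in> P" "B \<noteq> B'"
  show "B \<inter> B' = {}"
  proof (rule ccontr)
    assume "B \<inter> B' \<noteq> {}"
    then obtain x where "x \<in> B" "x \<in> B'" by blast
    then show False using assms(5)[OF h(1,2)] h(3) by blast
  qed
next
  show "\<Union>(fst ` P) = V1 \<union> V2" by (fact assms(6))
qed
lemma sp_sub:
  assumes "semi_pointed V1 V2 P"
  shows "P \<subseteq> Pow (V1 \<union> V2) \<times> (insert None (Some ` V1))"
proof
  fix x assume "x \<in> P"
  then obtain B w where x: "x = (B,w)" "(B,w) \<in> P" by (cases x) auto
  have "B \<subseteq> V1 \<union> V2" using spD(2)[OF assms x(2)] .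
  moreover have "w \<in> insert None (Some ` V1)"
    using spD(3)[OF assms x(2)] by (cases w) auto
  ultimately show "x \<in> Pow (V1 \<union> V2) \<times> (insert None (Some ` V1))" using x by auto
qed

lemma SPi_finite:
  assumes "finite V1" "finite V2"
  shows "finite (SPi V1 V2)"
proof -
  let ?U = "Pow (V1 \<union> V2) \<times> (insert None (Some ` V1))"
  have "SPi V1 V2 \<subseteq> Pow ?U" unfolding SPi_def using sp_sub by blast
  moreover have "finite (Pow ?U)" using assms by simp
  ultimately show ?thesis using finite_subset by blast
qed

lemma sp_finite:
  assumes "finite V1" "finite V2" "semi_pointed V1 V2 P"
  shows "finite P"
  using sp_sub[OF assms(3)] assms(1,2) finite_subset by fastforce

definition le2 :: "'a sppart \<Rightarrow> 'a sppart \<Rightarrow> bool" where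
  "le2 P R \<longleftrightarrow> (\<forall>c u. (c,u) \<in> R \<longrightarrow> (\<exists>b w. (b,w) \<in> P \<and> c \<subseteq> b)) \<and>
     (\<forall>b e. (b, Some e) \<in> P \<longrightarrow> (\<exists>c. (c, Some e) \<in> R)) \<and>
     (\<forall>b. (b, None) \<in> P \<longrightarrow> (\<exists>c. (c, None) \<in> R \<and> c \<subseteq> b))"

lemma le2D1: "le2 P R \<Longrightarrow> (c,u) \<in> R \<Longrightarrow> \<exists>b w. (b,w) \<in> P \<and> c \<subseteq> b"
  unfolding le2_def by blast
lemma le2D2: "le2 P R \<Longrightarrow> (b, Some e) \<in> P \<Longrightarrow> \<exists>c. (c, Some e) \<in> R"
  unfolding le2_def by blast
lemma le2D3: "le2 P R \<Longrightarrow> (b, None) \<in> P \<Longrightarrow> \<exists>c. (c, None) \<in> R \<and> c \<subseteq> b"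
  unfolding le2_def by blast
lemma le2I:
  assumes "\<And>c u. (c,u) \<in> R \<Longrightarrow> \<exists>b w. (b,w) \<in> P \<and> c \<subseteq> b"
    and "\<And>b e. (b, Some e) \<in> P \<Longrightarrow> \<exists>c. (c, Some e) \<in> R"
    and "\<And>b. (b, None) \<in> P \<Longrightarrow> \<exists>c. (c, None) \<in> R \<and> c \<subseteq> b"
  shows "le2 P R"
  unfolding le2_def using assms by blast

lemma le2_trans: assumes "le2 P Q" "le2 Q R" shows "le2 P R"
proof (rule le2I)
  fix c u assume "(c,u) \<in> R"
  then obtain b w where "(b,w) \<in> Q" "c \<subseteq> b" using le2D1[OF assms(2)] by blast
  moreover then obtain b' w' where "(b',w') \<in> P" "b \<subseteq> b'" using le2D1[OF assms(1)] by blast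
  ultimately show "\<exists>b w. (b,w) \<in> P \<and> c \<subseteq> b" by (meson order_trans)
next
  fix b e assume "(b, Some e) \<in> P"
  then obtain c where "(c, Some e) \<in> Q" using le2D2[OF assms(1)] by blast
  then show "\<exists>c. (c, Some e) \<in> R" using le2D2[OF assms(2)] by blast
next
  fix b assume "(b, None) \<in> P"
  then obtain c where "(c, None) \<in> Q" "c \<subseteq> b" using le2D3[OF assms(1)] by blast
  moreover then obtain c' where "(c', None) \<in> R" "c' \<subseteq> c" using le2D3[OF assms(2)] by blast
  ultimately show "\<exists>c. (c, None) \<in> R \<and> c \<subseteq> b" by (meson order_trans)
qed

lemma le2_refl: "le2 P P"
  by (rule le2I) auto

lemma sp_le_unf: "sp_le P R \<longleftrightarrow> (\<forall>b w. (b,w) \<in> P \<longrightarrow> (\<exists>S\<subseteq>R. b = \<Union>(fst ` S) \<and>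
        (case w of Some e \<Rightarrow> (\<exists>q. (q, Some e) \<in> S) | None \<Rightarrow> (\<exists>q. (q, None) \<in> S))))"
  unfolding sp_le_def Ball_def split_paired_All by simp

lemma sp_leD: assumes "sp_le P R" "(b,w) \<in> P" shows "\<exists>S\<subseteq>R. b = \<Union>(fst ` S) \<and>
        (case w of Some e \<Rightarrow> (\<exists>q. (q, Some e) \<in> S) | None \<Rightarrow> (\<exists>q. (q, None) \<in> S))"
  using assms(1)[unfolded sp_le_unf, rule_format, OF assms(2)] .

lemma sp_leI: "(\<And>b w. (b,w) \<in> P \<Longrightarrow> \<exists>S\<subseteq>R. b = \<Union>(fst ` S) \<and>
        (case w of Some e \<Rightarrow> (\<exists>q. (q, Some e) \<in> S) | None \<Rightarrow> (\<exists>q. (q, None) \<in> S))) \<Longrightarrow> sp_le P R"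
  unfolding sp_le_unf by (intro allI impI)

lemma sp_le_imp_le2:
  assumes sP: "semi_pointed V1 V2 P" and sR: "semi_pointed V1 V2 R" and le: "sp_le P R"
  shows "le2 P R"
proof (rule le2I)
  fix c u assume cu: "(c,u) \<in> R"
  obtain x where x: "x \<in> c" using spD(1)[OF sR cu] by blast
  have "x \<in> V1 \<union> V2" using spD(2)[OF sR cu] x by blast
  then obtain b w where bw: "(b,w) \<in> P" "x \<in> b" using spC[OF sP] by blast
  then obtain S where S: "S \<subseteq> R" "b = \<Union>(fst ` S)" using sp_leD[OF le] by blast
  then obtain y where y: "y \<in> S" "x \<in> fst y" using bw(2) by blast
  obtain c' u' where c': "y = (c',u')" by (cases y)
  have "c = c'" using spU[OF sR cu _ x, of c' u'] c' y S(1) by auto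
  then have "c \<subseteq> b" using S(2) y c' by auto
  then show "\<exists>b w. (b, w) \<in> P \<and> c \<subseteq> b" using bw(1) by blast
next
  fix b e assume "(b, Some e) \<in> P"
  from sp_leD[OF le this] obtain S where "S \<subseteq> R" "\<exists>q. (q, Some e) \<in> S" by auto
  then show "\<exists>c. (c, Some e) \<in> R" by blast
next
  fix b assume "(b, None) \<in> P"
  from sp_leD[OF le this] obtain S where S: "S \<subseteq> R" "b = \<Union>(fst ` S)" "\<exists>q. (q, None) \<in> S" by auto
  then obtain q where q: "(q,None) \<in> S" by blast
  then have "q \<subseteq> b" using S(2) by (metis Union_upper fst_conv image_eqI)
  then show "\<exists>c. (c, None) \<in> R \<and> c \<subseteq> b" using q S(1) by blast
qed

lemma le2_block_in:
  assumes sP: "semi_pointed V1 V2 P" and sR: "semi_pointed V1 V2 R" and le: "le2 P R"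
    and bw: "(b,w) \<in> P" and cu: "(c,u) \<in> R" and x: "x \<in> c" "x \<in> b"
  shows "c \<subseteq> b"
proof -
  obtain b' w' where b': "(b',w') \<in> P" "c \<subseteq> b'" using le2D1[OF le cu] by blast
  have "b = b'" using spU[OF sP bw b'(1) x(2)] b'(2) x(1) by blast
  then show ?thesis using b' by simp
qed

lemma le2_cover:
  assumes sP: "semi_pointed V1 V2 P" and sR: "semi_pointed V1 V2 R" and le: "le2 P R"
    and bw: "(b,w) \<in> P"
  shows "b = \<Union>(fst ` {x \<in> R. fst x \<subseteq> b})"
proof
  show "\<Union>(fst ` {x \<in> R. fst x \<subseteq> b}) \<subseteq> b" by blast
  show "b \<subseteq> \<Union>(fst ` {x \<in> R. fst x \<subseteq> b})"
  proof
    fix y assume y: "y \<in> b"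
    then have "y \<in> V1 \<union> V2" using spD(2)[OF sP bw] by blast
    then obtain c u where cu: "(c,u) \<in> R" "y \<in> c" using spC[OF sR] by blast
    have "c \<subseteq> b" using le2_block_in[OF sP sR le bw cu(1) cu(2) y] .
    then show "y \<in> \<Union>(fst ` {x \<in> R. fst x \<subseteq> b})" using cu by force
  qed
qed

lemma le2_imp_sp_le:
  assumes sP: "semi_pointed V1 V2 P" and sR: "semi_pointed V1 V2 R" and le: "le2 P R"
  shows "sp_le P R"
proof (rule sp_leI)
  fix b w assume bw: "(b,w) \<in> P"
  let ?S = "{x \<in> R. fst x \<subseteq> b}"
  have cov: "b = \<Union>(fst ` ?S)" using le2_cover[OF sP sR le bw] .
  have pt: "case w of None \<Rightarrow> \<exists>q. (q, None) \<in> ?S | Some e \<Rightarrow> \<exists>q. (q, Some e) \<in> ?S"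
  proof (cases w)
    case None
    then obtain c where "(c, None) \<in> R" "c \<subseteq> b" using le2D3[OF le] bw by blast
    then show ?thesis using None by auto
  next
    case (Some e)
    then obtain c where c: "(c, Some e) \<in> R" using le2D2[OF le] bw by blast
    have e1: "e \<in> c" using spD(3)[OF sR c] by simp
    have e2: "e \<in> b" using spD(3)[OF sP bw] Some by simp
    have "c \<subseteq> b" using le2_block_in[OF sP sR le bw c e1 e2] .
    then show ?thesis using Some c by auto
  qed
  show "\<exists>S\<subseteq>R. b = \<Union> (fst ` S) \<and> (case w of Some e \<Rightarrow> \<exists>q. (q, Some e) \<in> S | None \<Rightarrow> \<exists>q. (q, None) \<in> S)"
    by (rule exI[of _ ?S]) (use cov pt in auto)
qed

lemma sp_le_iff:
  assumes "semi_pointed V1 V2 P" "semi_pointed V1 V2 R"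
  shows "sp_le P R \<longleftrightarrow> le2 P R"
  using sp_le_imp_le2[OF assms] le2_imp_sp_le[OF assms] by (rule iffI)

lemma le2_antisym:
  assumes sP: "semi_pointed V1 V2 P" and sR: "semi_pointed V1 V2 R" and le1: "le2 P R" and le2: "le2 R P"
  shows "P = R"
proof -
  have key: "(b,w) \<in> Q2" if sQ1: "semi_pointed V1 V2 Q1" and sQ2: "semi_pointed V1 V2 Q2"
    and l1: "le2 Q1 Q2" and l2: "le2 Q2 Q1" and bw: "(b,w) \<in> Q1" for Q1 Q2 b w
  proof -
    obtain x where x: "x \<in> b" using spD(1)[OF sQ1 bw] by blast
    have "x \<in> V1 \<union> V2" using spD(2)[OF sQ1 bw] x by blast
    then obtain c u where cu: "(c,u) \<in> Q2" "x \<in> c" using spC[OF sQ2] by blast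
    have cb: "c \<subseteq> b" using le2_block_in[OF sQ1 sQ2 l1 bw cu(1) cu(2) x] .
    have bc: "b \<subseteq> c" using le2_block_in[OF sQ2 sQ1 l2 cu(1) bw x cu(2)] .
    have bc': "b = c" using cb bc by blast
    have "u = w"
    proof (cases w)
      case None
      then obtain c1 where c1: "(c1, None) \<in> Q2" "c1 \<subseteq> b" using le2D3[OF l1] bw by blast
      obtain y where "y \<in> c1" using spD(1)[OF sQ2 c1(1)] by blast
      then show ?thesis using spU[OF sQ2 cu(1) c1(1)] c1(2) bc' None by blast
    next
      case (Some e)
      then obtain c1 where c1: "(c1, Some e) \<in> Q2" using le2D2[OF l1] bw by blast
      have "e \<in> c1" using spD(3)[OF sQ2 c1] by simp
      moreover have "e \<in> b" using spD(3)[OF sQ1 bw] Some by simp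
      ultimately show ?thesis using spU[OF sQ2 cu(1) c1] bc' Some by blast
    qed
    then show ?thesis using cu(1) bc' by simp
  qed
  show ?thesis
  proof
    show "P \<subseteq> R" using key[OF sP sR le1 le2] by auto
    show "R \<subseteq> P" using key[OF sR sP le2 le1] by auto
  qed
qed


lemma sp_blk_sub: "semi_pointed V1 V2 G \<Longrightarrow> (B,w) \<in> G \<Longrightarrow> B \<subseteq> V1 \<union> V2"
  by (rule spD(2))

lemma SPi_sub:
  assumes sR: "semi_pointed V1 V2 R" and sub: "R' \<subseteq> R" and U: "U = \<Union>(fst ` R')"
  shows "semi_pointed (U \<inter> V1) (U \<inter> V2) R'"
proof (rule spI)
  have BU: "B \<subseteq> U" if "(B,w) \<in> R'" for B w
    using that U by (metis Union_upper fst_conv image_eqI)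
  fix B w assume h: "(B,w) \<in> R'"
  then have h': "(B,w) \<in> R" using sub by blast
  show "B \<noteq> {}" using spD(1)[OF sR h'] .
  show "B \<subseteq> U \<inter> V1 \<Longrightarrow> w \<noteq> None" using spD(4)[OF sR h'] by blast
  show "B \<subseteq> U \<inter> V2 \<Longrightarrow> w = None" using spD(5)[OF sR h'] by blast
next
  fix B e assume h: "(B,Some e) \<in> R'"
  then have "e \<in> B \<and> e \<in> V1" using spD(3)[OF sR] sub by blast
  moreover have "B \<subseteq> U" using h U by (metis Union_upper fst_conv image_eqI)
  ultimately show "e \<in> B \<and> e \<in> U \<inter> V1" by blast
next
  fix B w B' w' x assume "(B,w) \<in> R'" "(B',w') \<in> R'" "x \<in> B" "x \<in> B'"
  then show "B = B' \<and> w = w'" using spU[OF sR] sub by blast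
next
  have "U \<subseteq> V1 \<union> V2" using U spCov[OF sR] sub by blast
  then show "\<Union>(fst ` R') = U \<inter> V1 \<union> U \<inter> V2" using U by blast
qed

lemma SPi_UN:
  assumes G: "\<And>i. i \<in> I \<Longrightarrow> semi_pointed (U i \<inter> V1) (U i \<inter> V2) (G i)"
    and D: "\<And>i j. i \<in> I \<Longrightarrow> j \<in> I \<Longrightarrow> i \<noteq> j \<Longrightarrow> U i \<inter> U j = {}"
    and C: "\<Union>(U ` I) = V1 \<union> V2"
  shows "semi_pointed V1 V2 (\<Union>i\<in>I. G i)"
proof (rule spI)
  have sub: "B \<subseteq> U i" if "i \<in> I" "(B,w) \<in> G i" for i B w
    using spD(2)[OF G[OF that(1)] that(2)] by blast
  fix B w assume "(B,w) \<in> (\<Union>i\<in>I. G i)"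
  then obtain i where i: "i \<in> I" "(B,w) \<in> G i" by blast
  show "B \<noteq> {}" using spD(1)[OF G[OF i(1)] i(2)] .
  show "B \<subseteq> V1 \<Longrightarrow> w \<noteq> None" using spD(4)[OF G[OF i(1)] i(2)] sub[OF i] by blast
  show "B \<subseteq> V2 \<Longrightarrow> w = None" using spD(5)[OF G[OF i(1)] i(2)] sub[OF i] by blast
next
  fix B e assume "(B,Some e) \<in> (\<Union>i\<in>I. G i)"
  then obtain i where i: "i \<in> I" "(B,Some e) \<in> G i" by blast
  show "e \<in> B \<and> e \<in> V1" using spD(3)[OF G[OF i(1)] i(2)] by blast
next
  fix B w B' w' x assume h: "(B,w) \<in> (\<Union>i\<in>I. G i)" "(B',w') \<in> (\<Union>i\<in>I. G i)" "x \<in> B" "x \<in> B'"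
  then obtain i j where i: "i \<in> I" "(B,w) \<in> G i" and j: "j \<in> I" "(B',w') \<in> G j" by blast
  have "x \<in> U i" "x \<in> U j" using spD(2)[OF G[OF i(1)] i(2)] spD(2)[OF G[OF j(1)] j(2)] h(3,4) by blast+
  then have "i = j" using D[OF i(1) j(1)] by blast
  then show "B = B' \<and> w = w'" using spU[OF G[OF i(1)] i(2)] j(2) h(3,4) by blast
next
  have "\<Union>(fst ` (\<Union>i\<in>I. G i)) = (\<Union>i\<in>I. \<Union>(fst ` G i))" by blast
  also have "\<dots> = (\<Union>i\<in>I. U i \<inter> V1 \<union> U i \<inter> V2)" using spCov[OF G] by simp
  also have "\<dots> = V1 \<union> V2" using C by blast
  finally show "\<Union>(fst ` (\<Union>i\<in>I. G i)) = V1 \<union> V2" .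
qed

definition res :: "'a set \<Rightarrow> 'a sppart \<Rightarrow> 'a sppart" where
  "res b R = {x \<in> R. fst x \<subseteq> b}"

lemma res_sp:
  assumes sQ: "semi_pointed V1 V2 Q" and sR: "semi_pointed V1 V2 R" and le: "le2 Q R" and bw: "(b,w) \<in> Q"
  shows "semi_pointed (b \<inter> V1) (b \<inter> V2) (res b R)"
proof -
  have "b = \<Union>(fst ` res b R)" using le2_cover[OF sQ sR le bw] unfolding res_def .
  then show ?thesis using SPi_sub[OF sR, of "res b R" b] unfolding res_def by blast
qed

lemma res_Q:
  assumes sQ: "semi_pointed V1 V2 Q" and bw: "(b,w) \<in> Q"
  shows "res b Q = {(b,w)}"
proof
  show "{(b,w)} \<subseteq> res b Q" using bw unfolding res_def by simp
  show "res b Q \<subseteq> {(b,w)}"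
  proof
    fix y assume y: "y \<in> res b Q"
    obtain c u where cu: "y = (c,u)" by (cases y)
    have h: "(c,u) \<in> Q" "c \<subseteq> b" using y cu unfolding res_def by auto
    obtain x where "x \<in> c" using spD(1)[OF sQ h(1)] by blast
    then have "c = b \<and> u = w" using spU[OF sQ h(1) bw] h(2) by blast
    then show "y \<in> {(b,w)}" using cu by simp
  qed
qed

lemma res_union:
  assumes le: "le2 Q R"
  shows "R = (\<Union>y\<in>Q. res (fst y) R)"
proof
  show "(\<Union>y\<in>Q. res (fst y) R) \<subseteq> R" unfolding res_def by blast
  show "R \<subseteq> (\<Union>y\<in>Q. res (fst y) R)"
  proof
    fix x assume x: "x \<in> R"
    obtain c u where cu: "x = (c,u)" by (cases x)
    obtain b w where "(b,w) \<in> Q" "c \<subseteq> b" using le2D1[OF le] x cu by blast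
    then show "x \<in> (\<Union>y\<in>Q. res (fst y) R)" using x cu unfolding res_def by force
  qed
qed

lemma res_le:
  assumes sQ: "semi_pointed V1 V2 Q" and sR: "semi_pointed V1 V2 R" and sR': "semi_pointed V1 V2 R'"
    and l1: "le2 Q R" and l2: "le2 R R'" and bw: "(b,w) \<in> Q"
  shows "le2 (res b R) (res b R')"
proof (rule le2I)
  fix c' u' assume h: "(c',u') \<in> res b R'"
  then have h': "(c',u') \<in> R'" "c' \<subseteq> b" unfolding res_def by auto
  obtain c u where cu: "(c,u) \<in> R" "c' \<subseteq> c" using le2D1[OF l2 h'(1)] by blast
  obtain x where x: "x \<in> c'" using spD(1)[OF sR' h'(1)] by blast
  have "c \<subseteq> b" using le2_block_in[OF sQ sR l1 bw cu(1)] x cu(2) h'(2) by blast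
  then show "\<exists>b' w. (b',w) \<in> res b R \<and> c' \<subseteq> b'" using cu unfolding res_def by auto
next
  fix c e assume h: "(c, Some e) \<in> res b R"
  then have h': "(c, Some e) \<in> R" "c \<subseteq> b" unfolding res_def by auto
  obtain c' where c': "(c', Some e) \<in> R'" using le2D2[OF l2 h'(1)] by blast
  have "e \<in> c'" "e \<in> c" using spD(3)[OF sR' c'] spD(3)[OF sR h'(1)] by auto
  then have "c' \<subseteq> c" using le2_block_in[OF sR sR' l2 h'(1) c'] by blast
  then show "\<exists>c'. (c', Some e) \<in> res b R'" using c' h'(2) unfolding res_def by auto
next
  fix c assume h: "(c, None) \<in> res b R"
  then have h': "(c, None) \<in> R" "c \<subseteq> b" unfolding res_def by auto
  obtain c' where c': "(c', None) \<in> R'" "c' \<subseteq> c" using le2D3[OF l2 h'(1)] by blast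
  then show "\<exists>c'. (c', None) \<in> res b R' \<and> c' \<subseteq> c" using h'(2) unfolding res_def by auto
qed

lemma Q_disj:
  assumes sQ: "semi_pointed V1 V2 Q" and "y \<in> Q" "y' \<in> Q" "y \<noteq> y'"
  shows "fst y \<inter> fst y' = {}"
proof -
  obtain b w b' w' where y: "y = (b,w)" "y' = (b',w')" by (cases y, cases y')
  show ?thesis
  proof (cases "b = b'")
    case True
    then have "w = w'" using spFun[OF sQ] assms(2,3) y by simp
    then show ?thesis using assms(4) y True by simp
  next
    case False
    then show ?thesis using spDisj[OF sQ] assms(2,3) y by simp
  qed
qed

lemma glue_sp:
  assumes sQ: "semi_pointed V1 V2 Q" and G: "\<And>y. y \<in> Q \<Longrightarrow> semi_pointed (fst y \<inter> V1) (fst y \<inter> V2) (G y)"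
  shows "semi_pointed V1 V2 (\<Union>y\<in>Q. G y)"
  by (rule SPi_UN[OF G Q_disj[OF sQ] spCov[OF sQ]])

lemma glue_res:
  assumes sQ: "semi_pointed V1 V2 Q" and G: "\<And>y. y \<in> Q \<Longrightarrow> semi_pointed (fst y \<inter> V1) (fst y \<inter> V2) (G y)"
    and bw: "(b,w) \<in> Q"
  shows "res b (\<Union>y\<in>Q. G y) = G (b,w)"
proof
  show "G (b,w) \<subseteq> res b (\<Union>y\<in>Q. G y)"
  proof
    fix x assume x: "x \<in> G (b,w)"
    obtain c u where cu: "x = (c,u)" by (cases x)
    have "c \<subseteq> b" using spD(2)[OF G[OF bw]] x cu by fastforce
    then show "x \<in> res b (\<Union>y\<in>Q. G y)" using x bw cu unfolding res_def by auto
  qed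
  show "res b (\<Union>y\<in>Q. G y) \<subseteq> G (b,w)"
  proof
    fix x assume x: "x \<in> res b (\<Union>y\<in>Q. G y)"
    obtain c u where cu: "x = (c,u)" by (cases x)
    obtain y where y: "y \<in> Q" "(c,u) \<in> G y" "c \<subseteq> b" using x cu unfolding res_def by auto
    obtain z where z: "z \<in> c" using spD(1)[OF G[OF y(1)] y(2)] by blast
    have "c \<subseteq> fst y" using spD(2)[OF G[OF y(1)] y(2)] by blast
    then have "z \<in> fst y" "z \<in> b" using z y(3) by auto
    then have "y = (b,w)" using Q_disj[OF sQ y(1) bw] by auto
    then show "x \<in> G (b,w)" using y(2) cu by simp
  qed
qed

lemma glue_le2Q:
  assumes sQ: "semi_pointed V1 V2 Q" and G: "\<And>y. y \<in> Q \<Longrightarrow> semi_pointed (fst y \<inter> V1) (fst y \<inter> V2) (G y)"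
    and L: "\<And>y. y \<in> Q \<Longrightarrow> le2 {y} (G y)"
  shows "le2 Q (\<Union>y\<in>Q. G y)"
proof (rule le2I)
  fix c u assume "(c,u) \<in> (\<Union>y\<in>Q. G y)"
  then obtain y where y: "y \<in> Q" "(c,u) \<in> G y" by blast
  have "c \<subseteq> fst y" using spD(2)[OF G[OF y(1)] y(2)] by blast
  then show "\<exists>b w. (b,w) \<in> Q \<and> c \<subseteq> b" using y(1) by (metis prod.collapse)
next
  fix b e assume h: "(b, Some e) \<in> Q"
  obtain c where "(c, Some e) \<in> G (b, Some e)" using le2D2[OF L[OF h]] by blast
  then show "\<exists>c. (c, Some e) \<in> (\<Union>y\<in>Q. G y)" using h by blast
next
  fix b assume h: "(b, None) \<in> Q"
  obtain c where "(c, None) \<in> G (b, None)" "c \<subseteq> b" using le2D3[OF L[OF h]] by blast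
  then show "\<exists>c. (c, None) \<in> (\<Union>y\<in>Q. G y) \<and> c \<subseteq> b" using h by blast
qed

lemma glue_le2:
  assumes L: "\<And>y. y \<in> Q \<Longrightarrow> le2 (G y) (G' y)"
  shows "le2 (\<Union>y\<in>Q. G y) (\<Union>y\<in>Q. G' y)"
proof (rule le2I)
  fix c u assume "(c,u) \<in> (\<Union>y\<in>Q. G' y)"
  then obtain y where y: "y \<in> Q" "(c,u) \<in> G' y" by blast
  obtain b w where "(b,w) \<in> G y" "c \<subseteq> b" using le2D1[OF L[OF y(1)] y(2)] by blast
  then show "\<exists>b w. (b,w) \<in> (\<Union>y\<in>Q. G y) \<and> c \<subseteq> b" using y(1) by blast
next
  fix b e assume "(b, Some e) \<in> (\<Union>y\<in>Q. G y)"
  then obtain y where y: "y \<in> Q" "(b, Some e) \<in> G y" by blast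
  obtain c where "(c, Some e) \<in> G' y" using le2D2[OF L[OF y(1)] y(2)] by blast
  then show "\<exists>c. (c, Some e) \<in> (\<Union>y\<in>Q. G' y)" using y(1) by blast
next
  fix b assume "(b, None) \<in> (\<Union>y\<in>Q. G y)"
  then obtain y where y: "y \<in> Q" "(b, None) \<in> G y" by blast
  obtain c where "(c, None) \<in> G' y" "c \<subseteq> b" using le2D3[OF L[OF y(1)] y(2)] by blast
  then show "\<exists>c. (c, None) \<in> (\<Union>y\<in>Q. G' y) \<and> c \<subseteq> b" using y(1) by blast
qed

definition ptset :: "'a set \<Rightarrow> 'a set \<Rightarrow> 'a option set" where
  "ptset W1 W2 = Some ` W1 \<union> (if W2 = {} then {} else {None})"

lemma single_sp:
  assumes D: "V1 \<inter> V2 = {}"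
  shows "semi_pointed V1 V2 {(A,u)} \<longleftrightarrow> A = V1 \<union> V2 \<and> A \<noteq> {} \<and> u \<in> ptset V1 V2"
proof
  assume s: "semi_pointed V1 V2 {(A,u)}"
  have A: "A = V1 \<union> V2" using spCov[OF s] by simp
  have ne: "A \<noteq> {}" using spD(1)[OF s] by simp
  have "u \<in> ptset V1 V2"
  proof (cases u)
    case None
    then have "\<not> A \<subseteq> V1" using spD(4)[OF s] by blast
    then have "V2 \<noteq> {}" using A by blast
    then show ?thesis using None unfolding ptset_def by simp
  next
    case (Some e)
    then have "e \<in> V1" using spD(3)[OF s] by blast
    then show ?thesis using Some unfolding ptset_def by simp
  qed
  then show "A = V1 \<union> V2 \<and> A \<noteq> {} \<and> u \<in> ptset V1 V2" using A ne by simp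
next
  assume h: "A = V1 \<union> V2 \<and> A \<noteq> {} \<and> u \<in> ptset V1 V2"
  show "semi_pointed V1 V2 {(A,u)}"
  proof (rule spI)
    fix B w assume "(B,w) \<in> {(A,u)}"
    then have Bw: "B = A" "w = u" by auto
    have "A \<noteq> {}" using h by blast
    then show "B \<noteq> {}" using Bw(1) by blast
    show "B \<subseteq> V1 \<Longrightarrow> w \<noteq> None"
    proof
      assume "B \<subseteq> V1" "w = None"
      then have "V2 \<noteq> {}" "V2 \<subseteq> V1" using h Bw unfolding ptset_def by (auto split: if_splits)
      then show False using D by blast
    qed
    show "B \<subseteq> V2 \<Longrightarrow> w = None"
    proof (rule ccontr)
      assume "B \<subseteq> V2" "w \<noteq> None"
      then obtain e where "w = Some e" by blast
      then have "e \<in> V1" using h Bw unfolding ptset_def by (auto split: if_splits)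
      then show False using \<open>B \<subseteq> V2\<close> h Bw D by blast
    qed
  next
    fix B e assume "(B, Some e) \<in> {(A,u)}"
    then show "e \<in> B \<and> e \<in> V1" using h unfolding ptset_def by (auto split: if_splits)
  next
    fix B w B' w' x assume "(B,w) \<in> {(A,u)}" "(B',w') \<in> {(A,u)}"
    then show "B = B' \<and> w = w'" by simp
  next
    show "\<Union>(fst ` {(A,u)}) = V1 \<union> V2" using h by simp
  qed
qed


definition CH :: "'a sppart set \<Rightarrow> 'a sppart \<Rightarrow> nat \<Rightarrow> 'a sppart list set" where
  "CH S x k = {as \<in> multichains_in S k. hd as = x}"

lemma mc_iff: "as \<in> multichains_in S k \<longleftrightarrow> length as = k \<and> set as \<subseteq> S \<and>
      (\<forall>i. Suc i < k \<longrightarrow> sp_le (as ! i) (as ! Suc i))"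
  unfolding multichains_in_def by simp

lemma mc_finite: "finite S \<Longrightarrow> finite (multichains_in S k)"
proof -
  assume "finite S"
  then have "finite {xs. set xs \<subseteq> S \<and> length xs = k}" by (rule finite_lists_length_eq)
  moreover have "multichains_in S k \<subseteq> {xs. set xs \<subseteq> S \<and> length xs = k}" by (auto simp: mc_iff)
  ultimately show ?thesis using finite_subset by blast
qed

lemma CH_finite: "finite S \<Longrightarrow> finite (CH S x k)"
  unfolding CH_def by (rule finite_subset[OF _ mc_finite]) auto

lemma chain_le:
  assumes S: "\<And>P. P \<in> S \<Longrightarrow> semi_pointed V1 V2 P" and as: "as \<in> multichains_in S k" and i: "i < k"
  shows "le2 (as ! 0) (as ! i)"
  using i
proof (induction i)
  case 0 show ?case by (rule le2_refl)
next
  case (Suc i)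
  have mem: "as ! i \<in> S" "as ! Suc i \<in> S" using as Suc.prems unfolding mc_iff by (auto simp: subset_iff)
  have "sp_le (as ! i) (as ! Suc i)" using as Suc.prems unfolding mc_iff by blast
  then have "le2 (as ! i) (as ! Suc i)" using sp_le_iff[OF S[OF mem(1)] S[OF mem(2)]] by simp
  then show ?case using Suc.IH Suc.prems le2_trans by simp
qed

lemma CH_Suc:
  assumes x: "x \<in> S" and k: "k \<ge> 1"
  shows "CH S x (Suc k) = (\<lambda>(y,bs). x # bs) ` (SIGMA y:{y\<in>S. sp_le x y}. CH S y k)"
proof
  show "CH S x (Suc k) \<subseteq> (\<lambda>(y,bs). x # bs) ` (SIGMA y:{y\<in>S. sp_le x y}. CH S y k)"
  proof
    fix as assume as: "as \<in> CH S x (Suc k)"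
    then have len: "length as = Suc k" and st: "set as \<subseteq> S" and ch: "\<forall>i. Suc i < Suc k \<longrightarrow> sp_le (as ! i) (as ! Suc i)"
      and hd: "hd as = x" unfolding CH_def mc_iff by auto
    obtain bs where bs: "as = x # bs" using len hd by (cases as) auto
    have lbs: "length bs = k" using len bs by simp
    then have bsne: "bs \<noteq> []" using k by auto
    have "sp_le x (hd bs)" using ch[rule_format, of 0] k bs bsne by (simp add: hd_conv_nth)
    moreover have "hd bs \<in> S" using st bs bsne by auto
    moreover have "bs \<in> CH S (hd bs) k"
      unfolding CH_def mc_iff using lbs st bs ch by auto
    ultimately show "as \<in> (\<lambda>(y,bs). x # bs) ` (SIGMA y:{y\<in>S. sp_le x y}. CH S y k)"
      using bs by force
  qed
  show "(\<lambda>(y,bs). x # bs) ` (SIGMA y:{y\<in>S. sp_le x y}. CH S y k) \<subseteq> CH S x (Suc k)"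
  proof
    fix as assume "as \<in> (\<lambda>(y,bs). x # bs) ` (SIGMA y:{y\<in>S. sp_le x y}. CH S y k)"
    then obtain y bs where h: "as = x # bs" "y \<in> S" "sp_le x y" "bs \<in> CH S y k" by auto
    have lbs: "length bs = k" and st: "set bs \<subseteq> S" and ch: "\<forall>i. Suc i < k \<longrightarrow> sp_le (bs ! i) (bs ! Suc i)"
      and hb: "hd bs = y" using h(4) unfolding CH_def mc_iff by auto
    have bsne: "bs \<noteq> []" using lbs k by auto
    have "\<forall>i. Suc i < Suc k \<longrightarrow> sp_le (as ! i) (as ! Suc i)"
    proof (intro allI impI)
      fix i assume i: "Suc i < Suc k"
      show "sp_le (as ! i) (as ! Suc i)"
      proof (cases i)
        case 0 then show ?thesis using h(1,3) hb bsne by (simp add: hd_conv_nth)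
      next
        case (Suc j) then show ?thesis using h(1) ch i by simp
      qed
    qed
    then show "as \<in> CH S x (Suc k)" unfolding CH_def mc_iff using h(1) lbs st x by auto
  qed
qed

lemma card_CH_Suc:
  assumes x: "x \<in> S" and k: "k \<ge> 1" and fin: "finite S"
  shows "card (CH S x (Suc k)) = (\<Sum>y\<in>{y\<in>S. sp_le x y}. card (CH S y k))"
proof -
  have inj: "inj_on (\<lambda>(y,bs). x # bs) (SIGMA y:{y\<in>S. sp_le x y}. CH S y k)"
  proof (rule inj_onI)
    fix a b assume a: "a \<in> (SIGMA y:{y\<in>S. sp_le x y}. CH S y k)" and b: "b \<in> (SIGMA y:{y\<in>S. sp_le x y}. CH S y k)"
      and e: "(\<lambda>(y,bs). x # bs) a = (\<lambda>(y,bs). x # bs) b"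
    obtain ya bsa yb bsb where ab: "a = (ya,bsa)" "b = (yb,bsb)" by (cases a, cases b)
    have "bsa = bsb" using e ab by simp
    moreover have "hd bsa = ya" "hd bsb = yb" using a b ab unfolding CH_def by auto
    ultimately show "a = b" using ab by simp
  qed
  have "card (CH S x (Suc k)) = card (SIGMA y:{y\<in>S. sp_le x y}. CH S y k)"
    unfolding CH_Suc[OF x k] using card_image[OF inj] .
  also have "\<dots> = (\<Sum>y\<in>{y\<in>S. sp_le x y}. card (CH S y k))"
    using fin CH_finite by (intro card_SigmaI) auto
  finally show ?thesis .
qed

lemma CH_one: "x \<in> S \<Longrightarrow> CH S x (Suc 0) = {[x]}"
  unfolding CH_def mc_iff by (auto simp: length_Suc_conv)

lemma mc_UN:
  assumes k: "k \<ge> 1"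
  shows "multichains_in S k = (\<Union>x\<in>S. CH S x k)"
proof
  show "multichains_in S k \<subseteq> (\<Union>x\<in>S. CH S x k)"
  proof
    fix as assume as: "as \<in> multichains_in S k"
    then have "as \<noteq> []" "set as \<subseteq> S" using k unfolding mc_iff by auto
    then have "hd as \<in> S" by (meson hd_in_set subsetD)
    then show "as \<in> (\<Union>x\<in>S. CH S x k)" using as unfolding CH_def by blast
  qed
  show "(\<Union>x\<in>S. CH S x k) \<subseteq> multichains_in S k" unfolding CH_def by blast
qed

lemma card_mc:
  assumes k: "k \<ge> 1" and fin: "finite S"
  shows "card (multichains_in S k) = (\<Sum>x\<in>S. card (CH S x k))"
  unfolding mc_UN[OF k]
  by (rule card_UN_disjoint) (use fin CH_finite in \<open>auto simp: CH_def\<close>)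


lemma master:
  assumes fin: "finite V1" "finite V2" and Q: "Q \<in> SPi V1 V2" and k: "k \<ge> 1"
  shows "card (CH (SPi V1 V2) Q k) = (\<Prod>y\<in>Q. card (CH (SPi (fst y \<inter> V1) (fst y \<inter> V2)) {y} k))"
proof -
  let ?S = "SPi V1 V2"
  let ?T = "\<lambda>y. CH (SPi (fst y \<inter> V1) (fst y \<inter> V2)) {y} k"
  define \<Phi> where "\<Phi> as = (\<lambda>y\<in>Q. map (res (fst y)) as)" for as
  define \<Psi> where "\<Psi> F = map (\<lambda>i. \<Union>y\<in>Q. F y ! i) [0..<k]" for F :: "'a set \<times> 'a option \<Rightarrow> 'a sppart list"
  have sQ: "semi_pointed V1 V2 Q" using Q by (simp add: SPi_iff)
  have finQ: "finite Q" using sp_finite[OF fin sQ] .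
  have SS: "\<And>P. P \<in> ?S \<Longrightarrow> semi_pointed V1 V2 P" by (simp add: SPi_iff)
  have chQ: "le2 Q (as ! i)" "semi_pointed V1 V2 (as ! i)" if as: "as \<in> CH ?S Q k" and i: "i < k" for as i
  proof -
    have m: "as \<in> multichains_in ?S k" "hd as = Q" using as unfolding CH_def by auto
    have "as \<noteq> []" using m(1) k unfolding mc_iff by auto
    then have "as ! 0 = Q" using m(2) by (simp add: hd_conv_nth)
    then show "le2 Q (as ! i)" using chain_le[OF SS m(1) i] by simp
    show "semi_pointed V1 V2 (as ! i)" using m(1) i unfolding mc_iff by (auto simp: SPi_iff subset_iff)
  qed
  have chSuc: "le2 (as ! i) (as ! Suc i)" if as: "as \<in> CH ?S Q k" and i: "Suc i < k" for as i
  proof -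
    have "sp_le (as ! i) (as ! Suc i)" using as i unfolding CH_def mc_iff by blast
    then show ?thesis using sp_le_iff[OF chQ(2)[OF as] chQ(2)[OF as]] i by simp
  qed
  have chB: "semi_pointed (fst y \<inter> V1) (fst y \<inter> V2) (F ! i)" "le2 {y} (F ! i)"
    if F: "F \<in> ?T y" and i: "i < k" and y: "y \<in> Q" for F y i
  proof -
    have m: "F \<in> multichains_in (SPi (fst y \<inter> V1) (fst y \<inter> V2)) k" "hd F = {y}" using F unfolding CH_def by auto
    show "semi_pointed (fst y \<inter> V1) (fst y \<inter> V2) (F ! i)" using m(1) i unfolding mc_iff by (auto simp: SPi_iff subset_iff)
    have "F \<noteq> []" using m(1) k unfolding mc_iff by auto
    then have "F ! 0 = {y}" using m(2) by (simp add: hd_conv_nth)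
    then show "le2 {y} (F ! i)" using chain_le[OF _ m(1) i] by (simp add: SPi_iff)
  qed
  have chBSuc: "le2 (F ! i) (F ! Suc i)" if F: "F \<in> ?T y" and i: "Suc i < k" and y: "y \<in> Q" for F y i
  proof -
    have "sp_le (F ! i) (F ! Suc i)" using F i unfolding CH_def mc_iff by blast
    then show ?thesis using sp_le_iff[OF chB(1)[OF F _ y] chB(1)[OF F _ y]] i by simp
  qed
  have lenB: "length F = k" if "F \<in> ?T y" for F y using that unfolding CH_def mc_iff by simp
  have bij: "bij_betw \<Phi> (CH ?S Q k) (PiE Q ?T)"
  proof (rule bij_betw_byWitness[where f' = \<Psi>])
    show "\<forall>as\<in>CH ?S Q k. \<Psi> (\<Phi> as) = as"
    proof
      fix as assume as: "as \<in> CH ?S Q k"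
      have len: "length as = k" using as unfolding CH_def mc_iff by simp
      show "\<Psi> (\<Phi> as) = as"
      proof (rule nth_equalityI)
        show "length (\<Psi> (\<Phi> as)) = length as" using len unfolding \<Psi>_def by simp
        fix i assume "i < length (\<Psi> (\<Phi> as))"
        then have i: "i < k" unfolding \<Psi>_def by simp
        have "\<Psi> (\<Phi> as) ! i = (\<Union>y\<in>Q. res (fst y) (as ! i))"
          unfolding \<Psi>_def \<Phi>_def using i len by simp
        also have "\<dots> = as ! i" using res_union[OF chQ(1)[OF as i]] by simp
        finally show "\<Psi> (\<Phi> as) ! i = as ! i" .
      qed
    qed
    show "\<forall>F\<in>PiE Q ?T. \<Phi> (\<Psi> F) = F"
    proof
      fix F assume F: "F \<in> PiE Q ?T"
      show "\<Phi> (\<Psi> F) = F"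
      proof
        fix y show "\<Phi> (\<Psi> F) y = F y"
        proof (cases "y \<in> Q")
          case False then show ?thesis using PiE_arb[OF F False] unfolding \<Phi>_def by simp
        next
          case True
          obtain b w where y: "y = (b,w)" by (cases y)
          have Fy: "F y \<in> ?T y" using F True by auto
          show ?thesis
          proof (rule nth_equalityI)
            show "length (\<Phi> (\<Psi> F) y) = length (F y)" using True lenB[OF Fy] unfolding \<Phi>_def \<Psi>_def by simp
            fix i assume "i < length (\<Phi> (\<Psi> F) y)"
            then have i: "i < k" using True unfolding \<Phi>_def \<Psi>_def by simp
            have G: "semi_pointed (fst y' \<inter> V1) (fst y' \<inter> V2) (F y' ! i)" if y': "y' \<in> Q" for y'
              using chB(1)[OF _ i y'] F y' by auto
            have bQ: "(b,w) \<in> Q" using True y by simp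
            have "\<Phi> (\<Psi> F) y ! i = res b (\<Union>y'\<in>Q. F y' ! i)"
              using True i y unfolding \<Phi>_def \<Psi>_def by simp
            also have "\<dots> = F (b,w) ! i"
              using glue_res[OF sQ G bQ] by simp
            finally show "\<Phi> (\<Psi> F) y ! i = F y ! i" using y by simp
          qed
        qed
      qed
    qed
    show "\<Phi> ` CH ?S Q k \<subseteq> PiE Q ?T"
    proof
      fix F assume "F \<in> \<Phi> ` CH ?S Q k"
      then obtain as where as: "as \<in> CH ?S Q k" and F: "F = \<Phi> as" by blast
      have len: "length as = k" using as unfolding CH_def mc_iff by simp
      have "map (res (fst y)) as \<in> ?T y" if y: "y \<in> Q" for y
      proof -
        obtain b w where bw: "y = (b,w)" by (cases y)
        have bQ: "(b,w) \<in> Q" using y bw by simp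
        have "map (res b) as \<in> multichains_in (SPi (b \<inter> V1) (b \<inter> V2)) k"
          unfolding mc_iff
        proof (intro conjI allI impI)
          show "length (map (res b) as) = k" using len by simp
          show "set (map (res b) as) \<subseteq> SPi (b \<inter> V1) (b \<inter> V2)"
          proof
            fix P assume "P \<in> set (map (res b) as)"
            then obtain i where i: "i < k" "P = res b (as ! i)" using len by (auto simp: in_set_conv_nth)
            show "P \<in> SPi (b \<inter> V1) (b \<inter> V2)"
              using res_sp[OF sQ chQ(2)[OF as i(1)] chQ(1)[OF as i(1)] bQ] i(2) by (simp add: SPi_iff)
          qed
          fix i assume i: "Suc i < k"
          have l: "le2 (res b (as ! i)) (res b (as ! Suc i))"
            using res_le[OF sQ chQ(2)[OF as] chQ(2)[OF as] chQ(1)[OF as] chSuc[OF as i] bQ] i by simp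
          have s1: "semi_pointed (b \<inter> V1) (b \<inter> V2) (res b (as ! i))"
            using res_sp[OF sQ chQ(2)[OF as] chQ(1)[OF as] bQ] i by simp
          have s2: "semi_pointed (b \<inter> V1) (b \<inter> V2) (res b (as ! Suc i))"
            using res_sp[OF sQ chQ(2)[OF as] chQ(1)[OF as] bQ] i by simp
          show "sp_le (map (res b) as ! i) (map (res b) as ! Suc i)"
            using sp_le_iff[OF s1 s2] l i len by simp
        qed
        moreover have "hd (map (res b) as) = {(b,w)}"
        proof -
          have "as \<noteq> []" using len k by auto
          then have "hd (map (res b) as) = res b (hd as)" by (simp add: hd_map)
          also have "hd as = Q" using as unfolding CH_def by simp
          finally show ?thesis using res_Q[OF sQ bQ] by simp
        qed
        ultimately show ?thesis using bw unfolding CH_def by simp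
      qed
      then show "F \<in> PiE Q ?T" using F unfolding \<Phi>_def by auto
    qed
    show "\<Psi> ` PiE Q ?T \<subseteq> CH ?S Q k"
    proof
      fix as assume "as \<in> \<Psi> ` PiE Q ?T"
      then obtain F where F: "F \<in> PiE Q ?T" and as: "as = \<Psi> F" by blast
      have FT: "\<And>y. y \<in> Q \<Longrightarrow> F y \<in> ?T y" using F by auto
      have nth: "as ! i = (\<Union>y\<in>Q. F y ! i)" if "i < k" for i using that as unfolding \<Psi>_def by simp
      have gsp: "semi_pointed V1 V2 (\<Union>y\<in>Q. F y ! i)" if i: "i < k" for i
        using glue_sp[OF sQ, of "\<lambda>y. F y ! i"] chB(1)[OF FT i] by blast
      have "as \<in> multichains_in ?S k"
        unfolding mc_iff
      proof (intro conjI allI impI)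
        show "length as = k" using as unfolding \<Psi>_def by simp
        show "set as \<subseteq> ?S"
        proof
          fix P assume "P \<in> set as"
          then obtain i where i: "i < k" "P = as ! i" using as unfolding \<Psi>_def by (auto simp: in_set_conv_nth)
          show "P \<in> ?S" using gsp[OF i(1)] nth[OF i(1)] i(2) by (simp add: SPi_iff)
        qed
        fix i assume i: "Suc i < k"
        have "le2 (\<Union>y\<in>Q. F y ! i) (\<Union>y\<in>Q. F y ! Suc i)"
          by (rule glue_le2) (use chBSuc[OF FT i] in blast)
        then show "sp_le (as ! i) (as ! Suc i)"
          using sp_le_iff[OF gsp gsp] nth i by simp
      qed
      moreover have "hd as = Q"
      proof -
        have k0: "0 < k" using k by simp
        have "as \<noteq> []" using as k unfolding \<Psi>_def by simp
        then have "hd as = as ! 0" by (simp add: hd_conv_nth)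
        also have "\<dots> = (\<Union>y\<in>Q. F y ! 0)" using nth[OF k0] .
        also have "\<dots> = (\<Union>y\<in>Q. {y})"
        proof (rule SUP_cong)
          fix y assume y: "y \<in> Q"
          have "F y \<noteq> []" using lenB[OF FT[OF y]] k by auto
          then show "F y ! 0 = {y}" using FT[OF y] unfolding CH_def by (simp add: hd_conv_nth)
        qed simp
        also have "\<dots> = Q" by blast
        finally show ?thesis .
      qed
      ultimately show "as \<in> CH ?S Q k" unfolding CH_def by simp
    qed
  qed
  have "card (CH ?S Q k) = card (PiE Q ?T)" using bij_betw_same_card[OF bij] .
  also have "\<dots> = (\<Prod>y\<in>Q. card (?T y))" using card_PiE[OF finQ] .
  finally show ?thesis .
qed


definition SW :: "'a set \<Rightarrow> 'a set \<Rightarrow> ('a set \<times> 'a option \<Rightarrow> rat) \<Rightarrow> rat" where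
  "SW V1 V2 \<omega> = (\<Sum>R\<in>SPi V1 V2. \<Prod>x\<in>R. \<omega> x)"

lemma sp_union2:
  assumes s1: "semi_pointed (A \<inter> V1) (A \<inter> V2) R1" and s2: "semi_pointed (V1 - A) (V2 - A) R2"
    and A: "A \<subseteq> V1 \<union> V2"
  shows "semi_pointed V1 V2 (R1 \<union> R2)"
proof -
  define U where "U b = (if b then A else (V1 \<union> V2) - A)" for b
  define G where "G b = (if b then R1 else R2)" for b
  have G: "semi_pointed (U b \<inter> V1) (U b \<inter> V2) (G b)" for b
  proof (cases b)
    case True then show ?thesis using s1 unfolding U_def G_def by simp
  next
    case False
    have "(V1 \<union> V2 - A) \<inter> V1 = V1 - A" "(V1 \<union> V2 - A) \<inter> V2 = V2 - A" by blast+
    then show ?thesis using s2 False unfolding U_def G_def by simp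
  qed
  have "semi_pointed V1 V2 (\<Union>b\<in>{True,False}. G b)"
    by (rule SPi_UN[OF G]) (use A in \<open>auto simp: U_def\<close>)
  moreover have "(\<Union>b\<in>{True,False}. G b) = R1 \<union> R2" unfolding G_def by auto
  ultimately show ?thesis by simp
qed

lemma split_parts:
  fixes \<phi> :: "'a set \<times> 'a option \<Rightarrow> bool"
  assumes sR: "semi_pointed V1 V2 R"
  defines "R1 \<equiv> {x\<in>R. \<phi> x}" and "R2 \<equiv> {x\<in>R. \<not> \<phi> x}" and "A \<equiv> \<Union>(fst ` {x\<in>R. \<phi> x})"
  shows "A \<subseteq> V1 \<union> V2" "semi_pointed (A \<inter> V1) (A \<inter> V2) R1" "semi_pointed (V1 - A) (V2 - A) R2"
proof -
  show AV: "A \<subseteq> V1 \<union> V2" using spCov[OF sR] unfolding A_def by blast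
  show "semi_pointed (A \<inter> V1) (A \<inter> V2) R1" using SPi_sub[OF sR, of R1 A] unfolding R1_def A_def by blast
  have s: "semi_pointed (\<Union>(fst ` R2) \<inter> V1) (\<Union>(fst ` R2) \<inter> V2) R2"
    using SPi_sub[OF sR, of R2 "\<Union>(fst ` R2)"] unfolding R2_def by blast
  have disj: "\<Union>(fst ` R2) \<inter> A = {}"
  proof (rule ccontr)
    assume "\<Union>(fst ` R2) \<inter> A \<noteq> {}"
    then obtain z c u c' u' where z: "(c,u) \<in> R2" "(c',u') \<in> R1" "z \<in> c" "z \<in> c'"
      unfolding A_def R1_def by force
    have "(c,u) \<in> R" "(c',u') \<in> R" "\<not> \<phi> (c,u)" "\<phi> (c',u')" using z(1,2) unfolding R1_def R2_def by auto
    then show False using spU[OF sR _ _ z(3,4)] by blast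
  qed
  have un: "\<Union>(fst ` R2) \<union> A = V1 \<union> V2" using spCov[OF sR] unfolding A_def R2_def by blast
  have "\<Union>(fst ` R2) \<inter> V1 = V1 - A" "\<Union>(fst ` R2) \<inter> V2 = V2 - A" using disj un by blast+
  then show "semi_pointed (V1 - A) (V2 - A) R2" using s by simp
qed

lemma split_sum:
  assumes fin: "finite V1" "finite V2"
  shows "(\<Sum>R\<in>SPi V1 V2. f R) =
    (\<Sum>A\<in>Pow (V1 \<union> V2). \<Sum>R1\<in>{R1\<in>SPi (A \<inter> V1) (A \<inter> V2). \<forall>x\<in>R1. \<phi> x}.
        \<Sum>R2\<in>{R2\<in>SPi (V1 - A) (V2 - A). \<forall>x\<in>R2. \<not> \<phi> x}. f (R1 \<union> R2))"
proof -
  let ?X = "\<lambda>A. {R1\<in>SPi (A \<inter> V1) (A \<inter> V2). \<forall>x\<in>R1. \<phi> x}"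
  let ?Y = "\<lambda>A. {R2\<in>SPi (V1 - A) (V2 - A). \<forall>x\<in>R2. \<not> \<phi> x}"
  have finX: "finite (?X A)" for A using SPi_finite[of "A \<inter> V1" "A \<inter> V2"] fin by auto
  have finY: "finite (?Y A)" for A using SPi_finite[of "V1 - A" "V2 - A"] fin by auto
  have "(\<Sum>A\<in>Pow (V1 \<union> V2). \<Sum>R1\<in>?X A. \<Sum>R2\<in>?Y A. f (R1 \<union> R2))
      = (\<Sum>A\<in>Pow (V1 \<union> V2). \<Sum>(R1,R2)\<in>?X A \<times> ?Y A. f (R1 \<union> R2))"
    by (simp add: sum.cartesian_product)
  also have "\<dots> = (\<Sum>(A,RR)\<in>(SIGMA A:Pow (V1 \<union> V2). ?X A \<times> ?Y A). f (fst RR \<union> snd RR))"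
    by (subst sum.Sigma) (use fin finX finY in \<open>auto simp: case_prod_beta\<close>)
  also have "\<dots> = (\<Sum>R\<in>SPi V1 V2. f R)"
  proof (rule sum.reindex_bij_witness[where j = "\<lambda>(A,RR). fst RR \<union> snd RR"
        and i = "\<lambda>R. (\<Union>(fst ` {x\<in>R. \<phi> x}), {x\<in>R. \<phi> x}, {x\<in>R. \<not> \<phi> x})"])
    fix R assume "R \<in> SPi V1 V2"
    then have sR: "semi_pointed V1 V2 R" by (simp add: SPi_iff)
    show "(\<lambda>(A, RR). fst RR \<union> snd RR) (\<Union>(fst ` {x\<in>R. \<phi> x}), {x\<in>R. \<phi> x}, {x\<in>R. \<not> \<phi> x}) = R" by auto
    show "(\<Union>(fst ` {x\<in>R. \<phi> x}), {x\<in>R. \<phi> x}, {x\<in>R. \<not> \<phi> x}) \<in> (SIGMA A:Pow (V1 \<union> V2). ?X A \<times> ?Y A)"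
      using split_parts[OF sR, of \<phi>] by (auto simp: SPi_iff)
  next
    fix T :: "'a set \<times> 'a sppart \<times> 'a sppart"
    assume T: "T \<in> (SIGMA A:Pow (V1 \<union> V2). ?X A \<times> ?Y A)"
    obtain A R1 R2 where T': "T = (A, R1, R2)" by (cases T) auto
    have h: "A \<subseteq> V1 \<union> V2" "semi_pointed (A \<inter> V1) (A \<inter> V2) R1" "\<forall>x\<in>R1. \<phi> x"
      "semi_pointed (V1 - A) (V2 - A) R2" "\<forall>x\<in>R2. \<not> \<phi> x" using T T' by (auto simp: SPi_iff)
    show "(\<lambda>(A, RR). fst RR \<union> snd RR) T \<in> SPi V1 V2" using sp_union2[OF h(2) h(4) h(1)] T' by (simp add: SPi_iff)
    have f1: "{x \<in> R1 \<union> R2. \<phi> x} = R1" "{x \<in> R1 \<union> R2. \<not> \<phi> x} = R2" using h(3,5) by auto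
    have "\<Union>(fst ` R1) = A" using spCov[OF h(2)] h(1) by blast
    then show "(\<lambda>R. (\<Union>(fst ` {x\<in>R. \<phi> x}), {x\<in>R. \<phi> x}, {x\<in>R. \<not> \<phi> x})) ((\<lambda>(A, RR). fst RR \<union> snd RR) T) = T"
      using f1 T' by simp
    show "f ((\<lambda>(A, RR). fst RR \<union> snd RR) T) = (case T of (A, RR) \<Rightarrow> f (fst RR \<union> snd RR))"
      using T' by simp
  qed
  finally show ?thesis by simp
qed


lemma R1set_x0:
  assumes D: "V1 \<inter> V2 = {}" and A: "A \<subseteq> V1 \<union> V2" and x0: "x0 \<in> A"
  shows "{R1\<in>SPi (A \<inter> V1) (A \<inter> V2). \<forall>x\<in>R1. x0 \<in> fst x} = (\<lambda>u. {(A,u)}) ` ptset (A \<inter> V1) (A \<inter> V2)"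
proof
  have D': "(A \<inter> V1) \<inter> (A \<inter> V2) = {}" using D by blast
  have AA: "(A \<inter> V1) \<union> (A \<inter> V2) = A" using A by blast
  show "{R1\<in>SPi (A \<inter> V1) (A \<inter> V2). \<forall>x\<in>R1. x0 \<in> fst x} \<subseteq> (\<lambda>u. {(A,u)}) ` ptset (A \<inter> V1) (A \<inter> V2)"
  proof
    fix R1 assume "R1 \<in> {R1\<in>SPi (A \<inter> V1) (A \<inter> V2). \<forall>x\<in>R1. x0 \<in> fst x}"
    then have s: "semi_pointed (A \<inter> V1) (A \<inter> V2) R1" and all: "\<forall>x\<in>R1. x0 \<in> fst x" by (auto simp: SPi_iff)
    obtain B w where Bw: "(B,w) \<in> R1" "x0 \<in> B" using spC[OF s] x0 AA by blast
    have "R1 = {(B,w)}"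
    proof
      show "{(B,w)} \<subseteq> R1" using Bw by simp
      show "R1 \<subseteq> {(B,w)}"
      proof
        fix y assume y: "y \<in> R1"
        obtain B' w' where y': "y = (B',w')" by (cases y)
        have "x0 \<in> B'" using all y y' by auto
        then show "y \<in> {(B,w)}" using spU[OF s Bw(1), of B' w' x0] y y' Bw(2) by auto
      qed
    qed
    then have "B = A \<and> w \<in> ptset (A \<inter> V1) (A \<inter> V2)" using single_sp[OF D'] s AA by simp
    then show "R1 \<in> (\<lambda>u. {(A,u)}) ` ptset (A \<inter> V1) (A \<inter> V2)" using \<open>R1 = {(B,w)}\<close> by blast
  qed
  show "(\<lambda>u. {(A,u)}) ` ptset (A \<inter> V1) (A \<inter> V2) \<subseteq> {R1\<in>SPi (A \<inter> V1) (A \<inter> V2). \<forall>x\<in>R1. x0 \<in> fst x}"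
  proof
    fix R1 assume "R1 \<in> (\<lambda>u. {(A,u)}) ` ptset (A \<inter> V1) (A \<inter> V2)"
    then obtain u where u: "R1 = {(A,u)}" "u \<in> ptset (A \<inter> V1) (A \<inter> V2)" by blast
    have "semi_pointed (A \<inter> V1) (A \<inter> V2) {(A,u)}" using single_sp[OF D'] u(2) AA x0 by auto
    then show "R1 \<in> {R1\<in>SPi (A \<inter> V1) (A \<inter> V2). \<forall>x\<in>R1. x0 \<in> fst x}" using u x0 by (simp add: SPi_iff)
  qed
qed

lemma blocks_outside:
  assumes s: "semi_pointed (V1 - A) (V2 - A) R" and "(B,w) \<in> R"
  shows "B \<inter> A = {}"
  using spD(2)[OF s assms(2)] by blast

lemma SW_rec:
  assumes fin: "finite V1" "finite V2" and D: "V1 \<inter> V2 = {}" and x0: "x0 \<in> V1 \<union> V2"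
  shows "SW V1 V2 \<omega> = (\<Sum>A\<in>{A\<in>Pow (V1 \<union> V2). x0 \<in> A}.
            (\<Sum>u\<in>ptset (A \<inter> V1) (A \<inter> V2). \<omega> (A,u)) * SW (V1 - A) (V2 - A) \<omega>)"
proof -
  let ?\<phi> = "\<lambda>x::'a set \<times> 'a option. x0 \<in> fst x"
  let ?X = "\<lambda>A. {R1\<in>SPi (A \<inter> V1) (A \<inter> V2). \<forall>x\<in>R1. ?\<phi> x}"
  let ?Y = "\<lambda>A. {R2\<in>SPi (V1 - A) (V2 - A). \<forall>x\<in>R2. \<not> ?\<phi> x}"
  let ?T = "\<lambda>A. \<Sum>R1\<in>?X A. \<Sum>R2\<in>?Y A. \<Prod>x\<in>R1 \<union> R2. \<omega> x"
  have "SW V1 V2 \<omega> = (\<Sum>A\<in>Pow (V1 \<union> V2). ?T A)"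
    unfolding SW_def by (rule split_sum[OF fin])
  also have "\<dots> = (\<Sum>A\<in>{A\<in>Pow (V1 \<union> V2). x0 \<in> A}. ?T A)"
  proof (rule sum.mono_neutral_right)
    show "finite (Pow (V1 \<union> V2))" using fin by simp
    show "{A\<in>Pow (V1 \<union> V2). x0 \<in> A} \<subseteq> Pow (V1 \<union> V2)" by blast
    show "\<forall>A\<in>Pow (V1 \<union> V2) - {A\<in>Pow (V1 \<union> V2). x0 \<in> A}. ?T A = 0"
    proof
      fix A assume "A \<in> Pow (V1 \<union> V2) - {A\<in>Pow (V1 \<union> V2). x0 \<in> A}"
      then have nx: "x0 \<notin> A" by blast
      have Ye: "?Y A = {}"
      proof (rule ccontr)
        assume "?Y A \<noteq> {}"
        then obtain R2 where R2: "semi_pointed (V1 - A) (V2 - A) R2" "\<forall>x\<in>R2. \<not> ?\<phi> x" by (auto simp: SPi_iff)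
        have "x0 \<in> (V1 - A) \<union> (V2 - A)" using x0 nx by blast
        then obtain B w where "(B,w) \<in> R2" "x0 \<in> B" using spC[OF R2(1)] by blast
        then show False using R2(2) by auto
      qed
      show "?T A = 0" by (simp only: Ye sum.empty sum.neutral_const)
    qed
  qed
  also have "\<dots> = (\<Sum>A\<in>{A\<in>Pow (V1 \<union> V2). x0 \<in> A}.
            (\<Sum>u\<in>ptset (A \<inter> V1) (A \<inter> V2). \<omega> (A,u)) * SW (V1 - A) (V2 - A) \<omega>)"
  proof (rule sum.cong[OF refl])
    fix A assume "A \<in> {A\<in>Pow (V1 \<union> V2). x0 \<in> A}"
    then have AV: "A \<subseteq> V1 \<union> V2" and xA: "x0 \<in> A" by auto
    have Y: "?Y A = SPi (V1 - A) (V2 - A)"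
    proof (rule Collect_cong[THEN trans[OF _ Collect_mem_eq]], rule iffI)
      fix R2 assume "R2 \<in> SPi (V1 - A) (V2 - A) \<and> (\<forall>x\<in>R2. \<not> ?\<phi> x)" then show "R2 \<in> SPi (V1 - A) (V2 - A)" by simp
    next
      fix R2 assume R2: "R2 \<in> SPi (V1 - A) (V2 - A)"
      have "\<forall>x\<in>R2. \<not> ?\<phi> x"
      proof
        fix x assume x: "x \<in> R2"
        obtain B w where "x = (B,w)" by (cases x)
        then show "\<not> ?\<phi> x" using blocks_outside[of V1 A V2 R2 B w] R2 x xA by (auto simp: SPi_iff)
      qed
      then show "R2 \<in> SPi (V1 - A) (V2 - A) \<and> (\<forall>x\<in>R2. \<not> ?\<phi> x)" using R2 by simp
    qed
    have inj: "inj_on (\<lambda>u. {(A,u)}) (ptset (A \<inter> V1) (A \<inter> V2))" by (rule inj_onI) auto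
    have finY: "finite (SPi (V1 - A) (V2 - A))" using SPi_finite fin by auto
    have "?T A = (\<Sum>u\<in>ptset (A \<inter> V1) (A \<inter> V2). \<Sum>R2\<in>SPi (V1 - A) (V2 - A). \<Prod>x\<in>{(A,u)} \<union> R2. \<omega> x)"
      unfolding R1set_x0[OF D AV xA] Y by (simp add: sum.reindex[OF inj])
    also have "\<dots> = (\<Sum>u\<in>ptset (A \<inter> V1) (A \<inter> V2). \<Sum>R2\<in>SPi (V1 - A) (V2 - A). \<omega> (A,u) * (\<Prod>x\<in>R2. \<omega> x))"
    proof (intro sum.cong refl)
      fix u R2 assume R2: "R2 \<in> SPi (V1 - A) (V2 - A)"
      then have sR2: "semi_pointed (V1 - A) (V2 - A) R2" by (simp add: SPi_iff)
      have finR2: "finite R2" using sp_finite[OF _ _ sR2] fin by auto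
      have "(A,u) \<notin> R2" using blocks_outside[OF sR2, of A u] xA by blast
      then show "(\<Prod>x\<in>{(A,u)} \<union> R2. \<omega> x) = \<omega> (A,u) * (\<Prod>x\<in>R2. \<omega> x)" using finR2 by simp
    qed
    also have "\<dots> = (\<Sum>u\<in>ptset (A \<inter> V1) (A \<inter> V2). \<omega> (A,u)) * SW (V1 - A) (V2 - A) \<omega>"
      unfolding SW_def by (simp only: sum_distrib_left sum_distrib_right) (rule sum.swap)
    finally show "?T A = (\<Sum>u\<in>ptset (A \<inter> V1) (A \<inter> V2). \<omega> (A,u)) * SW (V1 - A) (V2 - A) \<omega>" .
  qed
  finally show ?thesis .
qed


lemma sum_restrict_weights:
  assumes fin: "finite S" and finR: "\<And>R. R \<in> S \<Longrightarrow> finite R"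
  shows "(\<Sum>R\<in>{R\<in>S. \<forall>x\<in>R. P x}. \<Prod>x\<in>R. \<omega> x) = (\<Sum>R\<in>S. \<Prod>x\<in>R. (if P x then \<omega> x else (0::rat)))"
proof -
  have "(\<Sum>R\<in>S. \<Prod>x\<in>R. (if P x then \<omega> x else (0::rat))) = (\<Sum>R\<in>S. if (\<forall>x\<in>R. P x) then \<Prod>x\<in>R. \<omega> x else 0)"
  proof (rule sum.cong[OF refl])
    fix R assume R: "R \<in> S"
    show "(\<Prod>x\<in>R. (if P x then \<omega> x else (0::rat))) = (if (\<forall>x\<in>R. P x) then \<Prod>x\<in>R. \<omega> x else 0)"
    proof (cases "\<forall>x\<in>R. P x")
      case True then show ?thesis by simp
    next
      case False
      then obtain x where "x \<in> R" "\<not> P x" by blast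
      then show ?thesis using finR[OF R] False by (auto intro!: prod_zero)
    qed
  qed
  also have "\<dots> = (\<Sum>R\<in>{R\<in>S. \<forall>x\<in>R. P x}. \<Prod>x\<in>R. \<omega> x)" by (rule sum.inter_filter[OF fin, symmetric])
  finally show ?thesis by simp
qed

lemma SW_pt:
  assumes fin: "finite V1" "finite V2" and D: "V1 \<inter> V2 = {}" and v: "v \<in> V1"
  shows "(\<Sum>R\<in>{R\<in>SPi V1 V2. \<exists>c. (c, Some v) \<in> R}. \<Prod>x\<in>R. \<omega> x)
     = (\<Sum>A\<in>{A\<in>Pow (V1 \<union> V2). v \<in> A}. \<omega> (A, Some v) * SW (V1 - A) (V2 - A) \<omega>)"
proof -
  let ?\<phi> = "\<lambda>x::'a set \<times> 'a option. snd x = Some v"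
  let ?f = "\<lambda>R. if (\<exists>c. (c, Some v) \<in> R) then (\<Prod>x\<in>R. \<omega> x) else 0"
  let ?X = "\<lambda>A. {R1\<in>SPi (A \<inter> V1) (A \<inter> V2). \<forall>x\<in>R1. ?\<phi> x}"
  let ?Y = "\<lambda>A. {R2\<in>SPi (V1 - A) (V2 - A). \<forall>x\<in>R2. \<not> ?\<phi> x}"
  let ?T = "\<lambda>A. \<Sum>R1\<in>?X A. \<Sum>R2\<in>?Y A. ?f (R1 \<union> R2)"
  have finS: "finite (SPi V1 V2)" using SPi_finite fin by auto
  have noY: "\<not> (\<exists>c. (c, Some v) \<in> R2)" if "R2 \<in> ?Y A" for R2 A using that by auto
  have "(\<Sum>R\<in>{R\<in>SPi V1 V2. \<exists>c. (c, Some v) \<in> R}. \<Prod>x\<in>R. \<omega> x) = (\<Sum>R\<in>SPi V1 V2. ?f R)"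
    using sum.inter_filter[OF finS] by simp
  also have "\<dots> = (\<Sum>A\<in>Pow (V1 \<union> V2). ?T A)" by (rule split_sum[OF fin])
  also have "\<dots> = (\<Sum>A\<in>{A\<in>Pow (V1 \<union> V2). v \<in> A}. ?T A)"
  proof (rule sum.mono_neutral_right)
    show "finite (Pow (V1 \<union> V2))" using fin by simp
    show "{A\<in>Pow (V1 \<union> V2). v \<in> A} \<subseteq> Pow (V1 \<union> V2)" by blast
    show "\<forall>A\<in>Pow (V1 \<union> V2) - {A\<in>Pow (V1 \<union> V2). v \<in> A}. ?T A = 0"
    proof
      fix A assume "A \<in> Pow (V1 \<union> V2) - {A\<in>Pow (V1 \<union> V2). v \<in> A}"
      then have nv: "v \<notin> A" by blast
      have "?f (R1 \<union> R2) = 0" if R1: "R1 \<in> ?X A" and R2: "R2 \<in> ?Y A" for R1 R2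
      proof -
        have s1: "semi_pointed (A \<inter> V1) (A \<inter> V2) R1" using R1 by (simp add: SPi_iff)
        have "R1 = {}"
        proof (rule ccontr)
          assume "R1 \<noteq> {}"
          then obtain B w where Bw: "(B,w) \<in> R1" by auto
          then have "w = Some v" using R1 by auto
          then have "v \<in> B" using spD(3)[OF s1 Bw] by simp
          moreover have "B \<subseteq> A" using spD(2)[OF s1 Bw] by blast
          ultimately show False using nv by blast
        qed
        then show ?thesis using noY[OF R2] by simp
      qed
      then show "?T A = 0" by simp
    qed
  qed
  also have "\<dots> = (\<Sum>A\<in>{A\<in>Pow (V1 \<union> V2). v \<in> A}. \<omega> (A, Some v) * SW (V1 - A) (V2 - A) \<omega>)"
  proof (rule sum.cong[OF refl])
    fix A assume "A \<in> {A\<in>Pow (V1 \<union> V2). v \<in> A}"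
    then have AV: "A \<subseteq> V1 \<union> V2" and vA: "v \<in> A" by auto
    have D': "(A \<inter> V1) \<inter> (A \<inter> V2) = {}" using D by blast
    have AA: "(A \<inter> V1) \<union> (A \<inter> V2) = A" using AV by blast
    have X: "?X A = {{(A, Some v)}}"
    proof
      show "?X A \<subseteq> {{(A, Some v)}}"
      proof
        fix R1 assume R1: "R1 \<in> ?X A"
        have s1: "semi_pointed (A \<inter> V1) (A \<inter> V2) R1" using R1 by (simp add: SPi_iff)
        obtain B w where Bw: "(B,w) \<in> R1" "v \<in> B" using spC[OF s1] vA AA by blast
        have "R1 = {(B,w)}"
        proof
          show "{(B,w)} \<subseteq> R1" using Bw by simp
          show "R1 \<subseteq> {(B,w)}"
          proof
            fix y assume y: "y \<in> R1"
            obtain B' w' where y': "y = (B',w')" by (cases y)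
            have "w' = Some v" using R1 y y' by auto
            then have "v \<in> B'" using spD(3)[OF s1] y y' by blast
            then show "y \<in> {(B,w)}" using spU[OF s1 Bw(1), of B' w' v] y y' Bw(2) by auto
          qed
        qed
        moreover have "w = Some v" using R1 Bw by auto
        moreover have "B = A" using single_sp[OF D'] s1 AA \<open>R1 = {(B,w)}\<close> by simp
        ultimately show "R1 \<in> {{(A, Some v)}}" by simp
      qed
      show "{{(A, Some v)}} \<subseteq> ?X A"
      proof -
        have "Some v \<in> ptset (A \<inter> V1) (A \<inter> V2)" using vA v unfolding ptset_def by simp
        then have "semi_pointed (A \<inter> V1) (A \<inter> V2) {(A, Some v)}" using single_sp[OF D'] AA vA by auto
        then show ?thesis by (simp add: SPi_iff)
      qed
    qed
    have Y: "?Y A = SPi (V1 - A) (V2 - A)"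
    proof (rule Collect_cong[THEN trans[OF _ Collect_mem_eq]], rule iffI)
      fix R2 assume "R2 \<in> SPi (V1 - A) (V2 - A) \<and> (\<forall>x\<in>R2. \<not> ?\<phi> x)" then show "R2 \<in> SPi (V1 - A) (V2 - A)" by simp
    next
      fix R2 assume R2: "R2 \<in> SPi (V1 - A) (V2 - A)"
      then have s2: "semi_pointed (V1 - A) (V2 - A) R2" by (simp add: SPi_iff)
      have "\<forall>x\<in>R2. \<not> ?\<phi> x"
      proof
        fix x assume x: "x \<in> R2"
        obtain B w where Bw: "x = (B,w)" by (cases x)
        show "\<not> ?\<phi> x"
        proof
          assume "?\<phi> x"
          then have "v \<in> B" using spD(3)[OF s2] x Bw by auto
          then show False using blocks_outside[OF s2, of B w] x Bw vA by auto
        qed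
      qed
      then show "R2 \<in> SPi (V1 - A) (V2 - A) \<and> (\<forall>x\<in>R2. \<not> ?\<phi> x)" using R2 by simp
    qed
    have "?T A = (\<Sum>R2\<in>SPi (V1 - A) (V2 - A). ?f ({(A, Some v)} \<union> R2))"
      unfolding X Y by simp
    also have "\<dots> = (\<Sum>R2\<in>SPi (V1 - A) (V2 - A). \<omega> (A, Some v) * (\<Prod>x\<in>R2. \<omega> x))"
    proof (rule sum.cong[OF refl])
      fix R2 assume R2: "R2 \<in> SPi (V1 - A) (V2 - A)"
      then have sR2: "semi_pointed (V1 - A) (V2 - A) R2" by (simp add: SPi_iff)
      have finR2: "finite R2" using sp_finite[OF _ _ sR2] fin by auto
      have "(A, Some v) \<notin> R2" using blocks_outside[OF sR2, of A "Some v"] vA by blast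
      then show "?f ({(A, Some v)} \<union> R2) = \<omega> (A, Some v) * (\<Prod>x\<in>R2. \<omega> x)" using finR2 by auto
    qed
    also have "\<dots> = \<omega> (A, Some v) * SW (V1 - A) (V2 - A) \<omega>"
      unfolding SW_def by (simp only: sum_distrib_left)
    finally show "?T A = \<omega> (A, Some v) * SW (V1 - A) (V2 - A) \<omega>" .
  qed
  finally show ?thesis .
qed

lemma SW_unpt:
  assumes fin: "finite V1" "finite V2" and D: "V1 \<inter> V2 = {}"
  shows "(\<Sum>R\<in>{R\<in>SPi V1 V2. \<exists>c. (c, None) \<in> R}. \<Prod>x\<in>R. \<omega> x)
     = (\<Sum>A\<in>{A\<in>Pow (V1 \<union> V2). A \<noteq> {}}. SW (A \<inter> V1) (A \<inter> V2) (\<lambda>x. if snd x = None then \<omega> x else 0)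
                                           * SW (V1 - A) (V2 - A) (\<lambda>x. if snd x = None then 0 else \<omega> x))"
proof -
  let ?\<phi> = "\<lambda>x::'a set \<times> 'a option. snd x = None"
  let ?f = "\<lambda>R. if (\<exists>c. (c, None) \<in> R) then (\<Prod>x\<in>R. \<omega> x) else 0"
  let ?X = "\<lambda>A. {R1\<in>SPi (A \<inter> V1) (A \<inter> V2). \<forall>x\<in>R1. ?\<phi> x}"
  let ?Y = "\<lambda>A. {R2\<in>SPi (V1 - A) (V2 - A). \<forall>x\<in>R2. \<not> ?\<phi> x}"
  let ?T = "\<lambda>A. \<Sum>R1\<in>?X A. \<Sum>R2\<in>?Y A. ?f (R1 \<union> R2)"
  have finS: "finite (SPi V1 V2)" using SPi_finite fin by auto
  have noY: "\<not> (\<exists>c. (c, None) \<in> R2)" if "R2 \<in> ?Y A" for R2 A using that by auto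
  have "(\<Sum>R\<in>{R\<in>SPi V1 V2. \<exists>c. (c, None) \<in> R}. \<Prod>x\<in>R. \<omega> x) = (\<Sum>R\<in>SPi V1 V2. ?f R)"
    using sum.inter_filter[OF finS] by simp
  also have "\<dots> = (\<Sum>A\<in>Pow (V1 \<union> V2). ?T A)" by (rule split_sum[OF fin])
  also have "\<dots> = (\<Sum>A\<in>{A\<in>Pow (V1 \<union> V2). A \<noteq> {}}. ?T A)"
  proof (rule sum.mono_neutral_right)
    show "finite (Pow (V1 \<union> V2))" using fin by simp
    show "{A\<in>Pow (V1 \<union> V2). A \<noteq> {}} \<subseteq> Pow (V1 \<union> V2)" by blast
    show "\<forall>A\<in>Pow (V1 \<union> V2) - {A\<in>Pow (V1 \<union> V2). A \<noteq> {}}. ?T A = 0"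
    proof
      fix A assume "A \<in> Pow (V1 \<union> V2) - {A\<in>Pow (V1 \<union> V2). A \<noteq> {}}"
      then have A0: "A = {}" by blast
      have "?f (R1 \<union> R2) = 0" if R1: "R1 \<in> ?X A" and R2: "R2 \<in> ?Y A" for R1 R2
      proof -
        have s1: "semi_pointed (A \<inter> V1) (A \<inter> V2) R1" using R1 by (simp add: SPi_iff)
        have "R1 = {}"
        proof (rule ccontr)
          assume "R1 \<noteq> {}"
          then obtain B w where Bw: "(B,w) \<in> R1" by auto
          then show False using spD(1)[OF s1 Bw] spD(2)[OF s1 Bw] A0 by blast
        qed
        then show ?thesis using noY[OF R2] by simp
      qed
      then show "?T A = 0" by simp
    qed
  qed
  also have "\<dots> = (\<Sum>A\<in>{A\<in>Pow (V1 \<union> V2). A \<noteq> {}}. SW (A \<inter> V1) (A \<inter> V2) (\<lambda>x. if snd x = None then \<omega> x else 0)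
                                           * SW (V1 - A) (V2 - A) (\<lambda>x. if snd x = None then 0 else \<omega> x))"
  proof (rule sum.cong[OF refl])
    fix A assume "A \<in> {A\<in>Pow (V1 \<union> V2). A \<noteq> {}}"
    then have AV: "A \<subseteq> V1 \<union> V2" and A0: "A \<noteq> {}" by auto
    have AA: "(A \<inter> V1) \<union> (A \<inter> V2) = A" using AV by blast
    have finX: "finite (SPi (A \<inter> V1) (A \<inter> V2))" using SPi_finite fin by auto
    have finY: "finite (SPi (V1 - A) (V2 - A))" using SPi_finite fin by auto
    have fin1: "finite R" if "R \<in> SPi (A \<inter> V1) (A \<inter> V2)" for R
      using sp_finite[of "A \<inter> V1" "A \<inter> V2" R] that fin by (auto simp: SPi_iff)
    have fin2: "finite R" if "R \<in> SPi (V1 - A) (V2 - A)" for R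
      using sp_finite[of "V1 - A" "V2 - A" R] that fin by (auto simp: SPi_iff)
    have fx: "?f (R1 \<union> R2) = (\<Prod>x\<in>R1. \<omega> x) * (\<Prod>x\<in>R2. \<omega> x)" if R1: "R1 \<in> ?X A" and R2: "R2 \<in> ?Y A" for R1 R2
    proof -
      have s1: "semi_pointed (A \<inter> V1) (A \<inter> V2) R1" using R1 by (simp add: SPi_iff)
      obtain z where "z \<in> A" using A0 by blast
      then obtain B w where Bw: "(B,w) \<in> R1" using spC[OF s1] AA by blast
      then have "w = None" using R1 by auto
      then have ex: "\<exists>c. (c, None) \<in> R1 \<union> R2" using Bw by blast
      have n1: "snd x = None" if "x \<in> R1" for x using R1 that by blast
      have n2: "snd x \<noteq> None" if "x \<in> R2" for x using R2 that by blast
      have dj: "R1 \<inter> R2 = {}" using n1 n2 by blast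
      have "(\<Prod>x\<in>R1 \<union> R2. \<omega> x) = (\<Prod>x\<in>R1. \<omega> x) * (\<Prod>x\<in>R2. \<omega> x)"
        by (rule prod.union_disjoint) (use fin1 fin2 R1 R2 dj in auto)
      then show ?thesis using ex by simp
    qed
    have "?T A = (\<Sum>R1\<in>?X A. \<Sum>R2\<in>?Y A. (\<Prod>x\<in>R1. \<omega> x) * (\<Prod>x\<in>R2. \<omega> x))"
      using fx by (intro sum.cong refl) auto
    also have "\<dots> = (\<Sum>R1\<in>?X A. \<Prod>x\<in>R1. \<omega> x) * (\<Sum>R2\<in>?Y A. \<Prod>x\<in>R2. \<omega> x)"
      by (simp only: sum_product)
    also have "(\<Sum>R1\<in>?X A. \<Prod>x\<in>R1. \<omega> x) = SW (A \<inter> V1) (A \<inter> V2) (\<lambda>x. if snd x = None then \<omega> x else 0)"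
      unfolding SW_def using sum_restrict_weights[OF finX fin1, where P = ?\<phi> and \<omega> = \<omega>] by simp
    also have "(\<Sum>R2\<in>?Y A. \<Prod>x\<in>R2. \<omega> x) = SW (V1 - A) (V2 - A) (\<lambda>x. if snd x = None then 0 else \<omega> x)"
    proof -
      have "(\<Sum>R2\<in>?Y A. \<Prod>x\<in>R2. \<omega> x) = (\<Sum>R\<in>SPi (V1 - A) (V2 - A). \<Prod>x\<in>R. (if \<not> ?\<phi> x then \<omega> x else 0))"
        using sum_restrict_weights[OF finY fin2, where P = "\<lambda>x. \<not> ?\<phi> x" and \<omega> = \<omega>] by simp
      also have "\<dots> = SW (V1 - A) (V2 - A) (\<lambda>x. if snd x = None then 0 else \<omega> x)"
        unfolding SW_def by (intro sum.cong prod.cong refl) auto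
      finally show ?thesis .
    qed
    finally show "?T A = SW (A \<inter> V1) (A \<inter> V2) (\<lambda>x. if snd x = None then \<omega> x else 0)
                                           * SW (V1 - A) (V2 - A) (\<lambda>x. if snd x = None then 0 else \<omega> x)" .
  qed
  finally show ?thesis .
qed


unbundle fps_syntax

definition toF :: "bser \<Rightarrow> rat fps fps" where
  "toF F = Abs_fps (\<lambda>p. Abs_fps (\<lambda>q. F p q))"

lemma toF_nth[simp]: "toF F $ p $ q = F p q"
  unfolding toF_def by simp

lemma toF_eq: "toF F = toF G \<Longrightarrow> F = G"
proof -
  assume "toF F = toF G"
  then have "toF F $ p $ q = toF G $ p $ q" for p q by simp
  then show "F = G" by (intro ext) simp
qed

definition ofF :: "rat fps fps \<Rightarrow> bser" where "ofF X = (\<lambda>p q. X $ p $ q)"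

lemma ofF_toF[simp]: "ofF (toF F) = F" unfolding ofF_def by (intro ext) simp
lemma toF_ofF[simp]: "toF (ofF X) = X" unfolding ofF_def by (intro fps_ext) simp

lemma bmul_toF: "toF (bmul F G) = toF F * toF G"
proof (rule fps_ext, rule fps_ext)
  fix p q
  have "(toF F * toF G) $ p $ q = (\<Sum>i=0..p. (toF F $ i * toF G $ (p - i))) $ q"
    by (simp add: fps_mult_nth)
  also have "\<dots> = (\<Sum>i=0..p. (toF F $ i * toF G $ (p - i)) $ q)" by (simp add: fps_sum_nth)
  also have "\<dots> = (\<Sum>i=0..p. \<Sum>j=0..q. F i j * G (p - i) (q - j))" by (simp add: fps_mult_nth)
  also have "\<dots> = bmul F G p q" unfolding bmul_def by (simp add: atLeast0AtMost)
  finally show "toF (bmul F G) $ p $ q = (toF F * toF G) $ p $ q" by simp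
qed

lemma badd_toF: "toF (badd F G) = toF F + toF G"
  by (intro fps_ext) (simp add: badd_def)

lemma bsub_toF: "toF (bsub F G) = toF F - toF G"
  by (intro fps_ext) (simp add: bsub_def)

lemma bone_toF: "toF bone = 1"
  by (intro fps_ext) (simp add: bone_def)

lemma bpow_toF: "toF (bpow F n) = toF F ^ n"
  by (induction n) (simp_all add: bone_toF bmul_toF)

lemma bmul_eq: "bmul F G = ofF (toF F * toF G)"
proof -
  have "bmul F G = ofF (toF (bmul F G))" by simp
  then show ?thesis by (simp only: bmul_toF)
qed

lemma bmul_comm: "bmul F G = bmul G F"
  unfolding bmul_eq by (simp add: mult.commute)

lemma bmul_assoc: "bmul (bmul F G) H = bmul F (bmul G H)"
  unfolding bmul_eq by (simp add: mult.assoc)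

lemma bmul_one: "bmul F bone = F"
  unfolding bmul_eq by (simp add: bone_toF)

lemma bmul_add: "bmul F (badd G H) = badd (bmul F G) (bmul F H)"
  by (intro toF_eq) (simp add: bmul_toF badd_toF distrib_left)

definition bsc :: "rat \<Rightarrow> bser \<Rightarrow> bser" where "bsc c F = (\<lambda>p q. c * F p q)"

lemma bmul_sc: "bmul F (bsc c G) = bsc c (bmul F G)"
  unfolding bmul_def bsc_def by (intro ext) (simp add: sum_distrib_left algebra_simps)

definition bD :: "bser \<Rightarrow> bser" where "bD F = (\<lambda>p q. of_nat (p + q) * F p q)"

lemma bD_mul: "bD (bmul F G) = badd (bmul (bD F) G) (bmul F (bD G))"
proof (intro ext)
  fix p q
  have "bD (bmul F G) p q = (\<Sum>i\<le>p. \<Sum>j\<le>q. of_nat (p + q) * (F i j * G (p - i) (q - j)))"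
    unfolding bD_def bmul_def by (simp only: sum_distrib_left)
  also have "\<dots> = (\<Sum>i\<le>p. \<Sum>j\<le>q. of_nat (i + j) * F i j * G (p - i) (q - j) + F i j * (of_nat (p - i + (q - j)) * G (p - i) (q - j)))"
  proof (intro sum.cong refl)
    fix i j assume "i \<in> {..p}" "j \<in> {..q}"
    then have "p + q = (i + j) + (p - i + (q - j))" by auto
    then have eq: "(of_nat (p + q) :: rat) = of_nat (i + j) + of_nat (p - i + (q - j))" by (metis of_nat_add)
    show "of_nat (p + q) * (F i j * G (p - i) (q - j)) = of_nat (i + j) * F i j * G (p - i) (q - j) + F i j * (of_nat (p - i + (q - j)) * G (p - i) (q - j))"
      unfolding eq by algebra
  qed
  also have "\<dots> = (\<Sum>i\<le>p. \<Sum>j\<le>q. of_nat (i + j) * F i j * G (p - i) (q - j)) + (\<Sum>i\<le>p. \<Sum>j\<le>q. F i j * (of_nat (p - i + (q - j)) * G (p - i) (q - j)))"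
    by (simp only: sum.distrib)
  also have "\<dots> = badd (bmul (bD F) G) (bmul F (bD G)) p q"
    unfolding badd_def bmul_def bD_def by (rule refl)
  finally show "bD (bmul F G) p q = badd (bmul (bD F) G) (bmul F (bD G)) p q" .
qed

lemma bD_one: "bD bone = (\<lambda>p q. 0)"
  unfolding bD_def bone_def by (intro ext) simp

lemma bD_pow: "bD (bpow F (Suc n)) = bsc (of_nat (Suc n)) (bmul (bD F) (bpow F n))"
proof (induction n)
  case 0
  show ?case by (simp add: bmul_one bsc_def)
next
  case (Suc n)
  have "bD (bpow F (Suc (Suc n))) = badd (bmul (bD F) (bpow F (Suc n))) (bmul F (bD (bpow F (Suc n))))"
    by (simp add: bD_mul)
  also have "bmul F (bD (bpow F (Suc n))) = bsc (of_nat (Suc n)) (bmul (bD F) (bpow F (Suc n)))"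
    unfolding Suc.IH bmul_sc by (simp add: bmul_assoc[symmetric] bmul_comm[of F "bD F"])
  finally show ?case unfolding badd_def bsc_def by (simp add: algebra_simps)
qed

lemma bpow_trunc: "F 0 0 = 0 \<Longrightarrow> p + q < n \<Longrightarrow> bpow F n p q = 0"
proof (induction n arbitrary: p q)
  case 0 then show ?case by simp
next
  case (Suc n)
  have "F i j * bpow F n (p - i) (q - j) = 0" if "i \<le> p" "j \<le> q" for i j
  proof (cases "i = 0 \<and> j = 0")
    case True then show ?thesis using Suc.prems by simp
  next
    case False
    then have "p - i + (q - j) < n" using that Suc.prems by auto
    then show ?thesis using Suc.IH Suc.prems by simp
  qed
  then show ?case unfolding bpow.simps bmul_def by (auto intro!: sum.neutral)
qed

lemma bexp_trunc:
  assumes F0: "F 0 0 = 0" and N: "p + q < N"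
  shows "bexp F p q = (\<Sum>n<N. bpow F n p q / fact n)"
proof -
  have "bexp F p q = (\<Sum>n\<le>p+q. bpow F n p q / fact n)" unfolding bexp_def by simp
  also have "\<dots> = (\<Sum>n<N. bpow F n p q / fact n)"
    by (rule sum.mono_neutral_left) (use N bpow_trunc[of F, OF F0] in auto)
  finally show ?thesis .
qed

lemma bexp_deriv:
  assumes F0: "F 0 0 = 0"
  shows "of_nat (p + q) * bexp F p q = bmul (bD F) (bexp F) p q"
proof -
  let ?M = "p + q"
  have "of_nat (p + q) * bexp F p q = (\<Sum>n<Suc ?M. bD (bpow F n) p q / fact n)"
    unfolding bexp_def bD_def by (simp add: sum_distrib_left lessThan_Suc_atMost)
  also have "\<dots> = (\<Sum>n<?M. bD (bpow F (Suc n)) p q / fact (Suc n))"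
    by (subst sum.lessThan_Suc_shift) (simp add: bD_def bone_def del: bpow.simps(2))
  also have "\<dots> = (\<Sum>n<?M. bmul (bD F) (bpow F n) p q / fact n)"
  proof (intro sum.cong refl)
    fix n
    have "bD (bpow F (Suc n)) p q / fact (Suc n) = of_nat (Suc n) * bmul (bD F) (bpow F n) p q / (of_nat (Suc n) * fact n)"
      by (simp only: bD_pow bsc_def fact_Suc of_nat_mult)
    also have "\<dots> = bmul (bD F) (bpow F n) p q / fact n" by simp
    finally show "bD (bpow F (Suc n)) p q / fact (Suc n) = bmul (bD F) (bpow F n) p q / fact n" .
  qed
  also have "\<dots> = (\<Sum>n<?M. \<Sum>i\<le>p. \<Sum>j\<le>q. bD F i j * (bpow F n (p - i) (q - j) / fact n))"
    unfolding bmul_def by (simp add: sum_divide_distrib)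
  also have "\<dots> = (\<Sum>i\<le>p. \<Sum>j\<le>q. \<Sum>n<?M. bD F i j * (bpow F n (p - i) (q - j) / fact n))"
    by (simp add: sum.swap[of _ "{..<?M}"])
  also have "\<dots> = (\<Sum>i\<le>p. \<Sum>j\<le>q. bD F i j * bexp F (p - i) (q - j))"
  proof (intro sum.cong refl)
    fix i j assume ij: "i \<in> {..p}" "j \<in> {..q}"
    show "(\<Sum>n<?M. bD F i j * (bpow F n (p - i) (q - j) / fact n)) = bD F i j * bexp F (p - i) (q - j)"
    proof (cases "i = 0 \<and> j = 0")
      case True then show ?thesis by (simp add: bD_def)
    next
      case False
      then have "p - i + (q - j) < ?M" using ij by auto
      then show ?thesis by (simp add: bexp_trunc[of F, OF F0] sum_distrib_left)
    qed
  qed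
  also have "\<dots> = bmul (bD F) (bexp F) p q" unfolding bmul_def by simp
  finally show ?thesis .
qed


lemma pow_card_sum1:
  fixes g :: "nat \<Rightarrow> rat"
  assumes fin: "finite V"
  shows "(\<Sum>A\<in>Pow V. g (card A)) = (\<Sum>i\<le>card V. of_nat (card V choose i) * g i)"
proof -
  have "(\<Sum>A\<in>Pow V. g (card A)) = (\<Sum>i\<le>card V. \<Sum>A\<in>{A. A \<in> Pow V \<and> card A = i}. g (card A))"
    by (rule sum.group[symmetric]) (use fin card_mono in auto)
  also have "\<dots> = (\<Sum>i\<le>card V. of_nat (card V choose i) * g i)"
  proof (rule sum.cong[OF refl])
    fix i
    have "{A. A \<in> Pow V \<and> card A = i} = {B. B \<subseteq> V \<and> card B = i}" by auto
    then have c: "card {A. A \<in> Pow V \<and> card A = i} = card V choose i" using n_subsets[OF fin] by simp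
    have "(\<Sum>A\<in>{A. A \<in> Pow V \<and> card A = i}. g (card A)) = (\<Sum>A\<in>{A. A \<in> Pow V \<and> card A = i}. g i)"
      by (rule sum.cong) auto
    also have "\<dots> = of_nat (card V choose i) * g i" using c by simp
    finally show "(\<Sum>A\<in>{A. A \<in> Pow V \<and> card A = i}. g (card A)) = of_nat (card V choose i) * g i" .
  qed
  finally show ?thesis .
qed

lemma pow_sum2:
  fixes g :: "nat \<Rightarrow> nat \<Rightarrow> nat \<Rightarrow> nat \<Rightarrow> rat"
  assumes fin: "finite V1" "finite V2" and D: "V1 \<inter> V2 = {}"
  shows "(\<Sum>A\<in>Pow (V1 \<union> V2). g (card (A \<inter> V1)) (card (A \<inter> V2)) (card (V1 - A)) (card (V2 - A)))
    = (\<Sum>i\<le>card V1. \<Sum>j\<le>card V2. of_nat (card V1 choose i) * of_nat (card V2 choose j) * g i j (card V1 - i) (card V2 - j))"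
proof -
  have "(\<Sum>A\<in>Pow (V1 \<union> V2). g (card (A \<inter> V1)) (card (A \<inter> V2)) (card (V1 - A)) (card (V2 - A)))
      = (\<Sum>(A1,A2)\<in>Pow V1 \<times> Pow V2. g (card A1) (card A2) (card V1 - card A1) (card V2 - card A2))"
  proof (rule sum.reindex_bij_witness[where i = "\<lambda>(A1,A2). A1 \<union> A2" and j = "\<lambda>A. (A \<inter> V1, A \<inter> V2)"])
    fix A assume A: "A \<in> Pow (V1 \<union> V2)"
    show "(\<lambda>(A1,A2). A1 \<union> A2) (A \<inter> V1, A \<inter> V2) = A" using A by auto
    show "(A \<inter> V1, A \<inter> V2) \<in> Pow V1 \<times> Pow V2" by auto
    have "card (V1 - A) = card V1 - card (A \<inter> V1)"
      by (metis Diff_Int2 Diff_Int_distrib2 card_Diff_subset_Int fin(1) finite_Int inf.idem inf_commute)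
    moreover have "card (V2 - A) = card V2 - card (A \<inter> V2)"
      by (metis Diff_Int2 Diff_Int_distrib2 card_Diff_subset_Int fin(2) finite_Int inf.idem inf_commute)
    ultimately show "(case (A \<inter> V1, A \<inter> V2) of (A1, A2) \<Rightarrow> g (card A1) (card A2) (card V1 - card A1) (card V2 - card A2))
        = g (card (A \<inter> V1)) (card (A \<inter> V2)) (card (V1 - A)) (card (V2 - A))" by simp
  next
    fix B assume B: "B \<in> Pow V1 \<times> Pow V2"
    obtain A1 A2 where B': "B = (A1,A2)" "A1 \<subseteq> V1" "A2 \<subseteq> V2" using B by auto
    show "(\<lambda>A. (A \<inter> V1, A \<inter> V2)) ((\<lambda>(A1,A2). A1 \<union> A2) B) = B" using B' D by auto
    show "(\<lambda>(A1,A2). A1 \<union> A2) B \<in> Pow (V1 \<union> V2)" using B' by auto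
  qed
  also have "\<dots> = (\<Sum>A1\<in>Pow V1. \<Sum>A2\<in>Pow V2. g (card A1) (card A2) (card V1 - card A1) (card V2 - card A2))"
    by (simp add: sum.cartesian_product)
  also have "\<dots> = (\<Sum>A1\<in>Pow V1. \<Sum>j\<le>card V2. of_nat (card V2 choose j) * g (card A1) j (card V1 - card A1) (card V2 - j))"
    by (intro sum.cong refl pow_card_sum1[OF fin(2), of "\<lambda>m. g _ m _ (card V2 - m)"])
  also have "\<dots> = (\<Sum>i\<le>card V1. of_nat (card V1 choose i) * (\<Sum>j\<le>card V2. of_nat (card V2 choose j) * g i j (card V1 - i) (card V2 - j)))"
    by (rule pow_card_sum1[OF fin(1), of "\<lambda>m. \<Sum>j\<le>card V2. of_nat (card V2 choose j) * g m j (card V1 - m) (card V2 - j)"])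
  also have "\<dots> = (\<Sum>i\<le>card V1. \<Sum>j\<le>card V2. of_nat (card V1 choose i) * of_nat (card V2 choose j) * g i j (card V1 - i) (card V2 - j))"
    by (simp add: sum_distrib_left mult.assoc)
  finally show ?thesis .
qed

lemma fact_bmul:
  "fact p * fact q * bmul \<alpha> \<beta> p q = (\<Sum>i\<le>p. \<Sum>j\<le>q. of_nat (p choose i) * of_nat (q choose j) *
      (fact i * fact j * \<alpha> i j) * (fact (p - i) * fact (q - j) * \<beta> (p - i) (q - j)))"
proof -
  have "fact p * fact q * bmul \<alpha> \<beta> p q = (\<Sum>i\<le>p. \<Sum>j\<le>q. fact p * fact q * (\<alpha> i j * \<beta> (p - i) (q - j)))"
    unfolding bmul_def by (simp add: sum_distrib_left)
  also have "\<dots> = (\<Sum>i\<le>p. \<Sum>j\<le>q. of_nat (p choose i) * of_nat (q choose j) *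
      (fact i * fact j * \<alpha> i j) * (fact (p - i) * fact (q - j) * \<beta> (p - i) (q - j)))"
  proof (intro sum.cong refl)
    fix i j assume ij: "i \<in> {..p}" "j \<in> {..q}"
    have b1: "(of_nat (p choose i) :: rat) * (fact i * fact (p - i)) = fact p"
      using binomial_fact[of i p] ij by (simp add: field_simps)
    have b2: "(of_nat (q choose j) :: rat) * (fact j * fact (q - j)) = fact q"
      using binomial_fact[of j q] ij by (simp add: field_simps)
    show "fact p * fact q * (\<alpha> i j * \<beta> (p - i) (q - j)) = of_nat (p choose i) * of_nat (q choose j) *
      (fact i * fact j * \<alpha> i j) * (fact (p - i) * fact (q - j) * \<beta> (p - i) (q - j))"
      unfolding b1[symmetric] b2[symmetric] by (simp add: algebra_simps)
  qed
  finally show ?thesis .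
qed


lemma SPi_empty: "SPi {} {} = {{}}"
proof
  show "SPi {} {} \<subseteq> {{}}"
  proof
    fix R assume "R \<in> SPi {} {}"
    then have s: "semi_pointed {} {} R" by (simp add: SPi_iff)
    have "R = {}"
    proof (rule ccontr)
      assume "R \<noteq> {}"
      then obtain B w where Bw: "(B,w) \<in> R" by auto
      then show False using spD(1)[OF s Bw] spD(2)[OF s Bw] by blast
    qed
    then show "R \<in> {{}}" by simp
  qed
  show "{{}} \<subseteq> SPi {} {}"
    by (auto simp: SPi_iff intro!: spI)
qed

lemma SW_empty: "SW {} {} \<omega> = 1"
  unfolding SW_def SPi_empty by simp

lemma bexp00: "bexp F 0 0 = 1"
  unfolding bexp_def by (simp add: bone_def)

lemma egf00: "egf a 0 0 = 0" unfolding egf_def by simp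

lemma exp_lemma:
  fixes \<omega> :: "'a set \<times> 'a option \<Rightarrow> rat" and hh :: "nat \<Rightarrow> nat \<Rightarrow> rat"
  assumes fin: "finite V1" "finite V2" and D: "V1 \<inter> V2 = {}"
    and hyp: "\<And>A. A \<subseteq> V1 \<union> V2 \<Longrightarrow> A \<noteq> {} \<Longrightarrow>
        (\<Sum>u\<in>ptset (A \<inter> V1) (A \<inter> V2). \<omega> (A,u)) = hh (card (A \<inter> V1)) (card (A \<inter> V2))"
  shows "W1 \<subseteq> V1 \<Longrightarrow> W2 \<subseteq> V2 \<Longrightarrow>
     SW W1 W2 \<omega> = fact (card W1) * fact (card W2) * bexp (egf hh) (card W1) (card W2)"
proof (induction "card W1 + card W2" arbitrary: W1 W2 rule: less_induct)
  case less
  let ?H = "egf hh"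
  let ?E = "bexp ?H"
  let ?p = "card W1" and ?q = "card W2"
  have finW: "finite W1" "finite W2" using less.prems fin finite_subset by auto
  have DW: "W1 \<inter> W2 = {}" using less.prems D by blast
  show ?case
  proof (cases "?p + ?q = 0")
    case True
    then have "W1 = {}" "W2 = {}" using finW by auto
    then show ?thesis by (simp add: SW_empty bexp00)
  next
    case False
    let ?n = "?p + ?q"
    let ?W = "W1 \<union> W2"
    let ?h = "\<lambda>A. \<Sum>u\<in>ptset (A \<inter> W1) (A \<inter> W2). \<omega> (A,u)"
    have cardW: "card ?W = ?n" using card_Un_disjoint[OF finW DW] by simp
    have "of_nat ?n * SW W1 W2 \<omega> = (\<Sum>x0\<in>?W. SW W1 W2 \<omega>)" using cardW by simp
    also have "\<dots> = (\<Sum>x0\<in>?W. \<Sum>A\<in>{A\<in>Pow ?W. x0 \<in> A}. ?h A * SW (W1 - A) (W2 - A) \<omega>)"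
      by (rule sum.cong[OF refl]) (rule SW_rec[OF finW DW])
    also have "\<dots> = (\<Sum>A\<in>Pow ?W. \<Sum>x0\<in>{x0\<in>?W. x0 \<in> A}. ?h A * SW (W1 - A) (W2 - A) \<omega>)"
      using sum.swap_restrict[of ?W "Pow ?W" "\<lambda>x0 A. ?h A * SW (W1 - A) (W2 - A) \<omega>" "\<lambda>x0 A. x0 \<in> A"] finW
      by simp
    also have "\<dots> = (\<Sum>A\<in>Pow ?W. of_nat (card A) * (?h A * SW (W1 - A) (W2 - A) \<omega>))"
    proof (rule sum.cong[OF refl])
      fix A assume "A \<in> Pow ?W"
      then have "{x0\<in>?W. x0 \<in> A} = A" by auto
      then show "(\<Sum>x0\<in>{x0\<in>?W. x0 \<in> A}. ?h A * SW (W1 - A) (W2 - A) \<omega>) = of_nat (card A) * (?h A * SW (W1 - A) (W2 - A) \<omega>)"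
        by simp
    qed
    also have "\<dots> = (\<Sum>A\<in>Pow ?W. (\<lambda>a b c d. of_nat (a + b) * hh a b * (fact c * fact d * ?E c d))
          (card (A \<inter> W1)) (card (A \<inter> W2)) (card (W1 - A)) (card (W2 - A)))"
    proof (rule sum.cong[OF refl])
      fix A assume A: "A \<in> Pow ?W"
      show "of_nat (card A) * (?h A * SW (W1 - A) (W2 - A) \<omega>) = (\<lambda>a b c d. of_nat (a + b) * hh a b * (fact c * fact d * ?E c d))
          (card (A \<inter> W1)) (card (A \<inter> W2)) (card (W1 - A)) (card (W2 - A))"
      proof (cases "A = {}")
        case True then show ?thesis by simp
      next
        case False
        have AV: "A \<subseteq> V1 \<union> V2" using A less.prems by auto
        have A1: "A \<inter> W1 = A \<inter> V1" using A less.prems D by auto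
        have A2: "A \<inter> W2 = A \<inter> V2" using A less.prems D by auto
        have hA: "?h A = hh (card (A \<inter> W1)) (card (A \<inter> W2))" using hyp[OF AV False] A1 A2 by simp
        have cA: "card A = card (A \<inter> W1) + card (A \<inter> W2)"
        proof -
          have eq: "A = (A \<inter> W1) \<union> (A \<inter> W2)" using A by auto
          have "card ((A \<inter> W1) \<union> (A \<inter> W2)) = card (A \<inter> W1) + card (A \<inter> W2)"
            by (rule card_Un_disjoint) (use finW DW in auto)
          then show ?thesis using arg_cong[where f = card, OF eq] by simp
        qed
        have lt: "card (W1 - A) + card (W2 - A) < ?n"
        proof -
          obtain z where z: "z \<in> A" using False by blast
          have le1: "card (W1 - A) \<le> card W1" and le2: "card (W2 - A) \<le> card W2"
            using finW by (auto intro: card_mono)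
          have "z \<in> W1 \<or> z \<in> W2" using A z by auto
          then show ?thesis
          proof
            assume "z \<in> W1"
            then have "W1 - A \<subset> W1" using z by blast
            then have "card (W1 - A) < card W1" using psubset_card_mono finW(1) by blast
            then show ?thesis using le2 by linarith
          next
            assume "z \<in> W2"
            then have "W2 - A \<subset> W2" using z by blast
            then have "card (W2 - A) < card W2" using psubset_card_mono finW(2) by blast
            then show ?thesis using le1 by linarith
          qed
        qed
        have IH: "SW (W1 - A) (W2 - A) \<omega> = fact (card (W1 - A)) * fact (card (W2 - A)) * ?E (card (W1 - A)) (card (W2 - A))"
          using less.hyps[OF lt] less.prems by auto
        show ?thesis using hA cA IH by simp
      qed
    qed
    also have "\<dots> = (\<Sum>i\<le>?p. \<Sum>j\<le>?q. of_nat (?p choose i) * of_nat (?q choose j) *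
         (of_nat (i + j) * hh i j * (fact (?p - i) * fact (?q - j) * ?E (?p - i) (?q - j))))"
      by (rule pow_sum2[OF finW DW])
    also have "\<dots> = fact ?p * fact ?q * bmul (bD ?H) ?E ?p ?q"
      unfolding fact_bmul
    proof (intro sum.cong refl)
      fix i j assume ij: "i \<in> {..?p}" "j \<in> {..?q}"
      have "fact i * fact j * bD ?H i j = of_nat (i + j) * hh i j"
        unfolding bD_def egf_def by (cases "i = 0 \<and> j = 0") (auto simp: field_simps)
      then show "of_nat (?p choose i) * of_nat (?q choose j) * (of_nat (i + j) * hh i j * (fact (?p - i) * fact (?q - j) * ?E (?p - i) (?q - j))) =
         of_nat (?p choose i) * of_nat (?q choose j) * (fact i * fact j * bD ?H i j) * (fact (?p - i) * fact (?q - j) * ?E (?p - i) (?q - j))"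
        by (simp add: mult.assoc)
    qed
    also have "\<dots> = fact ?p * fact ?q * (of_nat (?p + ?q) * ?E ?p ?q)"
      using bexp_deriv[of ?H ?p ?q] egf00 by simp
    finally have "of_nat ?n * SW W1 W2 \<omega> = of_nat ?n * (fact ?p * fact ?q * ?E ?p ?q)" by (simp add: algebra_simps)
    then show ?thesis using False by simp
  qed
qed


definition NC :: "'a set \<Rightarrow> 'a set \<Rightarrow> 'a option \<Rightarrow> nat \<Rightarrow> nat" where
  "NC V1 V2 w k = card (CH (SPi V1 V2) {(V1 \<union> V2, w)} k)"

definition rl :: "('a \<Rightarrow> 'b) \<Rightarrow> 'a sppart \<Rightarrow> 'b sppart" where
  "rl f P = (\<lambda>(B,w). (f ` B, map_option f w)) ` P"

lemma rl_mem: "y \<in> rl f P \<longleftrightarrow> (\<exists>B w. (B,w) \<in> P \<and> y = (f ` B, map_option f w))"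
  unfolding rl_def by auto

lemma rl_sp:
  assumes inj: "inj_on f (V1 \<union> V2)" and sP: "semi_pointed V1 V2 P"
  shows "semi_pointed (f ` V1) (f ` V2) (rl f P)"
proof -
  have sub: "B \<subseteq> V1 \<union> V2" if "(B,w) \<in> P" for B w using spD(2)[OF sP that] .
  have bk: "B \<subseteq> W" if h: "(B,w) \<in> P" "f ` B \<subseteq> f ` W" "W \<subseteq> V1 \<union> V2" for B w W
  proof
    fix x assume x: "x \<in> B"
    then obtain y where y: "y \<in> W" "f x = f y" using h(2) by blast
    have "x = y" using inj_onD[OF inj y(2)] x sub[OF h(1)] y(1) h(3) by blast
    then show "x \<in> W" using y by simp
  qed
  show ?thesis
proof (rule spI)
  fix B' w' assume "(B',w') \<in> rl f P"
  then obtain B w where Bw: "(B,w) \<in> P" "B' = f ` B" "w' = map_option f w" unfolding rl_mem by blast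
  show "B' \<noteq> {}" using spD(1)[OF sP Bw(1)] Bw(2) by simp
  show "B' \<subseteq> f ` V1 \<Longrightarrow> w' \<noteq> None" using bk[OF Bw(1), of V1] spD(4)[OF sP Bw(1)] Bw(2,3) by auto
  show "B' \<subseteq> f ` V2 \<Longrightarrow> w' = None" using bk[OF Bw(1), of V2] spD(5)[OF sP Bw(1)] Bw(2,3) by auto
next
  fix B' e' assume "(B', Some e') \<in> rl f P"
  then obtain B w where Bw: "(B,w) \<in> P" "B' = f ` B" "Some e' = map_option f w" unfolding rl_mem by blast
  then obtain e where e: "w = Some e" "e' = f e" by (cases w) auto
  then show "e' \<in> B' \<and> e' \<in> f ` V1" using spD(3)[OF sP Bw(1) e(1)] Bw(2) by auto
next
  fix B1 w1 B2 w2 x assume h: "(B1,w1) \<in> rl f P" "(B2,w2) \<in> rl f P" "x \<in> B1" "x \<in> B2"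
  obtain C1 u1 where c1: "(C1,u1) \<in> P" "B1 = f ` C1" "w1 = map_option f u1" using h(1) unfolding rl_mem by blast
  obtain C2 u2 where c2: "(C2,u2) \<in> P" "B2 = f ` C2" "w2 = map_option f u2" using h(2) unfolding rl_mem by blast
  obtain y1 y2 where y: "y1 \<in> C1" "y2 \<in> C2" "x = f y1" "x = f y2" using h(3,4) c1(2) c2(2) by blast
  have "y1 = y2" using inj_onD[OF inj] y sub[OF c1(1)] sub[OF c2(1)] by blast
  then have "C1 = C2 \<and> u1 = u2" using spU[OF sP c1(1) c2(1)] y(1,2) by blast
  then show "B1 = B2 \<and> w1 = w2" using c1 c2 by simp
next
  have "fst ` rl f P = (\<lambda>x. f ` fst x) ` P" unfolding rl_def image_image by (simp add: case_prod_beta)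
  then have "\<Union>(fst ` rl f P) = f ` (\<Union>(fst ` P))" by (simp add: image_Union image_image)
  also have "\<dots> = f ` V1 \<union> f ` V2" using spCov[OF sP] by auto
  finally show "\<Union>(fst ` rl f P) = f ` V1 \<union> f ` V2" .
qed
qed

lemma rl_le:
  assumes le: "sp_le P R"
  shows "sp_le (rl f P) (rl f R)"
proof (rule sp_leI)
  fix B' w' assume "(B',w') \<in> rl f P"
  then obtain B w where Bw: "(B,w) \<in> P" "B' = f ` B" "w' = map_option f w" unfolding rl_mem by blast
  obtain S where S: "S \<subseteq> R" "B = \<Union>(fst ` S)"
     "case w of Some e \<Rightarrow> (\<exists>q. (q, Some e) \<in> S) | None \<Rightarrow> (\<exists>q. (q, None) \<in> S)"
    using sp_leD[OF le Bw(1)] by blast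
  have "rl f S \<subseteq> rl f R" using S(1) unfolding rl_def by blast
  moreover have "B' = \<Union>(fst ` rl f S)"
  proof -
    have "fst ` rl f S = (\<lambda>x. f ` fst x) ` S" unfolding rl_def image_image by (simp add: case_prod_beta)
    then show ?thesis using S(2) Bw(2) by (simp add: image_Union image_image)
  qed
  moreover have "case w' of Some e \<Rightarrow> (\<exists>q. (q, Some e) \<in> rl f S) | None \<Rightarrow> (\<exists>q. (q, None) \<in> rl f S)"
  proof (cases w)
    case None
    then obtain q where "(q, None) \<in> S" using S(3) by auto
    then have "(f ` q, None) \<in> rl f S" unfolding rl_mem by force
    then show ?thesis using None Bw(3) by auto
  next
    case (Some e)
    then obtain q where "(q, Some e) \<in> S" using S(3) by auto
    then have "(f ` q, Some (f e)) \<in> rl f S" unfolding rl_mem by force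
    then show ?thesis using Some Bw(3) by auto
  qed
  ultimately show "\<exists>S'\<subseteq>rl f R. B' = \<Union>(fst ` S') \<and>
        (case w' of Some e \<Rightarrow> (\<exists>q. (q, Some e) \<in> S') | None \<Rightarrow> (\<exists>q. (q, None) \<in> S'))" by blast
qed

lemma rl_inv:
  assumes inj: "inj_on f (V1 \<union> V2)" and sP: "semi_pointed V1 V2 P"
  shows "rl (inv_into (V1 \<union> V2) f) (rl f P) = P"
proof -
  let ?g = "inv_into (V1 \<union> V2) f"
  have "rl ?g (rl f P) = (\<lambda>x. ((\<lambda>y. ?g (f y)) ` fst x, map_option ?g (map_option f (snd x)))) ` P"
    unfolding rl_def image_image by (simp add: case_prod_beta image_image)
  also have "\<dots> = (\<lambda>x. x) ` P"
  proof (rule image_cong[OF refl])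
    fix x assume x: "x \<in> P"
    obtain B w where Bw: "x = (B,w)" by (cases x)
    have sub: "B \<subseteq> V1 \<union> V2" using spD(2)[OF sP] x Bw by blast
    have "(\<lambda>y. ?g (f y)) ` B = B"
    proof -
      have "(\<lambda>y. ?g (f y)) ` B = (\<lambda>y. y) ` B" using sub inj by (intro image_cong) auto
      then show ?thesis by simp
    qed
    moreover have "map_option ?g (map_option f w) = w"
    proof (cases w)
      case None then show ?thesis by simp
    next
      case (Some e)
      then have "e \<in> V1 \<union> V2" using spD(3)[OF sP] x Bw by blast
      then show ?thesis using Some inj by simp
    qed
    ultimately show "((\<lambda>y. ?g (f y)) ` fst x, map_option ?g (map_option f (snd x))) = x" using Bw by simp
  qed
  finally show ?thesis by simp
qed

lemma rl_single: "rl f {(B,w)} = {(f ` B, map_option f w)}"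
  unfolding rl_def by simp

lemma NC_relabel_le:
  assumes fin: "finite V1" "finite V2" and inj: "inj_on f (V1 \<union> V2)" and k: "k \<ge> 1"
  shows "NC V1 V2 w k \<le> NC (f ` V1) (f ` V2) (map_option f w) k"
proof -
  let ?A = "CH (SPi V1 V2) {(V1 \<union> V2, w)} k"
  let ?B = "CH (SPi (f ` V1) (f ` V2)) {(f ` V1 \<union> f ` V2, map_option f w)} k"
  have inA: "semi_pointed V1 V2 P" if "as \<in> ?A" "P \<in> set as" for as P
  proof -
    have "set as \<subseteq> SPi V1 V2" using that(1) unfolding CH_def mc_iff by blast
    then show ?thesis using that(2) by (auto simp: SPi_iff)
  qed
  have "inj_on (map (rl f)) ?A"
  proof (rule inj_onI)
    fix as bs assume as: "as \<in> ?A" and bs: "bs \<in> ?A" and e: "map (rl f) as = map (rl f) bs"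
    have "map (rl (inv_into (V1 \<union> V2) f)) (map (rl f) as) = as"
      unfolding map_map by (rule map_idI) (simp add: rl_inv[OF inj inA[OF as]])
    moreover have "map (rl (inv_into (V1 \<union> V2) f)) (map (rl f) bs) = bs"
      unfolding map_map by (rule map_idI) (simp add: rl_inv[OF inj inA[OF bs]])
    ultimately show "as = bs" using arg_cong[OF e, of "map (rl (inv_into (V1 \<union> V2) f))"] by simp
  qed
  moreover have "map (rl f) ` ?A \<subseteq> ?B"
  proof
    fix ys assume "ys \<in> map (rl f) ` ?A"
    then obtain as where as: "as \<in> ?A" and ys: "ys = map (rl f) as" by blast
    have len: "length as = k" and st: "set as \<subseteq> SPi V1 V2"
      and ch: "\<forall>i. Suc i < k \<longrightarrow> sp_le (as ! i) (as ! Suc i)" and hd: "hd as = {(V1 \<union> V2, w)}"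
      using as unfolding CH_def mc_iff by auto
    have "length ys = k" using len ys by simp
    moreover have "set ys \<subseteq> SPi (f ` V1) (f ` V2)"
    proof
      fix y assume "y \<in> set ys"
      then obtain P where P: "P \<in> set as" "y = rl f P" using ys by auto
      show "y \<in> SPi (f ` V1) (f ` V2)" using rl_sp[OF inj inA[OF as P(1)]] P(2) by (simp add: SPi_iff)
    qed
    moreover have "\<forall>i. Suc i < k \<longrightarrow> sp_le (ys ! i) (ys ! Suc i)"
    proof (intro allI impI)
      fix i assume i: "Suc i < k"
      have "ys ! i = rl f (as ! i)" "ys ! Suc i = rl f (as ! Suc i)" using ys len i by auto
      then show "sp_le (ys ! i) (ys ! Suc i)" using rl_le[OF ch[rule_format, OF i]] by simp
    qed
    moreover have "hd ys = {(f ` V1 \<union> f ` V2, map_option f w)}"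
    proof -
      have "as \<noteq> []" using len k by auto
      then have "hd ys = rl f (hd as)" using ys by (simp add: hd_map)
      then show ?thesis using hd by (simp add: rl_single image_Un)
    qed
    ultimately show "ys \<in> ?B" unfolding CH_def mc_iff by simp
  qed
  moreover have "finite ?B" by (rule CH_finite[OF SPi_finite]) (use fin in auto)
  ultimately show ?thesis unfolding NC_def by (rule card_inj_on_le)
qed

lemma inv_img: "inj_on f A \<Longrightarrow> B \<subseteq> A \<Longrightarrow> inv_into A f ` f ` B = B"
proof -
  assume a: "inj_on f A" "B \<subseteq> A"
  have "inv_into A f ` f ` B = (\<lambda>y. inv_into A f (f y)) ` B" by (simp add: image_image)
  also have "\<dots> = (\<lambda>y. y) ` B" using a by (intro image_cong) auto
  finally show ?thesis by simp
qed

lemma NC_relabel: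
  assumes fin: "finite V1" "finite V2" and inj: "inj_on f (V1 \<union> V2)" and k: "k \<ge> 1"
    and w: "set_option w \<subseteq> V1 \<union> V2"
  shows "NC V1 V2 w k = NC (f ` V1) (f ` V2) (map_option f w) k"
proof (rule antisym)
  show "NC V1 V2 w k \<le> NC (f ` V1) (f ` V2) (map_option f w) k" by (rule NC_relabel_le[OF fin inj k])
  let ?g = "inv_into (V1 \<union> V2) f"
  have inj': "inj_on ?g (f ` V1 \<union> f ` V2)" by (rule inj_on_inv_into) auto
  have g1: "?g ` f ` V1 = V1" using inv_img[OF inj, of V1] by simp
  have g2: "?g ` f ` V2 = V2" using inv_img[OF inj, of V2] by simp
  have gw: "map_option ?g (map_option f w) = w" using w inj by (cases w) auto
  have "NC (f ` V1) (f ` V2) (map_option f w) k \<le> NC (?g ` f ` V1) (?g ` f ` V2) (map_option ?g (map_option f w)) k"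
    by (rule NC_relabel_le[OF _ _ inj' k]) (use fin in auto)
  then show "NC (f ` V1) (f ` V2) (map_option f w) k \<le> NC V1 V2 w k" using g1 g2 gw by simp
qed

lemma canon_relabel:
  assumes fin: "finite W1" "finite W2" and D: "W1 \<inter> W2 = {}"
  shows "\<exists>f :: 'a \<Rightarrow> nat. inj_on f (W1 \<union> W2) \<and> f ` W1 = V1c (card W1) \<and> f ` W2 = V2c (card W1) (card W2)"
proof -
  obtain h1 where h1: "bij_betw h1 W1 {0..<card W1}" using ex_bij_betw_finite_nat[OF fin(1)] by blast
  obtain h2 where h2: "bij_betw h2 W2 {0..<card W2}" using ex_bij_betw_finite_nat[OF fin(2)] by blast
  define f where "f x = (if x \<in> W1 then h1 x else card W1 + h2 x)" for x
  have i1: "f ` W1 = V1c (card W1)" using h1 unfolding f_def V1c_def bij_betw_def by (auto simp: atLeast0LessThan)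
  have "f ` W2 = (\<lambda>x. card W1 + h2 x) ` W2" using D unfolding f_def by (auto intro!: image_cong)
  also have "\<dots> = (\<lambda>y. card W1 + y) ` {0..<card W2}" using h2 unfolding bij_betw_def by (simp add: image_image[symmetric])
  also have "\<dots> = V2c (card W1) (card W2)" unfolding V2c_def by (simp add: image_add_atLeastLessThan add.commute)
  finally have i2: "f ` W2 = V2c (card W1) (card W2)" .
  have "inj_on f (W1 \<union> W2)"
  proof (rule inj_onI)
    fix x y assume x: "x \<in> W1 \<union> W2" and y: "y \<in> W1 \<union> W2" and e: "f x = f y"
    have r1: "h1 z < card W1" if "z \<in> W1" for z using h1 that unfolding bij_betw_def by auto
    consider "x \<in> W1" "y \<in> W1" | "x \<in> W1" "y \<notin> W1" | "x \<notin> W1" "y \<in> W1" | "x \<notin> W1" "y \<notin> W1" by blast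
    then show "x = y"
    proof cases
      case 1 then show ?thesis using e h1 unfolding f_def bij_betw_def by (auto dest: inj_onD)
    next
      case 2 then show ?thesis using e r1[OF 2(1)] unfolding f_def by simp
    next
      case 3 then show ?thesis using e r1[OF 3(2)] unfolding f_def by simp
    next
      case 4 then have "x \<in> W2" "y \<in> W2" using x y by auto
      then show ?thesis using 4 e h2 unfolding f_def bij_betw_def by (auto dest: inj_onD)
    qed
  qed
  then show ?thesis using i1 i2 by blast
qed

lemma cnt_cross_NC: "cnt_cross p q k = NC (V1c p) (V2c p q) None k"
  unfolding cnt_cross_def NC_def CH_def m_cross_def by simp

lemma V12_disj: "V1c p \<inter> V2c p q = {}" unfolding V1c_def V2c_def by auto
lemma V12_fin: "finite (V1c p)" "finite (V2c p q)" unfolding V1c_def V2c_def by auto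
lemma V12_card: "card (V1c p) = p" "card (V2c p q) = q" unfolding V1c_def V2c_def by auto

lemma cnt_bullet_NC: "cnt_bullet p q k = (\<Sum>v\<in>V1c p. NC (V1c p) (V2c p q) (Some v) k)"
proof -
  let ?S = "SPi (V1c p) (V2c p q)"
  let ?C = "\<lambda>v. CH ?S {(V1c p \<union> V2c p q, Some v)} k"
  have eq: "{as \<in> multichains_in ?S k. \<exists>v \<in> V1c p. hd as = m_pt (V1c p) (V2c p q) v} = (\<Union>v\<in>V1c p. ?C v)"
  proof (intro equalityI subsetI)
    fix as assume "as \<in> {as \<in> multichains_in ?S k. \<exists>v \<in> V1c p. hd as = m_pt (V1c p) (V2c p q) v}"
    then obtain v where "v \<in> V1c p" "as \<in> multichains_in ?S k" "hd as = {(V1c p \<union> V2c p q, Some v)}"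
      unfolding m_pt_def by blast
    then show "as \<in> (\<Union>v\<in>V1c p. ?C v)" by (intro UN_I[of v]) (simp_all add: CH_def)
  next
    fix as assume "as \<in> (\<Union>v\<in>V1c p. ?C v)"
    then obtain v where v: "v \<in> V1c p" "as \<in> ?C v" by blast
    then have "as \<in> multichains_in ?S k" "hd as = {(V1c p \<union> V2c p q, Some v)}" unfolding CH_def by simp_all
    note v(1) this
    then show "as \<in> {as \<in> multichains_in ?S k. \<exists>v \<in> V1c p. hd as = m_pt (V1c p) (V2c p q) v}"
      unfolding m_pt_def by blast
  qed
  have "cnt_bullet p q k = card (\<Union>v\<in>V1c p. ?C v)"
    unfolding cnt_bullet_def eq by (rule refl)
  also have "\<dots> = (\<Sum>v\<in>V1c p. card (?C v))"
  proof (rule card_UN_disjoint)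
    show "finite (V1c p)" by (rule V12_fin)
    have "finite ?S" using SPi_finite[OF V12_fin(1) V12_fin(2)] .
    then show "\<forall>v\<in>V1c p. finite (?C v)" using CH_finite by blast
    show "\<forall>v\<in>V1c p. \<forall>v'\<in>V1c p. v \<noteq> v' \<longrightarrow> ?C v \<inter> ?C v' = {}"
    proof (intro ballI impI)
      fix v v' :: nat assume "v \<in> V1c p" "v' \<in> V1c p" "v \<noteq> v'"
      then have "{(V1c p \<union> V2c p q, Some v)} \<noteq> {(V1c p \<union> V2c p q, Some v')}" by simp
      then have neq: "{(V1c p \<union> V2c p q, Some v)} \<noteq> {(V1c p \<union> V2c p q, Some v')}" .
      have False if "as \<in> ?C v" "as \<in> ?C v'" for as
      proof -
        have "hd as = {(V1c p \<union> V2c p q, Some v)}" "hd as = {(V1c p \<union> V2c p q, Some v')}"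
          using that unfolding CH_def by simp_all
        then show False using neq by simp
      qed
      then show "?C v \<inter> ?C v' = {}" by blast
    qed
  qed
  finally show ?thesis unfolding NC_def .
qed

lemma cross_count:
  assumes fin: "finite W1" "finite W2" and D: "W1 \<inter> W2 = {}" and k: "k \<ge> 1"
  shows "NC W1 W2 None k = cnt_cross (card W1) (card W2) k"
proof -
  obtain f :: "'a \<Rightarrow> nat" where f: "inj_on f (W1 \<union> W2)" "f ` W1 = V1c (card W1)" "f ` W2 = V2c (card W1) (card W2)"
    using canon_relabel[OF fin D] by blast
  show ?thesis using NC_relabel[OF fin f(1) k, of None] f(2,3) cnt_cross_NC by simp
qed

lemma bullet_count:
  assumes fin: "finite W1" "finite W2" and D: "W1 \<inter> W2 = {}" and k: "k \<ge> 1"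
  shows "(\<Sum>v\<in>W1. NC W1 W2 (Some v) k) = cnt_bullet (card W1) (card W2) k"
proof -
  obtain f :: "'a \<Rightarrow> nat" where f: "inj_on f (W1 \<union> W2)" "f ` W1 = V1c (card W1)" "f ` W2 = V2c (card W1) (card W2)"
    using canon_relabel[OF fin D] by blast
  have "(\<Sum>v\<in>W1. NC W1 W2 (Some v) k) = (\<Sum>v\<in>W1. NC (V1c (card W1)) (V2c (card W1) (card W2)) (Some (f v)) k)"
  proof (rule sum.cong[OF refl])
    fix v assume "v \<in> W1"
    then show "NC W1 W2 (Some v) k = NC (V1c (card W1)) (V2c (card W1) (card W2)) (Some (f v)) k"
      using NC_relabel[OF fin f(1) k, of "Some v"] f(2,3) by simp
  qed
  also have "\<dots> = (\<Sum>v'\<in>f ` W1. NC (V1c (card W1)) (V2c (card W1) (card W2)) (Some v') k)"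
    by (rule sum.reindex[symmetric, unfolded comp_def]) (use f(1) inj_on_subset in blast)
  also have "\<dots> = cnt_bullet (card W1) (card W2) k" using f(2) cnt_bullet_NC by simp
  finally show ?thesis .
qed


definition omg :: "'a set \<Rightarrow> 'a set \<Rightarrow> nat \<Rightarrow> 'a set \<times> 'a option \<Rightarrow> rat" where
  "omg V1 V2 k y = of_nat (NC (fst y \<inter> V1) (fst y \<inter> V2) (snd y) k)"

lemma CH_notin: assumes "x \<notin> S" "k \<ge> 1" shows "CH S x k = {}"
proof -
  have False if "as \<in> CH S x k" for as
  proof -
    have "length as = k" "set as \<subseteq> S" "hd as = x" using that unfolding CH_def mc_iff by auto
    then have ne: "as \<noteq> []" using assms(2) by auto
    then have "hd as \<in> set as" by (rule hd_in_set)
    then show False using \<open>set as \<subseteq> S\<close> assms(1) \<open>hd as = x\<close> by auto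
  qed
  then show ?thesis by blast
qed

lemma ptset_sum:
  assumes "finite A1"
  shows "(\<Sum>u\<in>ptset A1 A2. g u) = (\<Sum>v\<in>A1. g (Some v)) + (if A2 = {} then 0 else g None)"
proof -
  have "(\<Sum>u\<in>ptset A1 A2. g u) = (\<Sum>u\<in>Some ` A1. g u) + (\<Sum>u\<in>(if A2 = {} then {} else {None}). g u)"
    unfolding ptset_def by (rule sum.union_disjoint) (use assms in auto)
  also have "(\<Sum>u\<in>Some ` A1. g u) = (\<Sum>v\<in>A1. g (Some v))" by (simp add: sum.reindex)
  finally show ?thesis by simp
qed

lemma NC_None_empty: assumes "k \<ge> 1" shows "NC A1 {} None k = 0"
proof -
  have "\<not> semi_pointed A1 {} {(A1 \<union> {}, None)}"
  proof
    assume s: "semi_pointed A1 {} {(A1 \<union> {}, None)}"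
    show False using spD(4)[OF s, of "A1 \<union> {}" None] by simp
  qed
  then have "{(A1 \<union> {}, None)} \<notin> SPi A1 {}" by (simp add: SPi_iff)
  then have "CH (SPi A1 {}) {(A1 \<union> {}, None)} k = {}" by (rule CH_notin[OF _ assms])
  then show ?thesis unfolding NC_def by simp
qed

lemma SW_chain:
  assumes fin: "finite V1" "finite V2" and k: "k \<ge> 1" and R: "R \<in> SPi V1 V2"
  shows "of_nat (card (CH (SPi V1 V2) R k)) = (\<Prod>y\<in>R. omg V1 V2 k y)"
proof -
  have sR: "semi_pointed V1 V2 R" using R by (simp add: SPi_iff)
  have "card (CH (SPi V1 V2) R k) = (\<Prod>y\<in>R. card (CH (SPi (fst y \<inter> V1) (fst y \<inter> V2)) {y} k))"
    by (rule master[OF fin R k])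
  also have "\<dots> = (\<Prod>y\<in>R. NC (fst y \<inter> V1) (fst y \<inter> V2) (snd y) k)"
  proof (rule prod.cong[OF refl])
    fix y assume y: "y \<in> R"
    obtain B w where Bw: "y = (B,w)" by (cases y)
    have "B \<subseteq> V1 \<union> V2" using spD(2)[OF sR] y Bw by blast
    then have "(B \<inter> V1) \<union> (B \<inter> V2) = B" by blast
    then show "card (CH (SPi (fst y \<inter> V1) (fst y \<inter> V2)) {y} k) = NC (fst y \<inter> V1) (fst y \<inter> V2) (snd y) k"
      unfolding NC_def using Bw by simp
  qed
  finally show ?thesis unfolding omg_def by simp
qed

lemma sp_le_min:
  assumes sR: "semi_pointed V1 V2 R"
  shows "sp_le {(V1 \<union> V2, w)} R \<longleftrightarrow> (case w of None \<Rightarrow> (\<exists>c. (c, None) \<in> R) | Some e \<Rightarrow> (\<exists>c. (c, Some e) \<in> R))"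
proof
  assume "sp_le {(V1 \<union> V2, w)} R"
  from sp_leD[OF this, of "V1 \<union> V2" w] obtain S where S: "S \<subseteq> R"
    "case w of Some e \<Rightarrow> (\<exists>q. (q, Some e) \<in> S) | None \<Rightarrow> (\<exists>q. (q, None) \<in> S)" by auto
  then show "case w of None \<Rightarrow> (\<exists>c. (c, None) \<in> R) | Some e \<Rightarrow> (\<exists>c. (c, Some e) \<in> R)"
    by (cases w) auto
next
  assume h: "case w of None \<Rightarrow> (\<exists>c. (c, None) \<in> R) | Some e \<Rightarrow> (\<exists>c. (c, Some e) \<in> R)"
  show "sp_le {(V1 \<union> V2, w)} R"
  proof (rule sp_leI)
    fix b w' assume "(b,w') \<in> {(V1 \<union> V2, w)}"
    then have bw: "b = V1 \<union> V2" "w' = w" by auto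
    have "b = \<Union>(fst ` R)" using spCov[OF sR] bw by simp
    moreover have "case w' of Some e \<Rightarrow> (\<exists>q. (q, Some e) \<in> R) | None \<Rightarrow> (\<exists>q. (q, None) \<in> R)"
      using h bw by (cases w) auto
    ultimately show "\<exists>S\<subseteq>R. b = \<Union>(fst ` S) \<and>
        (case w' of Some e \<Rightarrow> (\<exists>q. (q, Some e) \<in> S) | None \<Rightarrow> (\<exists>q. (q, None) \<in> S))" by blast
  qed
qed

lemma NC_Suc_sum:
  assumes fin: "finite V1" "finite V2" and k: "k \<ge> 1" and m: "{(V1 \<union> V2, w)} \<in> SPi V1 V2"
  shows "of_nat (NC V1 V2 w (Suc k)) = (\<Sum>R\<in>{R\<in>SPi V1 V2. case w of None \<Rightarrow> (\<exists>c. (c, None) \<in> R) | Some e \<Rightarrow> (\<exists>c. (c, Some e) \<in> R)}.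
      \<Prod>y\<in>R. omg V1 V2 k y)"
proof -
  have finS: "finite (SPi V1 V2)" using SPi_finite fin by blast
  have "NC V1 V2 w (Suc k) = (\<Sum>R\<in>{y\<in>SPi V1 V2. sp_le {(V1 \<union> V2, w)} y}. card (CH (SPi V1 V2) R k))"
    unfolding NC_def by (rule card_CH_Suc[OF m k finS])
  also have "{y\<in>SPi V1 V2. sp_le {(V1 \<union> V2, w)} y} = {R\<in>SPi V1 V2. case w of None \<Rightarrow> (\<exists>c. (c, None) \<in> R) | Some e \<Rightarrow> (\<exists>c. (c, Some e) \<in> R)}"
    using sp_le_min by (auto simp: SPi_iff)
  finally have "of_nat (NC V1 V2 w (Suc k)) = (\<Sum>R\<in>{R\<in>SPi V1 V2. case w of None \<Rightarrow> (\<exists>c. (c, None) \<in> R) | Some e \<Rightarrow> (\<exists>c. (c, Some e) \<in> R)}.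
      (of_nat (card (CH (SPi V1 V2) R k)) :: rat))" by simp
  also have "\<dots> = (\<Sum>R\<in>{R\<in>SPi V1 V2. case w of None \<Rightarrow> (\<exists>c. (c, None) \<in> R) | Some e \<Rightarrow> (\<exists>c. (c, Some e) \<in> R)}.
      \<Prod>y\<in>R. omg V1 V2 k y)"
    by (rule sum.cong[OF refl]) (use SW_chain[OF fin k] in auto)
  finally show ?thesis .
qed


definition bb :: "nat \<Rightarrow> nat \<Rightarrow> nat \<Rightarrow> rat" where "bb k i j = of_nat (cnt_bullet i j k)"
definition xx :: "nat \<Rightarrow> nat \<Rightarrow> nat \<Rightarrow> rat" where "xx k i j = of_nat (cnt_cross i j k)"
definition hh :: "nat \<Rightarrow> nat \<Rightarrow> nat \<Rightarrow> rat" where "hh k i j = bb k i j + xx k i j"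

lemma bb00: "bb k 0 0 = 0"
  unfolding bb_def cnt_bullet_NC V1c_def by simp

lemma fact_egf: "fact i * fact j * egf a i j = (if i = 0 \<and> j = 0 then 0 else a i j)"
  unfolding egf_def by simp

lemma ptset_omg:
  assumes fin: "finite V1" "finite V2" and D: "V1 \<inter> V2 = {}" and k: "k \<ge> 1" and A: "A \<subseteq> V1 \<union> V2"
  shows "(\<Sum>v\<in>A \<inter> V1. omg V1 V2 k (A, Some v)) = bb k (card (A \<inter> V1)) (card (A \<inter> V2))"
    and "(if A \<inter> V2 = {} then 0 else omg V1 V2 k (A, None)) = xx k (card (A \<inter> V1)) (card (A \<inter> V2))"
proof -
  have f: "finite (A \<inter> V1)" "finite (A \<inter> V2)" using fin by auto
  have d: "(A \<inter> V1) \<inter> (A \<inter> V2) = {}" using D by blast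
  have "(\<Sum>v\<in>A \<inter> V1. omg V1 V2 k (A, Some v)) = of_nat (\<Sum>v\<in>A \<inter> V1. NC (A \<inter> V1) (A \<inter> V2) (Some v) k)"
    unfolding omg_def by simp
  also have "\<dots> = bb k (card (A \<inter> V1)) (card (A \<inter> V2))"
    unfolding bb_def using bullet_count[OF f d k] by simp
  finally show "(\<Sum>v\<in>A \<inter> V1. omg V1 V2 k (A, Some v)) = bb k (card (A \<inter> V1)) (card (A \<inter> V2))" .
  have "(if A \<inter> V2 = {} then 0 else omg V1 V2 k (A, None)) = of_nat (NC (A \<inter> V1) (A \<inter> V2) None k)"
    unfolding omg_def using NC_None_empty[OF k, of "A \<inter> V1"] by auto
  also have "\<dots> = xx k (card (A \<inter> V1)) (card (A \<inter> V2))"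
    unfolding xx_def using cross_count[OF f d k] by simp
  finally show "(if A \<inter> V2 = {} then 0 else omg V1 V2 k (A, None)) = xx k (card (A \<inter> V1)) (card (A \<inter> V2))" .
qed

lemma hyp_all:
  assumes fin: "finite V1" "finite V2" and D: "V1 \<inter> V2 = {}" and k: "k \<ge> 1" and A: "A \<subseteq> V1 \<union> V2"
  shows "(\<Sum>u\<in>ptset (A \<inter> V1) (A \<inter> V2). omg V1 V2 k (A,u)) = hh k (card (A \<inter> V1)) (card (A \<inter> V2))"
  using ptset_sum[of "A \<inter> V1" "\<lambda>u. omg V1 V2 k (A,u)" "A \<inter> V2"] ptset_omg[OF fin D k A] fin
  unfolding hh_def by simp

lemma hyp_N:
  assumes fin: "finite V1" "finite V2" and D: "V1 \<inter> V2 = {}" and k: "k \<ge> 1" and A: "A \<subseteq> V1 \<union> V2"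
  shows "(\<Sum>u\<in>ptset (A \<inter> V1) (A \<inter> V2). (\<lambda>y. if snd y = None then omg V1 V2 k y else 0) (A,u)) = xx k (card (A \<inter> V1)) (card (A \<inter> V2))"
proof -
  have "(\<Sum>u\<in>ptset (A \<inter> V1) (A \<inter> V2). (\<lambda>y. if snd y = None then omg V1 V2 k y else 0) (A,u))
      = (if A \<inter> V2 = {} then 0 else omg V1 V2 k (A, None))"
    using ptset_sum[of "A \<inter> V1" "\<lambda>u. (\<lambda>y. if snd y = None then omg V1 V2 k y else 0) (A,u)" "A \<inter> V2"] fin by simp
  also have "\<dots> = xx k (card (A \<inter> V1)) (card (A \<inter> V2))" by (rule ptset_omg(2)[OF fin D k A])
  finally show ?thesis .
qed

lemma hyp_S:
  assumes fin: "finite V1" "finite V2" and D: "V1 \<inter> V2 = {}" and k: "k \<ge> 1" and A: "A \<subseteq> V1 \<union> V2"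
  shows "(\<Sum>u\<in>ptset (A \<inter> V1) (A \<inter> V2). (\<lambda>y. if snd y = None then 0 else omg V1 V2 k y) (A,u)) = bb k (card (A \<inter> V1)) (card (A \<inter> V2))"
proof -
  have "(\<Sum>u\<in>ptset (A \<inter> V1) (A \<inter> V2). (\<lambda>y. if snd y = None then 0 else omg V1 V2 k y) (A,u))
      = (\<Sum>v\<in>A \<inter> V1. omg V1 V2 k (A, Some v))"
    using ptset_sum[of "A \<inter> V1" "\<lambda>u. (\<lambda>y. if snd y = None then 0 else omg V1 V2 k y) (A,u)" "A \<inter> V2"] fin by simp
  also have "\<dots> = bb k (card (A \<inter> V1)) (card (A \<inter> V2))" by (rule ptset_omg(1)[OF fin D k A])
  finally show ?thesis .
qed

lemma C3:
  assumes k: "k \<ge> 1"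
  shows "of_nat (cnt p q k) = fact p * fact q * bexp (egf (hh k)) p q"
proof -
  let ?V1 = "V1c p" and ?V2 = "V2c p q"
  have finS: "finite (SPi ?V1 ?V2)" using SPi_finite V12_fin by blast
  have "of_nat (cnt p q k) = (of_nat (\<Sum>R\<in>SPi ?V1 ?V2. card (CH (SPi ?V1 ?V2) R k)) :: rat)"
    unfolding cnt_def using card_mc[OF k finS] by simp
  also have "\<dots> = SW ?V1 ?V2 (omg ?V1 ?V2 k)"
    unfolding SW_def of_nat_sum using SW_chain[OF V12_fin k] by (intro sum.cong) auto
  also have "\<dots> = fact (card ?V1) * fact (card ?V2) * bexp (egf (hh k)) (card ?V1) (card ?V2)"
    by (rule exp_lemma[OF V12_fin V12_disj hyp_all[OF V12_fin V12_disj k]]) auto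
  finally show ?thesis by (simp add: V12_card)
qed

lemma m_pt_in: "v \<in> V1c p \<Longrightarrow> {(V1c p \<union> V2c p q, Some v)} \<in> SPi (V1c p) (V2c p q)"
  using single_sp[OF V12_disj] unfolding SPi_iff ptset_def by auto

lemma m_cross_in: "q > 0 \<Longrightarrow> {(V1c p \<union> V2c p q, None)} \<in> SPi (V1c p) (V2c p q)"
proof -
  assume "q > 0"
  then have "V2c p q \<noteq> {}" unfolding V2c_def by auto
  then show ?thesis using single_sp[OF V12_disj] unfolding SPi_iff ptset_def by auto
qed

lemma C1:
  assumes k: "k \<ge> 1"
  shows "of_nat (cnt_bullet p q (Suc k)) = fact p * fact q * bmul (egf (bb k)) (bexp (egf (hh k))) p q"
proof -
  let ?V1 = "V1c p" and ?V2 = "V2c p q"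
  let ?V = "?V1 \<union> ?V2"
  let ?w = "omg ?V1 ?V2 k"
  let ?E = "bexp (egf (hh k))"
  note fin = V12_fin(1)[of p] V12_fin(2)[of p q] and D = V12_disj[of p q]
  have "of_nat (cnt_bullet p q (Suc k)) = (\<Sum>v\<in>?V1. (of_nat (NC ?V1 ?V2 (Some v) (Suc k)) :: rat))"
    unfolding cnt_bullet_NC by simp
  also have "\<dots> = (\<Sum>v\<in>?V1. \<Sum>R\<in>{R\<in>SPi ?V1 ?V2. \<exists>c. (c, Some v) \<in> R}. \<Prod>y\<in>R. ?w y)"
    by (rule sum.cong[OF refl]) (use NC_Suc_sum[OF fin k m_pt_in] in simp)
  also have "\<dots> = (\<Sum>v\<in>?V1. \<Sum>A\<in>{A\<in>Pow ?V. v \<in> A}. ?w (A, Some v) * SW (?V1 - A) (?V2 - A) ?w)"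
    by (rule sum.cong[OF refl]) (rule SW_pt[OF fin D])
  also have "\<dots> = (\<Sum>A\<in>Pow ?V. \<Sum>v\<in>{v\<in>?V1. v \<in> A}. ?w (A, Some v) * SW (?V1 - A) (?V2 - A) ?w)"
    by (rule sum.swap_restrict) (use fin in auto)
  also have "\<dots> = (\<Sum>A\<in>Pow ?V. (\<lambda>a b c d. bb k a b * (fact c * fact d * ?E c d))
        (card (A \<inter> ?V1)) (card (A \<inter> ?V2)) (card (?V1 - A)) (card (?V2 - A)))"
  proof (rule sum.cong[OF refl])
    fix A assume A: "A \<in> Pow ?V"
    have e1: "{v\<in>?V1. v \<in> A} = A \<inter> ?V1" by blast
    have SWe: "SW (?V1 - A) (?V2 - A) ?w = fact (card (?V1 - A)) * fact (card (?V2 - A)) * ?E (card (?V1 - A)) (card (?V2 - A))"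
      by (rule exp_lemma[OF fin D hyp_all[OF fin D k]]) auto
    have "(\<Sum>v\<in>{v\<in>?V1. v \<in> A}. ?w (A, Some v) * SW (?V1 - A) (?V2 - A) ?w)
        = (\<Sum>v\<in>A \<inter> ?V1. ?w (A, Some v)) * SW (?V1 - A) (?V2 - A) ?w"
      unfolding e1 by (simp add: sum_distrib_right)
    also have "\<dots> = bb k (card (A \<inter> ?V1)) (card (A \<inter> ?V2)) * SW (?V1 - A) (?V2 - A) ?w"
      using ptset_omg(1)[OF fin D k] A by simp
    finally show "(\<Sum>v\<in>{v\<in>?V1. v \<in> A}. ?w (A, Some v) * SW (?V1 - A) (?V2 - A) ?w) =
      (\<lambda>a b c d. bb k a b * (fact c * fact d * ?E c d)) (card (A \<inter> ?V1)) (card (A \<inter> ?V2)) (card (?V1 - A)) (card (?V2 - A))"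
      unfolding SWe by simp
  qed
  also have "\<dots> = (\<Sum>i\<le>p. \<Sum>j\<le>q. of_nat (p choose i) * of_nat (q choose j) * (bb k i j * (fact (p - i) * fact (q - j) * ?E (p - i) (q - j))))"
    using pow_sum2[OF fin D] by (simp add: V12_card)
  also have "\<dots> = fact p * fact q * bmul (egf (bb k)) ?E p q"
    unfolding fact_bmul fact_egf
    by (intro sum.cong refl) (auto simp: bb00 mult.assoc)
  finally show ?thesis .
qed


lemma xx_q0: "k \<ge> 1 \<Longrightarrow> xx k i 0 = 0"
  unfolding xx_def cnt_cross_NC V2c_def using NC_None_empty by simp

lemma C2:
  assumes k: "k \<ge> 1"
  shows "of_nat (cnt_cross p q (Suc k)) = fact p * fact q * bmul (bexp (egf (bb k))) (bsub (bexp (egf (xx k))) bone) p q"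
proof -
  let ?V1 = "V1c p" and ?V2 = "V2c p q"
  let ?V = "?V1 \<union> ?V2"
  let ?w = "omg ?V1 ?V2 k"
  let ?wN = "\<lambda>y. if snd y = None then ?w y else 0"
  let ?wS = "\<lambda>y. if snd y = None then 0 else ?w y"
  let ?EX = "bexp (egf (xx k))" and ?EB = "bexp (egf (bb k))"
  note fin = V12_fin(1)[of p] V12_fin(2)[of p q] and D = V12_disj[of p q]
  have "of_nat (cnt_cross p q (Suc k)) = (\<Sum>R\<in>{R\<in>SPi ?V1 ?V2. \<exists>c. (c, None) \<in> R}. \<Prod>y\<in>R. ?w y)"
  proof (cases "q > 0")
    case True
    show ?thesis unfolding cnt_cross_NC using NC_Suc_sum[OF fin k m_cross_in[OF True]] by simp
  next
    case False
    then have q0: "q = 0" by simp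
    then have V20: "?V2 = {}" unfolding V2c_def by simp
    have "{R\<in>SPi ?V1 ?V2. \<exists>c. (c, None) \<in> R} = {}"
    proof -
      have False if "R \<in> SPi ?V1 ?V2" "(c, None) \<in> R" for R c
      proof -
        have s: "semi_pointed ?V1 ?V2 R" using that(1) by (simp add: SPi_iff)
        have "c \<subseteq> ?V1" using spD(2)[OF s that(2)] V20 by simp
        then show False using spD(4)[OF s that(2)] by simp
      qed
      then show ?thesis by blast
    qed
    moreover have "cnt_cross p q (Suc k) = 0" unfolding cnt_cross_NC V20 using NC_None_empty[of "Suc k" "V1c p"] by simp
    ultimately show ?thesis by (simp only: sum.empty of_nat_0)
  qed
  also have "\<dots> = (\<Sum>A\<in>{A\<in>Pow ?V. A \<noteq> {}}. SW (A \<inter> ?V1) (A \<inter> ?V2) ?wN * SW (?V1 - A) (?V2 - A) ?wS)"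
    by (rule SW_unpt[OF fin D])
  also have "\<dots> = (\<Sum>A\<in>Pow ?V. (\<lambda>a b c d. (if a = 0 \<and> b = 0 then 0 else fact a * fact b * ?EX a b) * (fact c * fact d * ?EB c d))
        (card (A \<inter> ?V1)) (card (A \<inter> ?V2)) (card (?V1 - A)) (card (?V2 - A)))"
  proof (rule sum.mono_neutral_cong_left)
    show "finite (Pow ?V)" using fin by simp
    show "{A\<in>Pow ?V. A \<noteq> {}} \<subseteq> Pow ?V" by blast
    show "\<forall>A\<in>Pow ?V - {A\<in>Pow ?V. A \<noteq> {}}. (\<lambda>a b c d. (if a = 0 \<and> b = 0 then 0 else fact a * fact b * ?EX a b) * (fact c * fact d * ?EB c d))
        (card (A \<inter> ?V1)) (card (A \<inter> ?V2)) (card (?V1 - A)) (card (?V2 - A)) = 0" by auto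
    fix A assume "A \<in> {A\<in>Pow ?V. A \<noteq> {}}"
    then have A: "A \<subseteq> ?V" "A \<noteq> {}" by auto
    have sN: "SW (A \<inter> ?V1) (A \<inter> ?V2) ?wN = fact (card (A \<inter> ?V1)) * fact (card (A \<inter> ?V2)) * ?EX (card (A \<inter> ?V1)) (card (A \<inter> ?V2))"
      by (rule exp_lemma[OF fin D hyp_N[OF fin D k]]) auto
    have sS: "SW (?V1 - A) (?V2 - A) ?wS = fact (card (?V1 - A)) * fact (card (?V2 - A)) * ?EB (card (?V1 - A)) (card (?V2 - A))"
      by (rule exp_lemma[OF fin D hyp_S[OF fin D k]]) auto
    have nz: "\<not> (card (A \<inter> ?V1) = 0 \<and> card (A \<inter> ?V2) = 0)"
    proof
      assume "card (A \<inter> ?V1) = 0 \<and> card (A \<inter> ?V2) = 0"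
      then have "A \<inter> ?V1 = {}" "A \<inter> ?V2 = {}" using fin by auto
      then show False using A by blast
    qed
    show "SW (A \<inter> ?V1) (A \<inter> ?V2) ?wN * SW (?V1 - A) (?V2 - A) ?wS =
      (\<lambda>a b c d. (if a = 0 \<and> b = 0 then 0 else fact a * fact b * ?EX a b) * (fact c * fact d * ?EB c d))
        (card (A \<inter> ?V1)) (card (A \<inter> ?V2)) (card (?V1 - A)) (card (?V2 - A))"
      using nz by (cases "card (A \<inter> ?V1) = 0") (simp_all add: sN sS)
  qed
  also have "\<dots> = (\<Sum>i\<le>p. \<Sum>j\<le>q. of_nat (p choose i) * of_nat (q choose j) *
      ((if i = 0 \<and> j = 0 then 0 else fact i * fact j * ?EX i j) * (fact (p - i) * fact (q - j) * ?EB (p - i) (q - j))))"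
    using pow_sum2[OF fin D] by (simp add: V12_card)
  also have "\<dots> = fact p * fact q * bmul (bsub ?EX bone) ?EB p q"
    unfolding fact_bmul
  proof (intro sum.cong refl)
    fix i j
    have "fact i * fact j * bsub ?EX bone i j = (if i = 0 \<and> j = 0 then 0 else fact i * fact j * ?EX i j)"
      unfolding bsub_def bone_def using bexp00 by auto
    then show "of_nat (p choose i) * of_nat (q choose j) *
      ((if i = 0 \<and> j = 0 then 0 else fact i * fact j * ?EX i j) * (fact (p - i) * fact (q - j) * ?EB (p - i) (q - j))) =
      of_nat (p choose i) * of_nat (q choose j) * (fact i * fact j * bsub ?EX bone i j) * (fact (p - i) * fact (q - j) * ?EB (p - i) (q - j))"
      by (simp add: mult.assoc)
  qed
  finally show ?thesis by (simp add: bmul_comm)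
qed

lemma sp_top_ge:
  assumes sP: "semi_pointed V1 V2 P" and D: "V1 \<inter> V2 = {}"
  shows "sp_le P (sp_top V1 V2)"
proof (rule sp_leI)
  fix b w assume bw: "(b,w) \<in> P"
  let ?S = "(\<lambda>v. ({v}, if v \<in> V1 then Some v else None)) ` b"
  have sub: "b \<subseteq> V1 \<union> V2" using spD(2)[OF sP bw] .
  have "?S \<subseteq> sp_top V1 V2" using sub unfolding sp_top_def by auto
  moreover have "b = \<Union>(fst ` ?S)" by auto
  moreover have "case w of Some e \<Rightarrow> (\<exists>q. (q, Some e) \<in> ?S) | None \<Rightarrow> (\<exists>q. (q, None) \<in> ?S)"
  proof (cases w)
    case None
    then have "\<not> b \<subseteq> V1" using spD(4)[OF sP bw] by blast
    then obtain v where "v \<in> b" "v \<notin> V1" by blast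
    then have "({v}, None) \<in> ?S" by force
    then show ?thesis using None by auto
  next
    case (Some e)
    then have "e \<in> b" "e \<in> V1" using spD(3)[OF sP bw] by auto
    then have "({e}, Some e) \<in> ?S" by force
    then show ?thesis using Some by auto
  qed
  ultimately show "\<exists>S\<subseteq>sp_top V1 V2. b = \<Union>(fst ` S) \<and>
        (case w of Some e \<Rightarrow> (\<exists>q. (q, Some e) \<in> S) | None \<Rightarrow> (\<exists>q. (q, None) \<in> S))" by blast
qed

lemma interval_card:
  assumes m: "m \<in> SPi V1 V2" and D: "V1 \<inter> V2 = {}"
  shows "card (multichains_in (sp_interval V1 V2 m (sp_top V1 V2)) k) = card (CH (SPi V1 V2) m (Suc k))"
proof -
  let ?S = "SPi V1 V2" and ?I = "sp_interval V1 V2 m (sp_top V1 V2)"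
  have I: "?I = {x\<in>?S. sp_le m x}"
    unfolding sp_interval_def using sp_top_ge[OF _ D] by (auto simp: SPi_iff)
  have eq: "CH ?S m (Suc k) = (\<lambda>as. m # as) ` multichains_in ?I k"
  proof (intro equalityI subsetI)
    fix bs assume bs: "bs \<in> CH ?S m (Suc k)"
    have len: "length bs = Suc k" and st: "set bs \<subseteq> ?S" and ch: "\<forall>i. Suc i < Suc k \<longrightarrow> sp_le (bs ! i) (bs ! Suc i)"
      and hd: "hd bs = m" using bs unfolding CH_def mc_iff by auto
    obtain as where as: "bs = m # as" using len hd by (cases bs) auto
    have mc: "bs \<in> multichains_in ?S (Suc k)" using bs unfolding CH_def by simp
    have "as \<in> multichains_in ?I k"
      unfolding mc_iff
    proof (intro conjI allI impI)
      show "length as = k" using len as by simp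
      show "set as \<subseteq> ?I"
      proof
        fix x assume "x \<in> set as"
        then obtain i where i: "i < k" "x = as ! i" using len as by (auto simp: in_set_conv_nth)
        have xS: "x \<in> ?S" using st as \<open>x \<in> set as\<close> by auto
        have "le2 (bs ! 0) (bs ! Suc i)" by (rule chain_le[OF _ mc]) (use i in \<open>auto simp: SPi_iff\<close>)
        then have "le2 m x" using as i by simp
        then have "sp_le m x" using sp_le_iff[of V1 V2 m x] m xS by (simp add: SPi_iff)
        then show "x \<in> ?I" unfolding I using xS by simp
      qed
      fix i assume "Suc i < k"
      then show "sp_le (as ! i) (as ! Suc i)" using ch as by auto
    qed
    then show "bs \<in> (\<lambda>as. m # as) ` multichains_in ?I k" using as by blast
  next
    fix bs assume "bs \<in> (\<lambda>as. m # as) ` multichains_in ?I k"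
    then obtain as where as: "bs = m # as" "as \<in> multichains_in ?I k" by blast
    have len: "length as = k" and st: "set as \<subseteq> ?I" and ch: "\<forall>i. Suc i < k \<longrightarrow> sp_le (as ! i) (as ! Suc i)"
      using as(2) unfolding mc_iff by auto
    have "bs \<in> multichains_in ?S (Suc k)"
      unfolding mc_iff
    proof (intro conjI allI impI)
      show "length bs = Suc k" using as len by simp
      show "set bs \<subseteq> ?S" using as st m unfolding I by auto
      fix i assume i: "Suc i < Suc k"
      show "sp_le (bs ! i) (bs ! Suc i)"
      proof (cases i)
        case 0
        have "as ! 0 \<in> set as" using len i 0 by simp
        then have "sp_le m (as ! 0)" using st unfolding I by auto
        then show ?thesis using as 0 by simp
      next
        case (Suc j) then show ?thesis using ch as i by simp
      qed
    qed
    then show "bs \<in> CH ?S m (Suc k)" unfolding CH_def using as by simp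
  qed
  have "card (CH ?S m (Suc k)) = card (multichains_in ?I k)"
    unfolding eq by (rule card_image) (simp add: inj_on_def)
  then show ?thesis by simp
qed

lemma C4: "k \<ge> 1 \<Longrightarrow> cnt_ell p q k = cnt_bullet p q (Suc k) + cnt_cross p q (Suc k)"
proof -
  assume k: "k \<ge> 1"
  let ?V1 = "V1c p" and ?V2 = "V2c p q"
  let ?S = "SPi ?V1 ?V2"
  let ?f = "\<lambda>m. card (multichains_in (sp_interval ?V1 ?V2 m (sp_top ?V1 ?V2)) k)"
  have pts: "?f (m_pt ?V1 ?V2 v) = NC ?V1 ?V2 (Some v) (Suc k)" if "v \<in> ?V1" for v
    using interval_card[OF m_pt_in[OF that] V12_disj] unfolding NC_def m_pt_def by simp
  have disj: "m_pt ?V1 ?V2 ` ?V1 \<inter> (if ?V2 \<noteq> {} then {m_cross ?V1 ?V2} else {}) = {}"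
    unfolding m_pt_def m_cross_def by auto
  have inj: "inj_on (m_pt ?V1 ?V2) ?V1" unfolding m_pt_def by (auto simp: inj_on_def)
  have "cnt_ell p q k = (\<Sum>m\<in>m_pt ?V1 ?V2 ` ?V1. ?f m) + (\<Sum>m\<in>(if ?V2 \<noteq> {} then {m_cross ?V1 ?V2} else {}). ?f m)"
    unfolding cnt_ell_def sp_minimals_def by (rule sum.union_disjoint) (use V12_fin disj in auto)
  also have "(\<Sum>m\<in>m_pt ?V1 ?V2 ` ?V1. ?f m) = (\<Sum>v\<in>?V1. NC ?V1 ?V2 (Some v) (Suc k))"
    by (simp add: sum.reindex[OF inj] pts)
  also have "\<dots> = cnt_bullet p q (Suc k)" by (simp add: cnt_bullet_NC)
  also have "(\<Sum>m\<in>(if ?V2 \<noteq> {} then {m_cross ?V1 ?V2} else {}). ?f m) = cnt_cross p q (Suc k)"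
  proof (cases "q > 0")
    case True
    then have "?V2 \<noteq> {}" unfolding V2c_def by auto
    moreover have "?f (m_cross ?V1 ?V2) = cnt_cross p q (Suc k)"
      using interval_card[OF m_cross_in[OF True] V12_disj] unfolding cnt_cross_NC NC_def m_cross_def by simp
    ultimately show ?thesis by simp
  next
    case False
    then have "?V2 = {}" unfolding V2c_def by auto
    then show ?thesis unfolding cnt_cross_NC using NC_None_empty[of "Suc k" "V1c p"] by simp
  qed
  finally show ?thesis .
qed


definition ff :: "nat \<Rightarrow> rat poly" where "ff d = (\<Prod>i<d. [:- of_nat i, 1:])"

lemma poly_ff: "poly (ff d) x = (\<Prod>i<d. x - of_nat i)"
  unfolding ff_def poly_prod by simp

lemma ff_diff: "poly (ff (Suc d)) (x + 1) - poly (ff (Suc d)) x = of_nat (Suc d) * poly (ff d) x"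
proof -
  have a: "poly (ff (Suc d)) (x + 1) = (x + 1) * poly (ff d) x"
    unfolding poly_ff prod.lessThan_Suc_shift by simp
  have b: "poly (ff (Suc d)) x = poly (ff d) x * (x - of_nat d)"
    unfolding poly_ff by simp
  show ?thesis unfolding a b by (simp add: algebra_simps)
qed

lemma ff_degree: "degree (ff d) = d" and ff_lead: "lead_coeff (ff d) = 1"
proof -
  have nz: "\<forall>i\<in>{..<d}. [:- of_nat i, 1:] \<noteq> (0 :: rat poly)" by simp
  show "degree (ff d) = d" unfolding ff_def degree_prod_eq_sum_degree[OF nz] by simp
  show "lead_coeff (ff d) = 1" unfolding ff_def lead_coeff_prod by simp
qed

lemma antidiff: "\<exists>T :: rat poly. \<forall>x. poly T (x + 1) = poly T x + poly R x"
proof (induction "degree R" arbitrary: R rule: less_induct)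
  case less
  show ?case
  proof (cases "R = 0")
    case True then show ?thesis by (intro exI[of _ 0]) simp
  next
    case False
    let ?d = "degree R" and ?c = "lead_coeff R"
    define R' where "R' = R - smult ?c (ff ?d)"
    have cR': "coeff R' n = 0" if "n \<ge> ?d" for n
    proof (cases "n = ?d")
      case True
      then show ?thesis unfolding R'_def using ff_lead[of ?d] ff_degree[of ?d] by simp
    next
      case False
      then have "n > ?d" using that by simp
      then have "coeff R n = 0" "coeff (ff ?d) n = 0" using ff_degree[of ?d] by (auto intro: coeff_eq_0)
      then show ?thesis unfolding R'_def by simp
    qed
    obtain T' where T': "\<forall>x. poly T' (x + 1) = poly T' x + poly R' x"
    proof (cases "?d = 0")
      case True
      then have "R' = 0" using cR' by (intro poly_eqI) simp
      then show ?thesis using that[of 0] by simp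
    next
      case False
      have "degree R' \<le> ?d - 1" by (rule degree_le) (use cR' False in auto)
      then have "degree R' < ?d" using False by simp
      then show ?thesis using less.hyps that by blast
    qed
    define T where "T = T' + smult (?c / of_nat (Suc ?d)) (ff (Suc ?d))"
    have "poly T (x + 1) = poly T x + poly R x" for x
    proof -
      have "poly T (x + 1) - poly T x = poly R' x + (?c / of_nat (Suc ?d)) * (poly (ff (Suc ?d)) (x + 1) - poly (ff (Suc ?d)) x)"
        unfolding T_def using T'[rule_format, of x] by (simp add: algebra_simps)
      also have "\<dots> = poly R' x + ?c * poly (ff ?d) x"
        unfolding ff_diff by (simp del: of_nat_Suc)
      also have "\<dots> = poly R x" unfolding R'_def by simp
      finally show ?thesis by simp
    qed
    then show ?thesis by blast
  qed
qed

lemma poly_rec: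
  fixes f :: "nat \<Rightarrow> rat"
  assumes rec: "\<And>k. k \<ge> 1 \<Longrightarrow> f (Suc k) = f k + poly R (of_nat k)"
  shows "\<exists>P. \<forall>k\<ge>1. f k = poly P (of_nat k)"
proof -
  obtain T where T: "\<forall>x. poly T (x + 1) = poly T x + poly R x" using antidiff by blast
  define c where "c = f 1 - poly T 1"
  have "f k = poly (T + [:c:]) (of_nat k)" if "k \<ge> 1" for k
    using that
  proof (induction k rule: dec_induct)
    case base then show ?case unfolding c_def by simp
  next
    case (step k)
    have "f (Suc k) = f k + poly R (of_nat k)" using rec step.hyps(1) by simp
    also have "\<dots> = poly (T + [:c:]) (of_nat (Suc k))" using step.IH T[rule_format, of "of_nat k"] by (simp add: algebra_simps)
    finally show ?case .
  qed
  then show ?thesis by blast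
qed


lemma CH_poly:
  assumes finS: "finite S" and sp: "\<And>P. P \<in> S \<Longrightarrow> semi_pointed V1 V2 P"
  shows "\<exists>P :: rat poly. \<forall>k\<ge>1. poly P (of_nat k) = of_nat (card (CH S x k))"
proof (induction "card {y\<in>S. sp_le x y}" arbitrary: x rule: less_induct)
  case less
  show ?case
  proof (cases "x \<in> S")
    case False
    then show ?thesis using CH_notin[OF False] by (intro exI[of _ 0]) simp
  next
    case True
    let ?U = "\<lambda>x. {y\<in>S. sp_le x y}"
    have le_iff: "sp_le a b \<longleftrightarrow> le2 a b" if "a \<in> S" "b \<in> S" for a b
      using sp_le_iff[OF sp[OF that(1)] sp[OF that(2)]] .
    have xx: "x \<in> ?U x" using True le_iff[OF True True] le2_refl by simp
    have smaller: "card (?U y) < card (?U x)" if y: "y \<in> ?U x - {x}" for y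
    proof (rule psubset_card_mono)
      show "finite (?U x)" using finS by simp
      have yS: "y \<in> S" and "sp_le x y" using y by auto
      then have xy: "le2 x y" using le_iff[OF True yS] by simp
      have "?U y \<subseteq> ?U x"
      proof
        fix z assume z: "z \<in> ?U y"
        then have zS: "z \<in> S" and "sp_le y z" by auto
        then have "le2 y z" using le_iff[OF yS zS] by simp
        then have "le2 x z" using le2_trans[OF xy] by simp
        then show "z \<in> ?U x" using le_iff[OF True zS] zS by simp
      qed
      moreover have "x \<notin> ?U y"
      proof
        assume "x \<in> ?U y"
        then have "le2 y x" using le_iff[OF yS True] by simp
        then have "x = y" using le2_antisym[OF sp[OF True] sp[OF yS] xy] by simp
        then show False using y by simp
      qed
      ultimately show "?U y \<subset> ?U x" using xx by blast
    qed
    have "\<forall>y\<in>?U x - {x}. \<exists>P :: rat poly. \<forall>k\<ge>1. poly P (of_nat k) = of_nat (card (CH S y k))"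
    proof
      fix y assume y: "y \<in> ?U x - {x}"
      show "\<exists>P :: rat poly. \<forall>k\<ge>1. poly P (of_nat k) = of_nat (card (CH S y k))"
        by (rule less.hyps[OF smaller[OF y]])
    qed
    from bchoice[OF this] obtain PP :: "_ \<Rightarrow> rat poly" where PP0: "\<forall>y\<in>?U x - {x}. \<forall>k\<ge>1. poly (PP y) (of_nat k) = of_nat (card (CH S y k))"
      by (elim exE)
    have PP: "of_nat (card (CH S y k)) = poly (PP y) (of_nat k)" if "y \<in> ?U x - {x}" "k \<ge> 1" for y k
      using PP0 that by simp
    have rec: "(of_nat (card (CH S x (Suc k))) :: rat) = of_nat (card (CH S x k)) + poly (\<Sum>y\<in>?U x - {x}. PP y) (of_nat k)"
      if k: "k \<ge> 1" for k
    proof -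
      have "card (CH S x (Suc k)) = (\<Sum>y\<in>?U x. card (CH S y k))" by (rule card_CH_Suc[OF True k finS])
      also have "\<dots> = card (CH S x k) + (\<Sum>y\<in>?U x - {x}. card (CH S y k))"
        using sum.remove[OF _ xx] finS by simp
      finally have "(of_nat (card (CH S x (Suc k))) :: rat) = of_nat (card (CH S x k)) + (\<Sum>y\<in>?U x - {x}. of_nat (card (CH S y k)))"
        by simp
      also have "(\<Sum>y\<in>?U x - {x}. (of_nat (card (CH S y k)) :: rat)) = (\<Sum>y\<in>?U x - {x}. poly (PP y) (of_nat k))"
        using PP k by simp
      also have "\<dots> = poly (\<Sum>y\<in>?U x - {x}. PP y) (of_nat k)" by (simp add: poly_sum)
      finally show ?thesis .
    qed
    obtain P where P: "\<forall>k\<ge>1. (of_nat (card (CH S x k)) :: rat) = poly P (of_nat k)"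
      using poly_rec[of "\<lambda>k. of_nat (card (CH S x k))"] rec by blast
    show ?thesis
    proof (intro exI[of _ P] allI impI)
      fix k :: nat assume "k \<ge> 1"
      then show "poly P (of_nat k) = of_nat (card (CH S x k))" using P by simp
    qed
  qed
qed

definition natpoly :: "(nat \<Rightarrow> nat) \<Rightarrow> bool" where
  "natpoly g \<longleftrightarrow> (\<exists>P :: rat poly. \<forall>n\<ge>1. poly P (of_nat n) = of_nat (g n))"

lemma natpoly_CH: "natpoly (\<lambda>k. card (CH (SPi (V1c p) (V2c p q)) x k))"
proof -
  have "finite (SPi (V1c p) (V2c p q))" using SPi_finite V12_fin by blast
  from CH_poly[OF this, of "V1c p" "V2c p q" x] show ?thesis unfolding natpoly_def by (simp add: SPi_iff)
qed

lemma natpoly_sum: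
  assumes "finite A" "\<And>a. a \<in> A \<Longrightarrow> natpoly (g a)"
  shows "natpoly (\<lambda>k. \<Sum>a\<in>A. g a k)"
proof -
  have "\<forall>a\<in>A. \<exists>P :: rat poly. \<forall>n\<ge>1. poly P (of_nat n) = of_nat (g a n)"
    using assms(2) unfolding natpoly_def by blast
  from bchoice[OF this] obtain P :: "_ \<Rightarrow> rat poly" where P0: "\<forall>a\<in>A. \<forall>n\<ge>1. poly (P a) (of_nat n) = of_nat (g a n)"
    by (elim exE)
  show ?thesis unfolding natpoly_def
    by (rule exI[of _ "\<Sum>a\<in>A. P a"]) (simp add: poly_sum P0)
qed

lemma natpoly_cnt: "natpoly (cnt p q)"
proof -
  have "natpoly (\<lambda>k. \<Sum>x\<in>SPi (V1c p) (V2c p q). card (CH (SPi (V1c p) (V2c p q)) x k))"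
    by (rule natpoly_sum) (use SPi_finite[OF V12_fin(1) V12_fin(2)] natpoly_CH in auto)
  then obtain P :: "rat poly" where P: "\<forall>n\<ge>1. poly P (of_nat n) = of_nat (\<Sum>x\<in>SPi (V1c p) (V2c p q). card (CH (SPi (V1c p) (V2c p q)) x n))"
    unfolding natpoly_def by blast
  have c: "cnt p q n = (\<Sum>x\<in>SPi (V1c p) (V2c p q). card (CH (SPi (V1c p) (V2c p q)) x n))" if "n \<ge> 1" for n
    unfolding cnt_def using card_mc[OF that SPi_finite[OF V12_fin(1) V12_fin(2)]] by blast
  show ?thesis unfolding natpoly_def
  proof (intro exI[of _ P] allI impI)
    fix n :: nat assume n: "n \<ge> 1"
    show "poly P (of_nat n) = of_nat (cnt p q n)" using P c[OF n] n by simp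
  qed
qed

lemma natpoly_bullet: "natpoly (cnt_bullet p q)"
proof -
  have "natpoly (\<lambda>k. \<Sum>v\<in>V1c p. NC (V1c p) (V2c p q) (Some v) k)"
    unfolding NC_def by (rule natpoly_sum) (use V12_fin natpoly_CH in auto)
  then show ?thesis unfolding cnt_bullet_NC[abs_def] by simp
qed

lemma natpoly_cross: "natpoly (cnt_cross p q)"
  unfolding cnt_cross_NC[abs_def] NC_def by (rule natpoly_CH)

lemma natpoly_ell: "natpoly (cnt_ell p q)"
proof -
  obtain P1 :: "rat poly" where P1: "\<forall>n\<ge>1. poly P1 (of_nat n) = of_nat (cnt_bullet p q n)" using natpoly_bullet unfolding natpoly_def by blast
  obtain P2 :: "rat poly" where P2: "\<forall>n\<ge>1. poly P2 (of_nat n) = of_nat (cnt_cross p q n)" using natpoly_cross unfolding natpoly_def by blast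
  have "poly (pcompose (P1 + P2) [:1, 1:]) (of_nat n) = of_nat (cnt_ell p q n)" if "n \<ge> 1" for n
  proof -
    have "poly (pcompose (P1 + P2) [:1, 1:]) (of_nat n) = poly P1 (of_nat (Suc n)) + poly P2 (of_nat (Suc n))"
      by (simp add: poly_pcompose algebra_simps)
    also have "\<dots> = of_nat (cnt_bullet p q (Suc n) + cnt_cross p q (Suc n))"
      using P1[rule_format, of "Suc n"] P2[rule_format, of "Suc n"] by simp
    also have "\<dots> = of_nat (cnt_ell p q n)" using C4[OF that] by simp
    finally show ?thesis .
  qed
  then show ?thesis unfolding natpoly_def by blast
qed

lemma poly_ext_eq:
  assumes P: "\<forall>n\<ge>1. poly P (of_nat n) = of_nat (g n)"
  shows "poly_ext g k = poly P (of_int k)"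
  unfolding poly_ext_def
proof (rule the_equality)
  show "\<exists>P'. (\<forall>n\<ge>1. poly P' (of_nat n) = of_nat (g n)) \<and> poly P (of_int k) = poly P' (of_int k)"
    using P by blast
  fix v :: rat assume "\<exists>P' :: rat poly. (\<forall>n\<ge>1. poly P' (of_nat n) = of_nat (g n)) \<and> v = poly P' (of_int k)"
  then obtain P' :: "rat poly" where P': "\<forall>n\<ge>1. poly P' (of_nat n) = of_nat (g n)" "v = poly P' (of_int k)" by blast
  have "P' - P = 0"
  proof (rule ccontr)
    assume nz: "P' - P \<noteq> 0"
    have "range (\<lambda>n. of_nat (Suc n) :: rat) \<subseteq> {x. poly (P' - P) x = 0}"
    proof
      fix x assume "x \<in> range (\<lambda>n. of_nat (Suc n) :: rat)"
      then obtain n where n: "x = of_nat (Suc n)" by blast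
      have "poly P' (of_nat (Suc n)) = poly P (of_nat (Suc n))"
        using P[rule_format, of "Suc n"] P'(1)[rule_format, of "Suc n"] by simp
      then show "x \<in> {x. poly (P' - P) x = 0}" using n by simp
    qed
    moreover have "infinite (range (\<lambda>n. of_nat (Suc n) :: rat))"
      by (rule range_inj_infinite) (simp add: inj_on_def)
    ultimately show False using poly_roots_finite[OF nz] finite_subset by blast
  qed
  then show "v = poly P (of_int k)" using P' by simp
qed

lemma natpoly_ext:
  assumes "natpoly g"
  obtains P :: "rat poly" where "\<And>k. poly_ext g k = poly P (of_int k)" and "\<And>n. n \<ge> 1 \<Longrightarrow> poly P (of_nat n) = of_nat (g n)"
  using assms poly_ext_eq unfolding natpoly_def by blast

lemma poly_ext_nat: "natpoly g \<Longrightarrow> k \<ge> 1 \<Longrightarrow> poly_ext g k = of_nat (g (nat k))"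
proof -
  assume a: "natpoly g" "k \<ge> 1"
  obtain P :: "rat poly" where P: "\<And>k. poly_ext g k = poly P (of_int k)" "\<And>n. n \<ge> 1 \<Longrightarrow> poly P (of_nat n) = of_nat (g n)"
    using natpoly_ext[OF a(1)] by blast
  have e: "of_int k = (of_nat (nat k) :: rat)" using a(2) by simp
  have "nat k \<ge> 1" using a(2) by simp
  then have g: "poly P (of_nat (nat k)) = of_nat (g (nat k))" by (rule P(2))
  have "poly_ext g k = poly P (of_int k)" by (rule P(1))
  also have "\<dots> = poly P (of_nat (nat k))" by (simp only: e)
  also have "\<dots> = of_nat (g (nat k))" by (rule g)
  finally show ?thesis .
qed


definition ispoly :: "(int \<Rightarrow> rat) \<Rightarrow> bool" where
  "ispoly f \<longleftrightarrow> (\<exists>P. \<forall>k. f k = poly P (of_int k))"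

lemma ispoly_const: "ispoly (\<lambda>k. c)"
  unfolding ispoly_def by (rule exI[of _ "[:c:]"]) simp

lemma ispoly_add: "ispoly f \<Longrightarrow> ispoly g \<Longrightarrow> ispoly (\<lambda>k. f k + g k)"
  unfolding ispoly_def by (metis poly_add)

lemma ispoly_diff: "ispoly f \<Longrightarrow> ispoly g \<Longrightarrow> ispoly (\<lambda>k. f k - g k)"
  unfolding ispoly_def by (metis poly_diff)

lemma ispoly_mult: "ispoly f \<Longrightarrow> ispoly g \<Longrightarrow> ispoly (\<lambda>k. f k * g k)"
  unfolding ispoly_def by (metis poly_mult)

lemma ispoly_sum: "finite A \<Longrightarrow> (\<And>a. a \<in> A \<Longrightarrow> ispoly (f a)) \<Longrightarrow> ispoly (\<lambda>k. \<Sum>a\<in>A. f a k)"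
proof (induction A rule: finite_induct)
  case empty then show ?case using ispoly_const[of 0] by simp
next
  case (insert a A)
  have "ispoly (\<lambda>k. f a k + (\<Sum>a\<in>A. f a k))" using insert by (intro ispoly_add) auto
  then show ?case using insert by simp
qed

lemma ispoly_shift: "ispoly f \<Longrightarrow> ispoly (\<lambda>k. f (k - 1))"
proof -
  assume "ispoly f"
  then obtain P where P: "\<And>k. f k = poly P (of_int k)" unfolding ispoly_def by blast
  have "f (k - 1) = poly (pcompose P [:-1, 1:]) (of_int k)" for k
    using P[of "k - 1"] by (simp add: poly_pcompose)
  then show ?thesis unfolding ispoly_def by blast
qed

lemma ispoly_zero:
  assumes "ispoly f" and z: "\<And>k. k \<ge> 2 \<Longrightarrow> f k = 0"
  shows "f k = 0"
proof -
  obtain P where P: "\<And>k. f k = poly P (of_int k)" using assms(1) unfolding ispoly_def by blast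
  have "P = 0"
  proof (rule ccontr)
    assume nz: "P \<noteq> 0"
    have "range (\<lambda>n. of_int (int n + 2) :: rat) \<subseteq> {x. poly P x = 0}"
    proof
      fix x assume "x \<in> range (\<lambda>n. of_int (int n + 2) :: rat)"
      then obtain n where n: "x = of_int (int n + 2)" by blast
      have "f (int n + 2) = 0" by (rule z) simp
      then show "x \<in> {x. poly P x = 0}" using n P[of "int n + 2"] by simp
    qed
    moreover have "infinite (range (\<lambda>n. of_int (int n + 2) :: rat))"
      by (rule range_inj_infinite) (simp add: inj_on_def)
    ultimately show False using poly_roots_finite[OF nz] finite_subset by blast
  qed
  then show ?thesis using P by simp
qed

definition isS :: "(int \<Rightarrow> bser) \<Rightarrow> bool" where "isS F \<longleftrightarrow> (\<forall>p q. ispoly (\<lambda>k. F k p q))"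

lemma isS_bmul: "isS F \<Longrightarrow> isS G \<Longrightarrow> isS (\<lambda>k. bmul (F k) (G k))"
  unfolding isS_def bmul_def by (auto intro!: ispoly_sum ispoly_mult)

lemma isS_badd: "isS F \<Longrightarrow> isS G \<Longrightarrow> isS (\<lambda>k. badd (F k) (G k))"
  unfolding isS_def badd_def by (auto intro!: ispoly_add)

lemma isS_bsub: "isS F \<Longrightarrow> isS G \<Longrightarrow> isS (\<lambda>k. bsub (F k) (G k))"
  unfolding isS_def bsub_def by (auto intro!: ispoly_diff)

lemma isS_bone: "isS (\<lambda>k. bone)"
  unfolding isS_def by (simp add: ispoly_const)

lemma isS_bpow: "isS F \<Longrightarrow> isS (\<lambda>k. bpow (F k) n)"
proof (induction n)
  case 0 then show ?case using isS_bone by simp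
next
  case (Suc n) then show ?case using isS_bmul[OF Suc.prems Suc.IH[OF Suc.prems]] by simp
qed

lemma isS_bexp: "isS F \<Longrightarrow> isS (\<lambda>k. bexp (F k))"
proof -
  assume F: "isS F"
  show ?thesis unfolding isS_def bexp_def
  proof (intro allI)
    fix p q
    show "ispoly (\<lambda>k. \<Sum>n\<le>p + q. bpow (F k) n p q / fact n)"
    proof (rule ispoly_sum)
      fix n
      have "ispoly (\<lambda>k. bpow (F k) n p q * (1 / fact n))"
        using isS_bpow[OF F, of n] ispoly_const unfolding isS_def by (intro ispoly_mult) auto
      then show "ispoly (\<lambda>k. bpow (F k) n p q / fact n)" by simp
    qed simp
  qed
qed

lemma isS_shift: "isS F \<Longrightarrow> isS (\<lambda>k. F (k - 1))"
  unfolding isS_def using ispoly_shift by blast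

lemma isS_egf:
  assumes "\<And>p q. natpoly (g p q)"
  shows "isS (\<lambda>k. egf (\<lambda>p q. poly_ext (g p q) k))"
  unfolding isS_def
proof (intro allI)
  fix p q
  obtain P :: "rat poly" where P: "\<And>k. poly_ext (g p q) k = poly P (of_int k)"
    using natpoly_ext[OF assms[of p q]] by blast
  show "ispoly (\<lambda>k. egf (\<lambda>p q. poly_ext (g p q) k) p q)"
  proof (cases "p = 0 \<and> q = 0")
    case True then show ?thesis unfolding egf_def using ispoly_const[of 0] by simp
  next
    case False
    have i: "ispoly (\<lambda>k. poly_ext (g p q) k * (1 / (fact p * fact q)))"
      by (rule ispoly_mult) (use P ispoly_const in \<open>auto simp: ispoly_def\<close>)
    have F: "(p = 0 \<and> q = 0) = False" using False by simp
    have e: "\<And>k. egf (\<lambda>p q. poly_ext (g p q) k) p q = poly_ext (g p q) k * (1 / (fact p * fact q))"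
      unfolding egf_def F if_False by simp
    show ?thesis unfolding e by (rule i)
  qed
qed

lemma isS_Cbullet: "isS Cbullet"
  using isS_egf[of "\<lambda>p q. cnt_bullet p q"] natpoly_bullet unfolding Cbullet_def[abs_def] by simp
lemma isS_Ccross: "isS Ccross"
  using isS_egf[of "\<lambda>p q. cnt_cross p q"] natpoly_cross unfolding Ccross_def[abs_def] by simp
lemma isS_Cser: "isS Cser"
  using isS_egf[of "\<lambda>p q. cnt p q"] natpoly_cnt unfolding Cser_def[abs_def] by simp
lemma isS_Cell: "isS Cell"
  using isS_egf[of "\<lambda>p q. cnt_ell p q"] natpoly_ell unfolding Cell_def[abs_def] by simp

lemma egf_cong_nat:
  assumes "\<And>p q. natpoly (g p q)" "k \<ge> 1"
  shows "egf (\<lambda>p q. poly_ext (g p q) k) = egf (\<lambda>p q. of_nat (g p q (nat k)))"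
proof -
  have "(\<lambda>p q. poly_ext (g p q) k) = (\<lambda>p q. of_nat (g p q (nat k)))"
    using poly_ext_nat[OF assms(1) assms(2)] by (intro ext) simp
  then show ?thesis by simp
qed

lemma Cbullet_nat: "k \<ge> 1 \<Longrightarrow> Cbullet k = egf (bb (nat k))"
  unfolding Cbullet_def using egf_cong_nat[of "\<lambda>p q. cnt_bullet p q" k] natpoly_bullet
  by (simp add: bb_def[abs_def])
lemma Ccross_nat: "k \<ge> 1 \<Longrightarrow> Ccross k = egf (xx (nat k))"
  unfolding Ccross_def using egf_cong_nat[of "\<lambda>p q. cnt_cross p q" k] natpoly_cross
  by (simp add: xx_def[abs_def])
lemma Cser_nat: "k \<ge> 1 \<Longrightarrow> Cser k = egf (\<lambda>p q. of_nat (cnt p q (nat k)))"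
  unfolding Cser_def using egf_cong_nat[of "\<lambda>p q. cnt p q" k] natpoly_cnt by simp
lemma Cell_nat: "k \<ge> 1 \<Longrightarrow> Cell k = egf (\<lambda>p q. of_nat (cnt_ell p q (nat k)))"
  unfolding Cell_def using egf_cong_nat[of "\<lambda>p q. cnt_ell p q" k] natpoly_ell by simp

lemma egf_add: "badd (egf a) (egf b) = egf (\<lambda>p q. a p q + b p q)"
  unfolding badd_def egf_def by (intro ext) (simp add: add_divide_distrib)

lemma bmul00: "bmul F G 0 0 = F 0 0 * G 0 0"
  unfolding bmul_def by simp


lemma isS_eq:
  assumes F: "isS F" and G: "isS G" and e: "\<And>k p q. k \<ge> 2 \<Longrightarrow> F k p q = G k p q"
  shows "F k = G k"
proof (intro ext)
  fix p q
  have "ispoly (\<lambda>k. F k p q - G k p q)" using F G unfolding isS_def by (intro ispoly_diff) auto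
  then have "F k p q - G k p q = 0" by (rule ispoly_zero) (use e in simp)
  then show "F k p q = G k p q" by simp
qed

lemma egf_nz: "\<not> (p = 0 \<and> q = 0) \<Longrightarrow> egf a p q = a p q / (fact p * fact q)"
  unfolding egf_def by (rule if_not_P)

lemma fact_ne: "(fact p :: rat) * fact q \<noteq> 0" by simp

lemma I1:
  assumes k: "k \<ge> 2"
  shows "Cbullet k p q = bmul (Cbullet (k - 1)) (bexp (badd (Cbullet (k - 1)) (Ccross (k - 1)))) p q"
proof -
  define K where "K = nat (k - 1)"
  have K1: "K \<ge> 1" and nk: "nat k = Suc K" and nk1: "nat (k - 1) = K" using k unfolding K_def by auto
  have e1: "Cbullet k = egf (bb (Suc K))" using Cbullet_nat[of k] k nk by simp
  have e2: "Cbullet (k - 1) = egf (bb K)" using Cbullet_nat[of "k - 1"] k nk1 by simp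
  have e3: "Ccross (k - 1) = egf (xx K)" using Ccross_nat[of "k - 1"] k nk1 by simp
  have e4: "badd (egf (bb K)) (egf (xx K)) = egf (hh K)" unfolding egf_add hh_def[abs_def] by simp
  show ?thesis
  proof (cases "p = 0 \<and> q = 0")
    case True then show ?thesis unfolding e1 e2 e3 e4 using bmul00 by (simp add: egf_def)
  next
    case False
    have "Cbullet k p q = bb (Suc K) p q / (fact p * fact q)" unfolding e1 by (rule egf_nz[OF False])
    also have "\<dots> = bmul (egf (bb K)) (bexp (egf (hh K))) p q" unfolding bb_def C1[OF K1] using fact_ne by simp
    finally show ?thesis unfolding e2 e3 e4 .
  qed
qed

lemma I2:
  assumes k: "k \<ge> 2"
  shows "Ccross k p q = bmul (bexp (Cbullet (k - 1))) (bsub (bexp (Ccross (k - 1))) bone) p q"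
proof -
  define K where "K = nat (k - 1)"
  have K1: "K \<ge> 1" and nk: "nat k = Suc K" and nk1: "nat (k - 1) = K" using k unfolding K_def by auto
  have e1: "Ccross k = egf (xx (Suc K))" using Ccross_nat[of k] k nk by simp
  have e2: "Cbullet (k - 1) = egf (bb K)" using Cbullet_nat[of "k - 1"] k nk1 by simp
  have e3: "Ccross (k - 1) = egf (xx K)" using Ccross_nat[of "k - 1"] k nk1 by simp
  show ?thesis
  proof (cases "p = 0 \<and> q = 0")
    case True then show ?thesis unfolding e1 e2 e3 using bmul00 bexp00 by (simp add: egf_def bsub_def bone_def)
  next
    case False
    have "Ccross k p q = xx (Suc K) p q / (fact p * fact q)" unfolding e1 by (rule egf_nz[OF False])
    also have "\<dots> = bmul (bexp (egf (bb K))) (bsub (bexp (egf (xx K))) bone) p q" unfolding xx_def C2[OF K1] using fact_ne by simp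
    finally show ?thesis unfolding e2 e3 .
  qed
qed

lemma I3:
  assumes k: "k \<ge> 1"
  shows "Cser k p q = bsub (bexp (badd (Cbullet k) (Ccross k))) bone p q"
proof -
  define K where "K = nat k"
  have K1: "K \<ge> 1" using k unfolding K_def by auto
  have e1: "Cser k = egf (\<lambda>p q. of_nat (cnt p q K))" using Cser_nat[of k] k unfolding K_def by simp
  have e2: "Cbullet k = egf (bb K)" using Cbullet_nat[of k] k unfolding K_def by simp
  have e3: "Ccross k = egf (xx K)" using Ccross_nat[of k] k unfolding K_def by simp
  have e4: "badd (egf (bb K)) (egf (xx K)) = egf (hh K)" unfolding egf_add hh_def[abs_def] by simp
  show ?thesis
  proof (cases "p = 0 \<and> q = 0")
    case True then show ?thesis unfolding e1 e2 e3 e4 using bexp00 by (simp add: egf_def bsub_def bone_def)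
  next
    case False
    have "Cser k p q = of_nat (cnt p q K) / (fact p * fact q)" unfolding e1 by (rule egf_nz[OF False])
    also have "\<dots> = bexp (egf (hh K)) p q" unfolding C3[OF K1] using fact_ne by simp
    also have "\<dots> = bsub (bexp (egf (hh K))) bone p q" using False by (simp add: bsub_def bone_def)
    finally show ?thesis unfolding e2 e3 e4 .
  qed
qed

lemma I4:
  assumes k: "k \<ge> 2"
  shows "Cell (k - 1) p q = badd (Cbullet k) (Ccross k) p q"
proof -
  define K where "K = nat (k - 1)"
  have K1: "K \<ge> 1" and nk: "nat k = Suc K" and nk1: "nat (k - 1) = K" using k unfolding K_def by auto
  have e1: "Cell (k - 1) = egf (\<lambda>p q. of_nat (cnt_ell p q K))" using Cell_nat[of "k - 1"] k nk1 by simp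
  have e2: "Cbullet k = egf (bb (Suc K))" using Cbullet_nat[of k] k nk by simp
  have e3: "Ccross k = egf (xx (Suc K))" using Ccross_nat[of k] k nk by simp
  have "cnt_ell p q K = cnt_bullet p q (Suc K) + cnt_cross p q (Suc K)" by (rule C4[OF K1])
  then show ?thesis unfolding e1 e2 e3 egf_add by (simp add: egf_def bb_def xx_def add_divide_distrib)
qed

theorem proposition2p6:
  fixes k :: int
  shows "Cbullet k = bmul (Cbullet (k - 1)) (bexp (badd (Cbullet (k - 1)) (Ccross (k - 1))))
       \<and> Ccross k = bmul (bexp (Cbullet (k - 1))) (bsub (bexp (Ccross (k - 1))) bone)
       \<and> Cser k = bsub (bexp (badd (Cbullet k) (Ccross k))) bone
       \<and> Cell (k - 1) = badd (Cbullet k) (Ccross k)"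
proof (intro conjI)
  have sB: "isS (\<lambda>k. Cbullet (k - 1))" by (rule isS_shift[OF isS_Cbullet])
  have sX: "isS (\<lambda>k. Ccross (k - 1))" by (rule isS_shift[OF isS_Ccross])
  show "Cbullet k = bmul (Cbullet (k - 1)) (bexp (badd (Cbullet (k - 1)) (Ccross (k - 1))))"
    by (rule isS_eq[OF isS_Cbullet isS_bmul[OF sB isS_bexp[OF isS_badd[OF sB sX]]]]) (rule I1)
  show "Ccross k = bmul (bexp (Cbullet (k - 1))) (bsub (bexp (Ccross (k - 1))) bone)"
    by (rule isS_eq[OF isS_Ccross isS_bmul[OF isS_bexp[OF sB] isS_bsub[OF isS_bexp[OF sX] isS_bone]]]) (rule I2)
  show "Cser k = bsub (bexp (badd (Cbullet k) (Ccross k))) bone"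
    by (rule isS_eq[OF isS_Cser isS_bsub[OF isS_bexp[OF isS_badd[OF isS_Cbullet isS_Ccross]] isS_bone]]) (rule I3, simp)
  show "Cell (k - 1) = badd (Cbullet k) (Ccross k)"
    by (rule isS_eq[OF isS_shift[OF isS_Cell] isS_badd[OF isS_Cbullet isS_Ccross]]) (rule I4)
qed


end
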